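(* Let $H,U$ be separable complex Hilbert spaces, $T>0$, $A$ the generator of a $C_0$-semigroup $e^{tA}$ on $H$ with $\|e^{tA}\|\le Ce^{\omega t}$, $K\in L^2(0,T;\mathbb R)$, $B\in\mathcal L(U,H)$. Let $\tau\in(0,T)$, $X_0=(\xi_0,\xi(\cdot))\in H\times L^2(0,\tau;H)$ and $u\in L^2(\tau,T;U)$. Then there is a unique mild solution $w$ of $w'(t)=Aw(t)+\int_\tau^tK(t-s)w(s)ds+\int_0^\tau K(t-s)\xi(s)ds+Bu(t)$, $t\in(\tau,T)$, $w(\tau)=\xi_0$, and it is given by $$w(t)=F(t,\tau)\xi_0+\int_0^\tau M(t,\sigma,\tau)\xi(\sigma)\,d\sigma+\int_\tau^tF(t,s)Bu(s)\,ds,\qquad t\in[\tau,T],$$ where $F(t,\tau)=e^{(t-\tau)A}-\int_\tau^tR(t-s)e^{(s-\tau)A}ds$, $M(t,\sigma,\tau)=G(t,\sigma,\tau)-\int_\tau^tR(t-s)G(s,\sigma,\tau)ds$, $G(t,\sigma,\tau)=\mu(t-\sigma)-e^{(t-\tau)A}\mu(\tau-\sigma)$ ($\sigma\le\tau\le t$), $\mu(t)=\int_0^te^{(t-s)A}K(s)ds$, and $R$ is the unique solution of the Volterra equation $R(t)-\int_0^t\mu(t-s)R(s)ds=-\mu(t)$, $t>0$, explicitly given by $R(t)=-\mu(t)-\int_0^t\mu(t-s)\mu(s)ds-\int_0^t\mu(t-\sigma)\int_0^\sigma\mu(\sigma-s)\mu(s)\,ds\,d\sigma-\cdots$.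
   Context: A mild solution is a function $w\in L^2(\tau,T;H)$ satisfying a.e. on $[\tau,T]$: $w(t)=e^{(t-\tau)A}\xi_0+\int_\tau^te^{(t-s)A}\int_\tau^sK(s-\sigma)w(\sigma)d\sigma ds+\int_\tau^te^{(t-s)A}\int_0^\tau K(s-\sigma)\xi(\sigma)d\sigma ds+\int_\tau^te^{(t-s)A}Bu(s)ds$. *)

theory Defs
  imports "HOL-Analysis.Analysis"
begin

definition L2_on :: "real set \<Rightarrow> (real \<Rightarrow> 'a::{banach,second_countable_topology}) \<Rightarrow> bool" where
  "L2_on I f \<longleftrightarrow> set_borel_measurable lborel I f \<and>
     set_integrable lborel I (\<lambda>t. (norm (f t))^2)"

definition C0_semigroup :: "(real \<Rightarrow> 'h::real_normed_vector \<Rightarrow> 'h) \<Rightarrow> bool" where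
  "C0_semigroup S \<longleftrightarrow>
     (\<forall>t\<ge>0. bounded_linear (S t)) \<and>
     S 0 = id \<and>
     (\<forall>s t. s \<ge> 0 \<longrightarrow> t \<ge> 0 \<longrightarrow> S (s + t) = S s \<circ> S t) \<and>
     (\<forall>x. ((\<lambda>t. S t x) \<longlongrightarrow> x) (at_right 0))"

definition is_generator :: "(real \<Rightarrow> 'h::real_normed_vector \<Rightarrow> 'h) \<Rightarrow> 'h set \<Rightarrow> ('h \<Rightarrow> 'h) \<Rightarrow> bool" where
  "is_generator S D A \<longleftrightarrow>
     D = {x. \<exists>y. ((\<lambda>h. (S h x - x) /\<^sub>R h) \<longlongrightarrow> y) (at_right 0)} \<and>
     (\<forall>x\<in>D. ((\<lambda>h. (S h x - x) /\<^sub>R h) \<longlongrightarrow> A x) (at_right 0))"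

definition mu :: "(real \<Rightarrow> 'h::{banach,second_countable_topology} \<Rightarrow> 'h) \<Rightarrow> (real \<Rightarrow> real) \<Rightarrow> real \<Rightarrow> 'h \<Rightarrow> 'h" where
  "mu S K t x = set_lebesgue_integral lborel {0..t} (\<lambda>s. K s *\<^sub>R S (t - s) x)"

definition conv :: "(real \<Rightarrow> 'h::{banach,second_countable_topology} \<Rightarrow> 'h) \<Rightarrow> (real \<Rightarrow> 'h \<Rightarrow> 'h) \<Rightarrow> real \<Rightarrow> 'h \<Rightarrow> 'h" where
  "conv P Q t x = set_lebesgue_integral lborel {0..t} (\<lambda>s. P (t - s) (Q s x))"

fun mu_pow :: "(real \<Rightarrow> 'h::{banach,second_countable_topology} \<Rightarrow> 'h) \<Rightarrow> (real \<Rightarrow> real) \<Rightarrow> nat \<Rightarrow> real \<Rightarrow> 'h \<Rightarrow> 'h" where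
  "mu_pow S K 0 = mu S K"
| "mu_pow S K (Suc n) = conv (mu S K) (mu_pow S K n)"

definition Rres :: "(real \<Rightarrow> 'h::{banach,second_countable_topology} \<Rightarrow> 'h) \<Rightarrow> (real \<Rightarrow> real) \<Rightarrow> real \<Rightarrow> 'h \<Rightarrow> 'h" where
  "Rres S K t x = - (\<Sum>n. mu_pow S K n t x)"

definition volterra_sol :: "(real \<Rightarrow> 'h::{banach,second_countable_topology} \<Rightarrow> 'h) \<Rightarrow> (real \<Rightarrow> real) \<Rightarrow> real \<Rightarrow> (real \<Rightarrow> 'h \<Rightarrow> 'h) \<Rightarrow> bool" where
  "volterra_sol S K T R \<longleftrightarrow>
     (\<forall>t\<in>{0..T}. bounded_linear (R t)) \<and>
     (\<forall>x. continuous_on {0..T} (\<lambda>t. R t x)) \<and>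
     (\<forall>t\<in>{0<..T}. \<forall>x. R t x - conv (mu S K) R t x = - mu S K t x)"

definition Fop :: "(real \<Rightarrow> 'h::{banach,second_countable_topology} \<Rightarrow> 'h) \<Rightarrow> (real \<Rightarrow> 'h \<Rightarrow> 'h) \<Rightarrow> real \<Rightarrow> real \<Rightarrow> 'h \<Rightarrow> 'h" where
  "Fop S R t \<tau> x = S (t - \<tau>) x - set_lebesgue_integral lborel {\<tau>..t} (\<lambda>s. R (t - s) (S (s - \<tau>) x))"

definition Gop :: "(real \<Rightarrow> 'h::{banach,second_countable_topology} \<Rightarrow> 'h) \<Rightarrow> (real \<Rightarrow> real) \<Rightarrow> real \<Rightarrow> real \<Rightarrow> real \<Rightarrow> 'h \<Rightarrow> 'h" where
  "Gop S K t \<sigma> \<tau> x = mu S K (t - \<sigma>) x - S (t - \<tau>) (mu S K (\<tau> - \<sigma>) x)"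

definition Mop :: "(real \<Rightarrow> 'h::{banach,second_countable_topology} \<Rightarrow> 'h) \<Rightarrow> (real \<Rightarrow> real) \<Rightarrow> (real \<Rightarrow> 'h \<Rightarrow> 'h) \<Rightarrow> real \<Rightarrow> real \<Rightarrow> real \<Rightarrow> 'h \<Rightarrow> 'h" where
  "Mop S K R t \<sigma> \<tau> x = Gop S K t \<sigma> \<tau> x -
     set_lebesgue_integral lborel {\<tau>..t} (\<lambda>s. R (t - s) (Gop S K s \<sigma> \<tau> x))"

definition sol_formula :: "(real \<Rightarrow> 'h::{banach,second_countable_topology} \<Rightarrow> 'h) \<Rightarrow> (real \<Rightarrow> real) \<Rightarrow> (real \<Rightarrow> 'h \<Rightarrow> 'h)
    \<Rightarrow> ('u::{banach,second_countable_topology} \<Rightarrow> 'h) \<Rightarrow> real \<Rightarrow> 'h \<Rightarrow> (real \<Rightarrow> 'h) \<Rightarrow> (real \<Rightarrow> 'u) \<Rightarrow> real \<Rightarrow> 'h" where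
  "sol_formula S K R B \<tau> \<xi>0 \<xi> u t =
     Fop S R t \<tau> \<xi>0
     + set_lebesgue_integral lborel {0..\<tau>} (\<lambda>\<sigma>. Mop S K R t \<sigma> \<tau> (\<xi> \<sigma>))
     + set_lebesgue_integral lborel {\<tau>..t} (\<lambda>s. Fop S R t s (B (u s)))"

definition mild_solution :: "(real \<Rightarrow> 'h::{banach,second_countable_topology} \<Rightarrow> 'h) \<Rightarrow> (real \<Rightarrow> real)
    \<Rightarrow> ('u::{banach,second_countable_topology} \<Rightarrow> 'h) \<Rightarrow> real \<Rightarrow> real \<Rightarrow> 'h \<Rightarrow> (real \<Rightarrow> 'h) \<Rightarrow> (real \<Rightarrow> 'u) \<Rightarrow> (real \<Rightarrow> 'h) \<Rightarrow> bool" where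
  "mild_solution S K B \<tau> T \<xi>0 \<xi> u w \<longleftrightarrow>
     L2_on {\<tau>..T} w \<and>
     (AE t in lborel. t \<in> {\<tau>..T} \<longrightarrow>
        w t = S (t - \<tau>) \<xi>0
          + set_lebesgue_integral lborel {\<tau>..t}
              (\<lambda>s. S (t - s) (set_lebesgue_integral lborel {\<tau>..s} (\<lambda>\<sigma>. K (s - \<sigma>) *\<^sub>R w \<sigma>)))
          + set_lebesgue_integral lborel {\<tau>..t}
              (\<lambda>s. S (t - s) (set_lebesgue_integral lborel {0..\<tau>} (\<lambda>\<sigma>. K (s - \<sigma>) *\<^sub>R \<xi> \<sigma>)))
          + set_lebesgue_integral lborel {\<tau>..t} (\<lambda>s. S (t - s) (B (u s))))"

end

theory Submission
  imports Defs
begin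

lemma norm_integral_le_integral:
  fixes f :: "'a \<Rightarrow> 'b::{banach,second_countable_topology}"
  assumes g: "integrable M g" and b: "AE x in M. norm (f x) \<le> g x"
  shows "norm (integral\<^sup>L M f) \<le> integral\<^sup>L M g"
proof (cases "integrable M f")
  case True
  have "norm (integral\<^sup>L M f) \<le> integral\<^sup>L M (\<lambda>x. norm (f x))" by (rule integral_norm_bound)
  also have "\<dots> \<le> integral\<^sup>L M g"
    by (rule integral_mono_AE) (use True g b in auto)
  finally show ?thesis .
next
  case False
  have "0 \<le> integral\<^sup>L M g"
    by (rule integral_nonneg_AE) (use b in \<open>auto elim: AE_mp intro: order_trans[OF norm_ge_zero]\<close>)
  then show ?thesis using False by (simp add: not_integrable_integral_eq)
qed

lemma shift_integral:
  fixes F :: "real \<Rightarrow> 'a::{banach,second_countable_topology}"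
  shows "(\<integral>q. F q \<partial>lborel) = (\<integral>r. F (r - a) \<partial>lborel)"
  using lborel_integral_real_affine[of 1 F "-a"] by simp

lemma reflect_integral:
  fixes F :: "real \<Rightarrow> 'a::{banach,second_countable_topology}"
  shows "(\<integral>q. F q \<partial>lborel) = (\<integral>r. F (b - r) \<partial>lborel)"
  using lborel_integral_real_affine[of "-1" F b] by simp

lemma shift_integrable:
  fixes F :: "real \<Rightarrow> 'a::{banach,second_countable_topology}"
  assumes "integrable lborel F"
  shows "integrable lborel (\<lambda>r. F (r - a))" "integrable lborel (\<lambda>r. F (a - r))"
  using lborel_integrable_real_affine[OF assms, of 1 "-a"] lborel_integrable_real_affine[OF assms, of "-1" a]
  by simp_all

definition good :: "real \<Rightarrow> (real \<Rightarrow> 'a::real_normed_vector \<Rightarrow> 'a) \<Rightarrow> real \<Rightarrow> bool" where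
  "good T P c \<longleftrightarrow> (\<forall>r\<in>{0..T}. bounded_linear (P r)) \<and> (\<forall>x. continuous_on {0..T} (\<lambda>r. P r x))
     \<and> (\<forall>r\<in>{0..T}. \<forall>x. norm (P r x) \<le> c * norm x)"

definition clmp :: "real \<Rightarrow> real \<Rightarrow> real" where "clmp T r = min T (max 0 r)"

lemma clamp_id[simp]: "r \<in> {0..T} \<Longrightarrow> clmp T r = r" by (auto simp: clmp_def)
lemma clamp_in: "0 \<le> T \<Longrightarrow> clmp T r \<in> {0..T}" by (auto simp: clmp_def)
lemma continuous_clamp: "continuous_on UNIV (clmp T)"
  unfolding clmp_def by (intro continuous_intros)

lemma good_joint_on:
  assumes "good T P c"
  shows "continuous_on ({0..T} \<times> UNIV) (\<lambda>z. P (fst z) (snd z))"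
proof -
  have bl: "\<And>r. r\<in>{0..T} \<Longrightarrow> bounded_linear (P r)" and ct: "\<And>x. continuous_on {0..T} (\<lambda>r. P r x)"
    and bd: "\<And>r x. r\<in>{0..T} \<Longrightarrow> norm (P r x) \<le> c * norm x" using assms by (auto simp: good_def)
  show ?thesis unfolding continuous_on_iff
  proof (intro ballI allI impI)
    fix z e assume z: "z \<in> {0..T} \<times> (UNIV::'a set)" and e: "(0::real) < e"
    obtain r0 y0 where z0: "z = (r0, y0)" by (cases z)
    have r0: "r0 \<in> {0..T}" using z z0 by auto
    have e2: "e/2 > 0" using e by simp
    from ct[of y0, unfolded continuous_on_iff] r0 e2 obtain d1 where d1: "d1 > 0"
      "\<And>r. r \<in> {0..T} \<Longrightarrow> dist r r0 < d1 \<Longrightarrow> dist (P r y0) (P r0 y0) < e/2" by metis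
    define d where "d = min d1 (e / (2 * (\<bar>c\<bar> + 1)))"
    have dpos: "d > 0" using d1 e by (simp add: d_def)
    show "\<exists>d>0. \<forall>z'\<in>{0..T} \<times> UNIV. dist z' z < d \<longrightarrow> dist (P (fst z') (snd z')) (P (fst z) (snd z)) < e"
    proof (intro exI[of _ d] conjI ballI impI dpos)
      fix z' assume z': "z' \<in> {0..T} \<times> (UNIV::'a set)" and dz: "dist z' z < d"
      obtain r y where zz: "z' = (r, y)" by (cases z')
      have r: "r \<in> {0..T}" using z' zz by auto
      have dr: "dist r r0 < d1" using dz dist_fst_le[of z' z] by (simp add: zz z0 d_def)
      have dy: "dist y y0 < e / (2 * (\<bar>c\<bar> + 1))" using dz dist_snd_le[of z' z] by (simp add: zz z0 d_def)
      have "P r y - P r0 y0 = P r (y - y0) + (P r y0 - P r0 y0)"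
        using linear_diff[OF bounded_linear.linear[OF bl[OF r]]] by simp
      hence "dist (P r y) (P r0 y0) \<le> norm (P r (y - y0)) + dist (P r y0) (P r0 y0)"
        by (metis add_diff_eq dist_norm norm_triangle_ineq)
      also have "norm (P r (y - y0)) \<le> c * norm (y - y0)" using bd[OF r] .
      also have "c * norm (y - y0) \<le> (\<bar>c\<bar> + 1) * norm (y - y0)"
        by (intro mult_right_mono) auto
      also have "(\<bar>c\<bar> + 1) * norm (y - y0) \<le> (\<bar>c\<bar> + 1) * (e / (2 * (\<bar>c\<bar> + 1)))"
        using dy by (intro mult_left_mono) (auto simp: dist_norm)
      also have "\<dots> = e/2" by (simp add: field_simps)
      finally show "dist (P (fst z') (snd z')) (P (fst z) (snd z)) < e"
        using d1(2)[OF r dr] by (simp add: zz z0)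
    qed
  qed
qed

lemma good_joint:
  assumes "good T P c" "0 \<le> T"
  shows "continuous_on UNIV (\<lambda>z. P (clmp T (fst z)) (snd z))"
proof -
  have "continuous_on UNIV (\<lambda>z. (clmp T (fst z), snd z))"
    by (intro continuous_intros continuous_on_compose2[OF continuous_clamp]) auto
  moreover have "(\<lambda>z. (clmp T (fst z), snd z)) ` UNIV \<subseteq> {0..T} \<times> UNIV"
    using clamp_in[OF assms(2)] by auto
  ultimately show ?thesis
    using continuous_on_compose2[OF good_joint_on[OF assms(1)], of UNIV "\<lambda>z. (clmp T (fst z), snd z)"] by (auto)
qed

lemma good_meas:
  fixes P :: "real \<Rightarrow> 'a::{real_normed_vector,second_countable_topology} \<Rightarrow> 'a"
  assumes "good T P c" "0 \<le> T" and [measurable]: "a \<in> borel_measurable M" "b \<in> borel_measurable M"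
  shows "(\<lambda>w. P (clmp T (a w)) (b w)) \<in> borel_measurable M"
proof -
  have "(\<lambda>z. P (clmp T (fst z)) (snd z)) \<in> borel_measurable borel"
    by (rule borel_measurable_continuous_onI[OF good_joint[OF assms(1,2)]])
  hence m: "(\<lambda>z. P (clmp T (fst z)) (snd z)) \<in> borel_measurable (borel \<Otimes>\<^sub>M borel)"
    by (simp add: borel_prod)
  have "(\<lambda>w. (a w, b w)) \<in> measurable M (borel \<Otimes>\<^sub>M borel)" by measurable
  from measurable_compose[OF this m] show ?thesis by simp
qed


lemma indicator_tendsto:
  fixes u :: "nat \<Rightarrow> real"
  assumes u: "u \<longlonglongrightarrow> a0" and s: "s \<noteq> a0"
  shows "(\<lambda>n. indicator {a..u n} s :: real) \<longlonglongrightarrow> indicator {a..a0} s"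
proof (cases "s < a0")
  case True
  have "eventually (\<lambda>n. u n > s) sequentially" using order_tendstoD(1)[OF u True] .
  hence "eventually (\<lambda>n. indicator {a..u n} s = (indicator {a..a0} s :: real)) sequentially"
    by eventually_elim (use True in \<open>auto simp: indicator_def\<close>)
  thus ?thesis by (rule tendsto_eventually)
next
  case False
  hence F: "s > a0" using s by auto
  have "eventually (\<lambda>n. u n < s) sequentially" using order_tendstoD(2)[OF u F] .
  hence "eventually (\<lambda>n. indicator {a..u n} s = (indicator {a..a0} s :: real)) sequentially"
    by eventually_elim (use F in \<open>auto simp: indicator_def\<close>)
  thus ?thesis by (rule tendsto_eventually)
qed

lemma cont_param:
  fixes H :: "real \<Rightarrow> real \<Rightarrow> 'a::{banach,second_countable_topology}"
  assumes k: "integrable lborel k"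
  and Hm: "\<And>t. t \<in> I \<Longrightarrow> H t \<in> borel_measurable lborel"
  and Hc: "\<And>s. continuous_on I (\<lambda>t. H t s)"
  and Hb: "\<And>t s. t \<in> I \<Longrightarrow> norm (H t s) \<le> Bd"
  shows "continuous_on I (\<lambda>t. \<integral>s. (indicator {a..t} s * k s) *\<^sub>R H t s \<partial>lborel)"
proof (rule continuous_on_sequentiallyI)
  fix u t0 assume u: "\<forall>n. u n \<in> I" "t0 \<in> I" "u \<longlonglongrightarrow> t0"
  have km[measurable]: "k \<in> borel_measurable lborel" using k by auto
  have Hm0[measurable]: "H t0 \<in> borel_measurable lborel" using Hm u by auto
  have Hmn[measurable]: "H (u n) \<in> borel_measurable lborel" for n using Hm u by auto
  show "(\<lambda>n. \<integral>s. (indicator {a..u n} s * k s) *\<^sub>R H (u n) s \<partial>lborel) \<longlonglongrightarrow>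
        (\<integral>s. (indicator {a..t0} s * k s) *\<^sub>R H t0 s \<partial>lborel)"
  proof (rule integral_dominated_convergence[where w="\<lambda>s. \<bar>k s\<bar> * Bd"])
    show "integrable lborel (\<lambda>s. \<bar>k s\<bar> * Bd)" using k by auto
    show "(\<lambda>s. (indicator {a..t0} s * k s) *\<^sub>R H t0 s) \<in> borel_measurable lborel" by measurable
    show "(\<lambda>s. (indicator {a..u n} s * k s) *\<^sub>R H (u n) s) \<in> borel_measurable lborel" for n by measurable
    show "AE s in lborel. (\<lambda>n. (indicator {a..u n} s * k s) *\<^sub>R H (u n) s) \<longlonglongrightarrow> (indicator {a..t0} s * k s) *\<^sub>R H t0 s"
      using AE_lborel_singleton[of t0]
    proof eventually_elim
      case (elim s)
      have "(\<lambda>n. H (u n) s) \<longlonglongrightarrow> H t0 s"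
        using Hc[of s] u unfolding continuous_on_sequentially comp_def by auto
      then show ?case
        by (intro tendsto_scaleR tendsto_mult indicator_tendsto[OF u(3) elim] tendsto_const)
    qed
    show "AE s in lborel. norm ((indicator {a..u n} s * k s) *\<^sub>R H (u n) s) \<le> \<bar>k s\<bar> * Bd" for n
    proof (rule AE_I2)
      fix s
      have "norm (H (u n) s) \<le> Bd" using Hb u by auto
      hence "0 \<le> Bd" using norm_ge_zero order_trans by blast
      have "norm ((indicator {a..u n} s * k s) *\<^sub>R H (u n) s) = indicator {a..u n} s * \<bar>k s\<bar> * norm (H (u n) s)"
        by (simp add: abs_mult)
      also have "\<dots> \<le> 1 * \<bar>k s\<bar> * Bd"
        using \<open>norm (H (u n) s) \<le> Bd\<close> \<open>0 \<le> Bd\<close>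
        by (intro mult_mono) (auto simp: indicator_def)
      finally show "norm ((indicator {a..u n} s * k s) *\<^sub>R H (u n) s) \<le> \<bar>k s\<bar> * Bd" by simp
    qed
  qed
qed


lemma integral_shifted_power:
  assumes "a \<le> b"
  shows "(\<integral>s. indicator {a..b} s * (s - a)^n \<partial>lborel) = (b - a)^Suc n / Suc n"
proof -
  have "(LBINT s. (s - a)^n * indicator {a..b} s) = (b - a)^Suc n / Suc n - (a - a)^Suc n / Suc n"
    apply (rule integral_FTC_Icc_real[OF assms])
     apply (auto intro!: derivative_eq_intros continuous_intros simp del: of_nat_Suc)
    apply (cases n) apply (simp_all add: field_simps)
    done
  thus ?thesis by (simp add: mult.commute)
qed

lemma integral_point_interval:
  fixes f :: "real \<Rightarrow> 'a::{banach,second_countable_topology}"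
  shows "(\<integral>s. indicator {a..a} s *\<^sub>R f s \<partial>lborel) = 0"
proof -
  have "(\<integral>s. indicator {a..a} s *\<^sub>R f s \<partial>lborel) = (\<integral>s. indicator {a..a} s *\<^sub>R f a \<partial>lborel)"
    by (rule Bochner_Integration.integral_cong) (auto simp: indicator_def)
  thus ?thesis by simp
qed

lemma fubini_integrable:
  fixes h :: "real \<Rightarrow> real \<Rightarrow> 'a::{banach,second_countable_topology}"
  assumes meas: "(\<lambda>z. h (fst z) (snd z)) \<in> borel_measurable (lborel \<Otimes>\<^sub>M lborel)"
  and k: "integrable lborel k" and p: "integrable lborel p"
  and bound: "\<And>x y. norm (h x y) \<le> k (y - x) * p x"
  shows "integrable (lborel \<Otimes>\<^sub>M lborel) (\<lambda>(x,y). h x y)"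
proof -
  have bd: "norm (h x y) \<le> \<bar>k (y - x)\<bar> * \<bar>p x\<bar>" for x y
    using bound[of x y] by (metis abs_ge_self abs_mult order_trans)
  have km[measurable]: "k \<in> borel_measurable borel" and pm[measurable]: "p \<in> borel_measurable borel"
    using borel_measurable_integrable[OF k] borel_measurable_integrable[OF p] by simp_all
  have m2[measurable]: "(\<lambda>(x,y). h x y) \<in> borel_measurable (lborel \<Otimes>\<^sub>M lborel)"
    using meas by (simp add: case_prod_beta')
  have mnorm: "(\<lambda>(x,y). norm (h x y)) \<in> borel_measurable (lborel \<Otimes>\<^sub>M lborel)"
    using measurable_compose[OF meas borel_measurable_norm] by (simp add: case_prod_beta' comp_def)
  have inty: "integrable lborel (\<lambda>y. \<bar>k (y - x)\<bar> * \<bar>p x\<bar>)" for x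
    using shift_integrable(1)[OF integrable_abs[OF k], of x] by auto
  have mx: "(\<lambda>y. h x y) \<in> borel_measurable lborel" for x
    using measurable_Pair2[OF m2, of x] by simp
  have inth: "integrable lborel (\<lambda>y. h x y)" for x
    by (rule Bochner_Integration.integrable_bound[OF inty[of x] mx]) (rule AE_I2, use bd in \<open>simp\<close>)
  show ?thesis
  proof (rule lborel_pair.Fubini_integrable)
    show "(\<lambda>(x,y). h x y) \<in> borel_measurable (lborel \<Otimes>\<^sub>M lborel)" by (rule m2)
    show "AE x in lborel. integrable lborel (\<lambda>y. case (x, y) of (x, y) \<Rightarrow> h x y)"
      using inth by simp
    have intk: "(\<integral>y. \<bar>k (y - x)\<bar> \<partial>lborel) = (\<integral>y. \<bar>k y\<bar> \<partial>lborel)" for x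
      using shift_integral[of "\<lambda>y. \<bar>k y\<bar>" x] by simp
    have "(\<lambda>x. \<integral>y. norm (h x y) \<partial>lborel) \<in> borel_measurable lborel"
      using lborel.borel_measurable_lebesgue_integral[of "\<lambda>x y. norm (h x y)" lborel] mnorm by simp
    moreover have "integrable lborel (\<lambda>x. \<bar>p x\<bar> * (\<integral>y. \<bar>k y\<bar> \<partial>lborel))"
      using integrable_abs[OF p] by (rule integrable_mult_left)
    moreover have "norm (\<integral>y. norm (h x y) \<partial>lborel) \<le> norm (\<bar>p x\<bar> * (\<integral>y. \<bar>k y\<bar> \<partial>lborel))" for x
    proof -
      have "norm (\<integral>y. norm (h x y) \<partial>lborel) = (\<integral>y. norm (h x y) \<partial>lborel)"
        by (simp add: integral_nonneg_AE)
      also have "\<dots> \<le> (\<integral>y. \<bar>k (y - x)\<bar> * \<bar>p x\<bar> \<partial>lborel)"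
        by (rule integral_mono[OF integrable_norm[OF inth] inty]) (use bd in auto)
      also have "\<dots> = \<bar>p x\<bar> * (\<integral>y. \<bar>k y\<bar> \<partial>lborel)"
        using intk[of x] by (simp add: mult.commute)
      also have "\<dots> \<le> norm (\<bar>p x\<bar> * (\<integral>y. \<bar>k y\<bar> \<partial>lborel))" by simp
      finally show ?thesis .
    qed
    ultimately have I: "integrable lborel (\<lambda>x. \<integral>y. norm (h x y) \<partial>lborel)"
      by (rule_tac Bochner_Integration.integrable_bound[where f="\<lambda>x. \<bar>p x\<bar> * (\<integral>y. \<bar>k y\<bar> \<partial>lborel)"]) (auto intro: AE_I2)
    show "integrable lborel (\<lambda>x. \<integral>y. norm (case (x, y) of (x, y) \<Rightarrow> h x y) \<partial>lborel)"
      using I by (simp only: prod.case)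
  qed
qed

lemma fubini_swap:
  fixes h :: "real \<Rightarrow> real \<Rightarrow> 'a::{banach,second_countable_topology}"
  assumes meas: "(\<lambda>z. h (fst z) (snd z)) \<in> borel_measurable (lborel \<Otimes>\<^sub>M lborel)"
  and k: "integrable lborel k" and p: "integrable lborel p"
  and bound: "\<And>x y. norm (h x y) \<le> k (y - x) * p x"
  shows "(\<integral>x. \<integral>y. h x y \<partial>lborel \<partial>lborel) = (\<integral>y. \<integral>x. h x y \<partial>lborel \<partial>lborel)"
  using lborel_pair.Fubini_integral[OF fubini_integrable[OF assms]] by simp


locale sgK =
  fixes S :: "real \<Rightarrow> 'h::{banach,second_countable_topology} \<Rightarrow> 'h" and K :: "real \<Rightarrow> real"
    and T C \<omega> :: real
  assumes Tpos: "T > 0" and C0: "C0_semigroup S"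
    and Sbd: "\<forall>t\<ge>0. \<forall>x. norm (S t x) \<le> C * exp (\<omega> * t) * norm x"
    and KL2: "L2_on {0..T} K"
begin

definition "c0 = \<bar>C\<bar> * exp (\<bar>\<omega>\<bar> * T)"
definition "K0 s = indicator {0..T} s * K s"
definition "kn = (\<integral>s. \<bar>K0 s\<bar> \<partial>lborel)"
definition "kk = c0 * kn"

lemma c0_nonneg: "0 \<le> c0" by (simp add: c0_def)
lemma kn_nonneg: "0 \<le> kn" by (simp add: kn_def)
lemma kk_nonneg: "0 \<le> kk" by (simp add: kk_def c0_nonneg kn_nonneg)

lemma S_bl: "t \<ge> 0 \<Longrightarrow> bounded_linear (S t)"
  using C0 by (auto simp: C0_semigroup_def)

lemma S_add: "s \<ge> 0 \<Longrightarrow> t \<ge> 0 \<Longrightarrow> S (s + t) x = S s (S t x)"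
  using C0 by (auto simp: C0_semigroup_def)

lemma S_0: "S 0 x = x"
  using C0 by (auto simp: C0_semigroup_def)

lemma S_bound: assumes "t \<in> {0..T}" shows "norm (S t x) \<le> c0 * norm x"
proof -
  have "norm (S t x) \<le> C * exp (\<omega> * t) * norm x" using Sbd assms by auto
  also have "\<dots> \<le> c0 * norm x"
  proof (intro mult_right_mono)
    have "\<omega> * t \<le> \<bar>\<omega>\<bar> * T"
    proof -
      have "\<omega> * t \<le> \<bar>\<omega>\<bar> * t" using assms by (intro mult_right_mono) auto
      also have "\<dots> \<le> \<bar>\<omega>\<bar> * T" using assms by (intro mult_left_mono) auto
      finally show ?thesis .
    qed
    hence "exp (\<omega> * t) \<le> exp (\<bar>\<omega>\<bar> * T)" by simp
    thus "C * exp (\<omega> * t) \<le> c0" unfolding c0_def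
      by (intro mult_mono) auto
  qed auto
  finally show ?thesis .
qed

lemma S_cont: "continuous_on {0..T} (\<lambda>r. S r x)"
  unfolding continuous_on_iff
proof (intro ballI allI impI)
  fix r0 e assume r0: "r0 \<in> {0..T}" and e: "(0::real) < e"
  define e' where "e' = e / (c0 + 1)"
  have e': "e' > 0" using e c0_nonneg by (simp add: e'_def)
  have "((\<lambda>t. S t x) \<longlongrightarrow> x) (at_right 0)" using C0 by (auto simp: C0_semigroup_def)
  hence "eventually (\<lambda>t. dist (S t x) x < e') (at_right 0)" using e' by (rule tendstoD)
  then obtain b where b: "b > 0" "\<And>y. y > 0 \<Longrightarrow> y < b \<Longrightarrow> dist (S y x) x < e'"
    unfolding eventually_at_right_field by auto
  have ce: "c0 * e' < e" using e c0_nonneg unfolding e'_def by (simp add: field_simps)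
  show "\<exists>d>0. \<forall>r\<in>{0..T}. dist r r0 < d \<longrightarrow> dist (S r x) (S r0 x) < e"
  proof (intro exI[of _ b] conjI ballI impI b(1))
    fix r assume r: "r \<in> {0..T}" and d: "dist r r0 < b"
    consider "r = r0" | "r > r0" | "r < r0" by linarith
    thus "dist (S r x) (S r0 x) < e"
    proof cases
      case 1 thus ?thesis using e by simp
    next
      case 2
      have eq: "S r x = S r0 (S (r - r0) x)" using S_add[of r0 "r - r0" x] r0 2 by auto
      have "S r x - S r0 x = S r0 (S (r - r0) x - x)"
        unfolding eq using linear_diff[OF bounded_linear.linear[OF S_bl[of r0]]] r0 by auto
      hence "dist (S r x) (S r0 x) = norm (S r0 (S (r - r0) x - x))" by (simp add: dist_norm)
      also have "\<dots> \<le> c0 * norm (S (r - r0) x - x)" using S_bound r0 by blast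
      also have "\<dots> \<le> c0 * e'"
        using b(2)[of "r - r0"] 2 d c0_nonneg by (intro mult_left_mono) (auto simp: dist_norm)
      finally show ?thesis using ce by simp
    next
      case 3
      have eq: "S r0 x = S r (S (r0 - r) x)" using S_add[of r "r0 - r" x] r 3 by auto
      have "S r x - S r0 x = S r (x - S (r0 - r) x)"
        unfolding eq using linear_diff[OF bounded_linear.linear[OF S_bl[of r]]] r by auto
      hence "dist (S r x) (S r0 x) = norm (S r (x - S (r0 - r) x))" by (simp add: dist_norm)
      also have "\<dots> \<le> c0 * norm (x - S (r0 - r) x)" using S_bound r by blast
      also have "\<dots> \<le> c0 * e'"
        using b(2)[of "r0 - r"] 3 d c0_nonneg
        by (intro mult_left_mono) (auto simp: dist_norm norm_minus_commute dist_commute)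
      finally show ?thesis using ce by simp
    qed
  qed
qed

lemma S_good: "good T S c0"
  unfolding good_def using S_bl S_cont S_bound by auto

lemma K0_meas[measurable]: "K0 \<in> borel_measurable borel"
proof -
  have "(\<lambda>x. indicator {0..T} x *\<^sub>R K x) \<in> borel_measurable lborel"
    using KL2 by (simp add: L2_on_def set_borel_measurable_def)
  thus ?thesis by (simp add: K0_def[abs_def])
qed

lemma K0sq_int: "integrable lborel (\<lambda>s. (K0 s)^2)"
proof -
  have "integrable lborel (\<lambda>x. indicator {0..T} x *\<^sub>R (norm (K x))^2)"
    using KL2 by (simp add: L2_on_def set_integrable_def)
  moreover have "(\<lambda>x. indicator {0..T} x *\<^sub>R (norm (K x))^2) = (\<lambda>s. (K0 s)^2)"
    by (auto simp: K0_def indicator_def fun_eq_iff)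
  ultimately show ?thesis by simp
qed

lemma K0_int: "integrable lborel K0"
proof (rule Bochner_Integration.integrable_bound)
  show "integrable lborel (\<lambda>s. indicator {0..T} s + (K0 s)^2)"
    by (intro Bochner_Integration.integrable_add K0sq_int integrable_real_indicator) (use Tpos in \<open>auto simp: emeasure_lborel_Icc\<close>)
  show "K0 \<in> borel_measurable lborel" by simp
  show "AE x in lborel. norm (K0 x) \<le> norm (indicator {0..T} x + (K0 x)\<^sup>2)"
  proof (rule AE_I2)
    fix x
    have "\<bar>K0 x\<bar> \<le> indicator {0..T} x + (K0 x)^2"
    proof (cases "x \<in> {0..T}")
      case True
      have "\<bar>K x\<bar> \<le> 1 + (K x)^2"
      proof -
        have h: "0 \<le> (\<bar>K x\<bar> - 1)^2" by simp
        have "(\<bar>K x\<bar> - 1)^2 = (K x)^2 - 2*\<bar>K x\<bar> + 1" by (simp add: power2_diff power2_abs)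
        moreover have "0 \<le> (K x)^2" by simp
        ultimately show ?thesis using h by linarith
      qed
      thus ?thesis using True by (simp add: K0_def)
    qed (simp add: K0_def)
    thus "norm (K0 x) \<le> norm (indicator {0..T} x + (K0 x)\<^sup>2)" by simp
  qed
qed

lemma absK0_int: "integrable lborel (\<lambda>s. \<bar>K0 s\<bar>)"
  using K0_int by simp

end

lemma good_clamp_cont:
  assumes "good T P c" "0 \<le> T" "continuous_on A f"
  shows "continuous_on A (\<lambda>t. P (clmp T (f t)) x)"
proof -
  have c: "continuous_on UNIV (\<lambda>r::real. (r, x))" by (intro continuous_intros)
  have "continuous_on UNIV (\<lambda>r. P (clmp T (fst (r,x))) (snd (r,x)))"
    by (rule continuous_on_compose2[OF good_joint[OF assms(1,2)] c]) auto
  hence "continuous_on UNIV (\<lambda>r. P (clmp T r) x)" by simp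
  thus ?thesis by (rule continuous_on_compose2[OF _ assms(3)]) auto
qed

lemma good_bl: "good T P c \<Longrightarrow> r \<in> {0..T} \<Longrightarrow> bounded_linear (P r)"
  by (auto simp: good_def)
lemma good_bound: "good T P c \<Longrightarrow> r \<in> {0..T} \<Longrightarrow> norm (P r x) \<le> c * norm x"
  by (auto simp: good_def)
lemma good_cont: "good T P c \<Longrightarrow> continuous_on {0..T} (\<lambda>r. P r x)"
  by (auto simp: good_def)

lemma good_diff: "good T P c \<Longrightarrow> r \<in> {0..T} \<Longrightarrow> P r (x - y) = P r x - P r y"
  using linear_diff[OF bounded_linear.linear[OF good_bl]] by blast
lemma good_add: "good T P c \<Longrightarrow> r \<in> {0..T} \<Longrightarrow> P r (x + y) = P r x + P r y"
  using linear_add[OF bounded_linear.linear[OF good_bl]] by blast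
lemma good_scale: "good T P c \<Longrightarrow> r \<in> {0..T} \<Longrightarrow> P r (a *\<^sub>R y) = a *\<^sub>R P r y"
  using linear_scale[OF bounded_linear.linear[OF good_bl]] by blast
lemma good_minus: "good T P c \<Longrightarrow> r \<in> {0..T} \<Longrightarrow> P r (- y) = - P r y"
  using linear_neg[OF bounded_linear.linear[OF good_bl]] by blast
lemma good_zero: "good T P c \<Longrightarrow> r \<in> {0..T} \<Longrightarrow> P r 0 = 0"
  using linear_0[OF bounded_linear.linear[OF good_bl]] by blast

context
  fixes P Q :: "real \<Rightarrow> 'a::{banach,second_countable_topology} \<Rightarrow> 'a" and T c1 c2 :: real
  assumes gP: "good T P c1" and gQ: "good T Q c2" and T: "0 \<le> T" and c1: "0 \<le> c1" and c2: "0 \<le> c2"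
begin

lemma conv_rep: "t \<in> {0..T} \<Longrightarrow> conv P Q t x = (\<integral>s. indicator {0..t} s *\<^sub>R P (clmp T (t - s)) (Q (clmp T s) x) \<partial>lborel)"
  unfolding conv_def set_lebesgue_integral_def
  by (rule Bochner_Integration.integral_cong) (auto simp: indicator_def)

lemma conv_meas[measurable]: "(\<lambda>s. indicator {0..t} s *\<^sub>R P (clmp T (t - s)) (Q (clmp T s) x)) \<in> borel_measurable lborel"
proof -
  have [measurable]: "(\<lambda>s. Q (clmp T s) x) \<in> borel_measurable lborel"
    using good_meas[OF gQ T, of "\<lambda>s. s" lborel "\<lambda>s. x"] by simp
  have [measurable]: "(\<lambda>s. P (clmp T (t - s)) (Q (clmp T s) x)) \<in> borel_measurable lborel"
    using good_meas[OF gP T, of "\<lambda>s. t - s" lborel "\<lambda>s. Q (clmp T s) x"] by simp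
  show ?thesis by measurable
qed

lemma conv_int: "integrable lborel (\<lambda>s. indicator {0..t} s *\<^sub>R P (clmp T (t - s)) (Q (clmp T s) x))"
proof (rule Bochner_Integration.integrable_bound[OF _ conv_meas])
  show "integrable lborel (\<lambda>s. indicator {0..t} s * (c1 * (c2 * norm x)))"
    by (rule integrable_mult_left, rule integrable_real_indicator) (auto simp: emeasure_lborel_Icc_eq)
  show "AE s in lborel. norm (indicator {0..t} s *\<^sub>R P (clmp T (t - s)) (Q (clmp T s) x)) \<le> norm (indicator {0..t} s * (c1 * (c2 * norm x)))"
  proof (rule AE_I2)
    fix s
    have "norm (P (clmp T (t - s)) (Q (clmp T s) x)) \<le> c1 * norm (Q (clmp T s) x)"
      using good_bound[OF gP clamp_in[OF T]] .
    also have "\<dots> \<le> c1 * (c2 * norm x)"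
      using good_bound[OF gQ clamp_in[OF T]] c1 by (intro mult_left_mono) auto
    finally show "norm (indicator {0..t} s *\<^sub>R P (clmp T (t - s)) (Q (clmp T s) x)) \<le> norm (indicator {0..t} s * (c1 * (c2 * norm x)))"
      using c1 c2 by (auto simp: indicator_def)
  qed
qed

lemma conv_bound_gen:
  assumes t: "t \<in> {0..T}" and q: "\<And>s x. s \<in> {0..T} \<Longrightarrow> norm (Q s x) \<le> q s * norm x"
    and qc: "continuous_on {0..T} q"
  shows "norm (conv P Q t x) \<le> c1 * (\<integral>s. indicator {0..t} s * q s \<partial>lborel) * norm x"
proof -
  have qi: "integrable lborel (\<lambda>s. indicator {0..t} s * q s)"
  proof -
    have "continuous_on {0..t} q" using qc t by (auto intro: continuous_on_subset)
    from borel_integrable_atLeastAtMost'[OF this] show ?thesis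
      by (simp add: set_integrable_def mult.commute)
  qed
  have "norm (conv P Q t x) \<le> (\<integral>s. indicator {0..t} s * q s * (c1 * norm x) \<partial>lborel)"
    unfolding conv_rep[OF t]
  proof (rule norm_integral_le_integral)
    show "integrable lborel (\<lambda>s. indicator {0..t} s * q s * (c1 * norm x))"
      using qi by (rule integrable_mult_left)
    show "AE s in lborel. norm (indicator {0..t} s *\<^sub>R P (clmp T (t - s)) (Q (clmp T s) x)) \<le> indicator {0..t} s * q s * (c1 * norm x)"
    proof (rule AE_I2)
      fix s
      show "norm (indicator {0..t} s *\<^sub>R P (clmp T (t - s)) (Q (clmp T s) x)) \<le> indicator {0..t} s * q s * (c1 * norm x)"
      proof (cases "s \<in> {0..t}")
        case True
        hence s: "s \<in> {0..T}" using t by auto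
        have "norm (P (clmp T (t - s)) (Q (clmp T s) x)) \<le> c1 * norm (Q (clmp T s) x)"
          using good_bound[OF gP clamp_in[OF T]] .
        also have "\<dots> \<le> c1 * (q s * norm x)"
          using q[OF s, of x] c1 s by (intro mult_left_mono) auto
        finally show ?thesis using True s by (simp add: algebra_simps)
      qed simp
    qed
  qed
  also have "\<dots> = c1 * (\<integral>s. indicator {0..t} s * q s \<partial>lborel) * norm x"
    by (simp add: algebra_simps)
  finally show ?thesis .
qed

lemma conv_cont: "continuous_on {0..T} (\<lambda>t. conv P Q t x)"
proof -
  have c: "continuous_on {0..T} (\<lambda>t. \<integral>s. (indicator {0..t} s * indicator {0..T} s) *\<^sub>R P (clmp T (t - s)) (Q (clmp T s) x) \<partial>lborel)"
  proof (rule cont_param[where Bd="c1 * (c2 * norm x)"])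
    show "integrable lborel (indicator {0..T} :: real \<Rightarrow> real)"
      by (intro integrable_real_indicator) (auto simp: emeasure_lborel_Icc_eq)
    show "(\<lambda>s. P (clmp T (t - s)) (Q (clmp T s) x)) \<in> borel_measurable lborel" for t
    proof -
      have [measurable]: "(\<lambda>s. Q (clmp T s) x) \<in> borel_measurable lborel"
        using good_meas[OF gQ T, of "\<lambda>s. s" lborel "\<lambda>s. x"] by simp
      show ?thesis using good_meas[OF gP T, of "\<lambda>s. t - s" lborel "\<lambda>s. Q (clmp T s) x"] by simp
    qed
    show "continuous_on {0..T} (\<lambda>t. P (clmp T (t - s)) (Q (clmp T s) x))" for s
      by (rule good_clamp_cont[OF gP T]) (intro continuous_intros)
    show "norm (P (clmp T (t - s)) (Q (clmp T s) x)) \<le> c1 * (c2 * norm x)" for t s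
      by (rule order_trans[OF good_bound[OF gP clamp_in[OF T]] mult_left_mono[OF good_bound[OF gQ clamp_in[OF T]] c1]])
  qed
  have e: "t \<in> {0..T} \<Longrightarrow> (\<integral>s. (indicator {0..t} s * indicator {0..T} s) *\<^sub>R P (clmp T (t - s)) (Q (clmp T s) x) \<partial>lborel) = conv P Q t x" for t
    unfolding conv_rep
    by (rule Bochner_Integration.integral_cong) (auto simp: indicator_def)
  show ?thesis using continuous_on_cong[OF refl, THEN iffD1, OF e c] .
qed

lemma conv_lin:
  assumes t: "t \<in> {0..T}"
  shows "conv P Q t (x + y) = conv P Q t x + conv P Q t y" "conv P Q t (a *\<^sub>R x) = a *\<^sub>R conv P Q t x"
proof -
  show "conv P Q t (x + y) = conv P Q t x + conv P Q t y"
    unfolding conv_rep[OF t] 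
    apply (subst Bochner_Integration.integral_add[symmetric, OF conv_int conv_int])
    apply (rule Bochner_Integration.integral_cong)
     apply (auto simp: good_add[OF gQ clamp_in[OF T]] good_add[OF gP clamp_in[OF T]] scaleR_add_right)
    done
  show "conv P Q t (a *\<^sub>R x) = a *\<^sub>R conv P Q t x"
    unfolding conv_rep[OF t]
    apply (subst integral_scaleR_right[symmetric])
    apply (rule Bochner_Integration.integral_cong)
     apply (auto simp: good_scale[OF gQ clamp_in[OF T]] good_scale[OF gP clamp_in[OF T]])
    done
qed

lemma conv_good: "good T (conv P Q) (c1 * c2 * T)"
  unfolding good_def
proof (intro conjI ballI allI)
  fix t x assume t: "t \<in> {0..T}"
  have "norm (conv P Q t x) \<le> c1 * (\<integral>s. indicator {0..t} s * c2 \<partial>lborel) * norm x"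
    by (rule conv_bound_gen[OF t good_bound[OF gQ]]) auto
  also have "(\<integral>s. indicator {0..t} s * c2 \<partial>lborel) = t * c2"
    using t by (simp add: emeasure_lborel_Icc_eq)
  also have "c1 * (t * c2) * norm x \<le> c1 * c2 * T * norm x"
  proof -
    have "c1 * c2 * t \<le> c1 * c2 * T" using t c1 c2 by (intro mult_left_mono) auto
    thus ?thesis by (intro mult_right_mono) (auto simp: ac_simps)
  qed
  finally show "norm (conv P Q t x) \<le> c1 * c2 * T * norm x" .
next
  fix x show "continuous_on {0..T} (\<lambda>t. conv P Q t x)" by (rule conv_cont)
next
  fix t assume t: "t \<in> {0..T}"
  show "bounded_linear (conv P Q t)"
  proof (rule bounded_linear_intro[where K="c1 * c2 * T"])
    show "conv P Q t (x + y) = conv P Q t x + conv P Q t y" for x y using conv_lin[OF t] by blast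
    show "conv P Q t (r *\<^sub>R x) = r *\<^sub>R conv P Q t x" for r x using conv_lin[OF t] by blast
    show "norm (conv P Q t x) \<le> norm x * (c1 * c2 * T)" for x
    proof -
      have "norm (conv P Q t x) \<le> c1 * (\<integral>s. indicator {0..t} s * c2 \<partial>lborel) * norm x"
        by (rule conv_bound_gen[OF t good_bound[OF gQ]]) auto
      also have "(\<integral>s. indicator {0..t} s * c2 \<partial>lborel) = t * c2"
        using t by (simp add: emeasure_lborel_Icc_eq)
      also have "c1 * (t * c2) * norm x \<le> c1 * c2 * T * norm x"
      proof -
        have "c1 * c2 * t \<le> c1 * c2 * T" using t c1 c2 by (intro mult_left_mono) auto
        thus ?thesis by (intro mult_right_mono) (auto simp: ac_simps)
      qed
      finally show ?thesis by (simp add: mult.commute)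
    qed
  qed
qed

end

lemma good_mono_bound: "good T P c \<Longrightarrow> (\<And>r x. r \<in> {0..T} \<Longrightarrow> norm (P r x) \<le> c' * norm x) \<Longrightarrow> good T P c'"
  by (auto simp: good_def)

lemma gronwall0:
  fixes f :: "real \<Rightarrow> real"
  assumes T: "T > 0" and fc: "continuous_on {0..T} f" and f0: "\<And>t. t\<in>{0..T} \<Longrightarrow> 0 \<le> f t" and L: "0 \<le> L"
  and ineq: "\<And>t. t \<in> {0<..T} \<Longrightarrow> f t \<le> L * (\<integral>s. indicator {0..t} s * f s \<partial>lborel)"
  and t: "t \<in> {0..T}"
  shows "f t = 0"
proof -
  obtain xm where xm: "xm \<in> {0..T}" "\<And>y. y \<in> {0..T} \<Longrightarrow> f y \<le> f xm"
    using continuous_attains_sup[OF compact_Icc _ fc] T by auto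
  define B where "B = f xm"
  have B: "\<And>y. y \<in> {0..T} \<Longrightarrow> f y \<le> B" "0 \<le> B" using xm f0 by (auto simp: B_def)
  have claim: "\<forall>t\<in>{0<..T}. f t \<le> B * (L * t)^n / fact n" for n
  proof (induction n)
    case 0 thus ?case using B by auto
  next
    case (Suc n)
    show ?case
    proof
      fix t assume t: "t \<in> {0<..T}"
      have fi: "integrable lborel (\<lambda>s. indicator {0..t} s * f s)"
      proof -
        have "continuous_on {0..t} f" using fc t by (auto intro: continuous_on_subset)
        from borel_integrable_atLeastAtMost'[OF this] show ?thesis
          by (simp add: set_integrable_def)
      qed
      have pi: "integrable lborel (\<lambda>s. indicator {0..t} s * (B * L^n / fact n * (s - 0)^n))"
      proof -
        have "continuous_on {0..t} (\<lambda>s. B * L^n / fact n * (s - 0)^n)" by (intro continuous_intros)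
        from borel_integrable_atLeastAtMost'[OF this] show ?thesis
          by (simp add: set_integrable_def)
      qed
      have "f t \<le> L * (\<integral>s. indicator {0..t} s * f s \<partial>lborel)" using ineq t by auto
      also have "(\<integral>s. indicator {0..t} s * f s \<partial>lborel) \<le> (\<integral>s. indicator {0..t} s * (B * L^n / fact n * (s - 0)^n) \<partial>lborel)"
      proof (rule integral_mono_AE[OF fi pi])
        show "AE s in lborel. indicator {0..t} s * f s \<le> indicator {0..t} s * (B * L ^ n / fact n * (s - 0) ^ n)"
          using AE_lborel_singleton[of 0]
        proof eventually_elim
          case (elim s)
          show ?case
          proof (cases "s \<in> {0..t}")
            case True
            hence "s \<in> {0<..T}" using elim t by auto
            hence "f s \<le> B * (L * s)^n / fact n" using Suc.IH by auto
            thus ?thesis using True by (simp add: power_mult_distrib)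
          qed simp
        qed
      qed
      also have "(\<integral>s. indicator {0..t} s * (B * L^n / fact n * (s - 0)^n) \<partial>lborel) = B * L^n / fact n * (t^Suc n / Suc n)"
        using integral_shifted_power[of 0 t n] t by (simp add: mult.left_commute)
      finally have "f t \<le> L * (B * L ^ n / fact n * (t ^ Suc n / real (Suc n)))"
        using L by (simp add: mult_left_mono)
      also have "\<dots> = B * (L * t) ^ Suc n / fact (Suc n)"
        by (simp add: power_mult_distrib field_simps del: of_nat_Suc)
      finally show "f t \<le> B * (L * t) ^ Suc n / fact (Suc n)" .
    qed
  qed
  have pos: "\<forall>t\<in>{0<..T}. f t = 0"
  proof
    fix t assume t: "t \<in> {0<..T}"
    have "(\<lambda>n. (L * t) ^ n /\<^sub>R fact n) \<longlonglongrightarrow> 0" by (rule summable_LIMSEQ_zero[OF summable_exp_generic])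
    hence "(\<lambda>n. B * ((L * t) ^ n /\<^sub>R fact n)) \<longlonglongrightarrow> B * 0" by (intro tendsto_mult tendsto_const)
    moreover have "(\<lambda>n. B * ((L * t) ^ n /\<^sub>R fact n)) = (\<lambda>n. B * (L * t) ^ n / fact n)"
      by (rule ext) (simp add: field_simps)
    ultimately have lim: "(\<lambda>n. B * (L * t) ^ n / fact n) \<longlonglongrightarrow> 0" by simp
    have "f t \<le> 0" by (rule LIMSEQ_le_const[OF lim]) (use claim t in auto)
    moreover have "0 \<le> f t" using f0 t by auto
    ultimately show "f t = 0" by linarith
  qed
  show ?thesis
  proof (cases "t = 0")
    case False thus ?thesis using pos t by auto
  next
    case True
    define u where "u n = T / (Suc n)" for n :: nat
    have u: "\<forall>n. u n \<in> {0..T}" "u \<longlonglongrightarrow> 0"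
    proof -
      show "\<forall>n. u n \<in> {0..T}" using T by (auto simp: u_def field_simps)
      have "(\<lambda>n. T * inverse (real (Suc n))) \<longlonglongrightarrow> T * 0"
        by (intro tendsto_mult tendsto_const LIMSEQ_inverse_real_of_nat)
      moreover have "u = (\<lambda>n. T * inverse (real (Suc n)))" by (rule ext) (simp add: u_def divide_inverse)
      ultimately show "u \<longlonglongrightarrow> 0" by simp
    qed
    have "(f \<circ> u) \<longlonglongrightarrow> f 0" using fc u T unfolding continuous_on_sequentially by auto
    moreover have "(f \<circ> u) = (\<lambda>n. 0)"
    proof
      fix n have "u n \<in> {0<..T}" using T by (auto simp: u_def field_simps)
      thus "(f \<circ> u) n = 0" using pos by auto
    qed
    ultimately have "(\<lambda>n. 0::real) \<longlonglongrightarrow> f 0" by simp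
    hence "f 0 = 0" using LIMSEQ_unique tendsto_const by blast
    thus ?thesis using True by simp
  qed
qed

context sgK begin

lemma S_meas[measurable]:
  "a \<in> borel_measurable M \<Longrightarrow> b \<in> borel_measurable M \<Longrightarrow> (\<lambda>w. S (clmp T (a w)) (b w)) \<in> borel_measurable M"
  using good_meas[OF S_good] Tpos by auto

lemma mu_rep: "t \<in> {0..T} \<Longrightarrow> mu S K t x = (\<integral>s. (indicator {0..t} s * K0 s) *\<^sub>R S (clmp T (t - s)) x \<partial>lborel)"
  unfolding mu_def set_lebesgue_integral_def
  by (rule Bochner_Integration.integral_cong) (auto simp: indicator_def K0_def)

lemma mu_meas[measurable]: "(\<lambda>s. (indicator {0..t} s * K0 s) *\<^sub>R S (clmp T (t - s)) x) \<in> borel_measurable lborel"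
  by measurable

lemma mu_int: "integrable lborel (\<lambda>s. (indicator {0..t} s * K0 s) *\<^sub>R S (clmp T (t - s)) x)"
proof (rule Bochner_Integration.integrable_bound[OF _ mu_meas])
  show "integrable lborel (\<lambda>s. \<bar>K0 s\<bar> * (c0 * norm x))"
    using absK0_int by (rule integrable_mult_left)
  show "AE s in lborel. norm ((indicator {0..t} s * K0 s) *\<^sub>R S (clmp T (t - s)) x) \<le> norm (\<bar>K0 s\<bar> * (c0 * norm x))"
  proof (rule AE_I2)
    fix s
    have "norm (S (clmp T (t - s)) x) \<le> c0 * norm x" using S_bound[OF clamp_in] Tpos by auto
    hence "indicator {0..t} s * \<bar>K0 s\<bar> * norm (S (clmp T (t - s)) x) \<le> 1 * \<bar>K0 s\<bar> * (c0 * norm x)"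
      by (intro mult_mono) (auto simp: indicator_def)
    thus "norm ((indicator {0..t} s * K0 s) *\<^sub>R S (clmp T (t - s)) x) \<le> norm (\<bar>K0 s\<bar> * (c0 * norm x))"
      using c0_nonneg by (simp add: abs_mult)
  qed
qed

lemma mu_bound: assumes t: "t \<in> {0..T}" shows "norm (mu S K t x) \<le> kk * norm x"
proof -
  have "norm (mu S K t x) \<le> (\<integral>s. \<bar>K0 s\<bar> * (c0 * norm x) \<partial>lborel)"
    unfolding mu_rep[OF t]
  proof (rule norm_integral_le_integral)
    show "integrable lborel (\<lambda>s. \<bar>K0 s\<bar> * (c0 * norm x))"
      using absK0_int by (rule integrable_mult_left)
    show "AE s in lborel. norm ((indicator {0..t} s * K0 s) *\<^sub>R S (clmp T (t - s)) x) \<le> \<bar>K0 s\<bar> * (c0 * norm x)"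
    proof (rule AE_I2)
      fix s
      have "norm (S (clmp T (t - s)) x) \<le> c0 * norm x" using S_bound[OF clamp_in] Tpos by auto
      hence "indicator {0..t} s * \<bar>K0 s\<bar> * norm (S (clmp T (t - s)) x) \<le> 1 * \<bar>K0 s\<bar> * (c0 * norm x)"
        by (intro mult_mono) (auto simp: indicator_def)
      thus "norm ((indicator {0..t} s * K0 s) *\<^sub>R S (clmp T (t - s)) x) \<le> \<bar>K0 s\<bar> * (c0 * norm x)"
        by (simp add: abs_mult)
    qed
  qed
  also have "\<dots> = kk * norm x" by (simp add: kk_def kn_def)
  finally show ?thesis .
qed

lemma mu_cont: "continuous_on {0..T} (\<lambda>t. mu S K t x)"
proof -
  have c: "continuous_on {0..T} (\<lambda>t. \<integral>s. (indicator {0..t} s * K0 s) *\<^sub>R S (clmp T (t - s)) x \<partial>lborel)"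
  proof (rule cont_param[where Bd="c0 * norm x"])
    show "integrable lborel K0" by (rule K0_int)
    show "(\<lambda>s. S (clmp T (t - s)) x) \<in> borel_measurable lborel" for t by measurable
    show "continuous_on {0..T} (\<lambda>t. S (clmp T (t - s)) x)" for s
      by (rule good_clamp_cont[OF S_good]) (use Tpos in \<open>auto intro: continuous_intros\<close>)
    show "norm (S (clmp T (t - s)) x) \<le> c0 * norm x" for t s
      using S_bound[OF clamp_in] Tpos by auto
  qed
  have e: "t \<in> {0..T} \<Longrightarrow> (\<integral>s. (indicator {0..t} s * K0 s) *\<^sub>R S (clmp T (t - s)) x \<partial>lborel) = mu S K t x" for t
    using mu_rep by simp
  show ?thesis using continuous_on_cong[OF refl, THEN iffD1, OF e c] .
qed

lemma mu_good: "good T (mu S K) kk"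
  unfolding good_def
proof (intro conjI ballI allI)
  fix t x assume t: "t \<in> {0..T}"
  show "norm (mu S K t x) \<le> kk * norm x" using mu_bound[OF t] .
next
  fix x show "continuous_on {0..T} (\<lambda>t. mu S K t x)" by (rule mu_cont)
next
  fix t assume t: "t \<in> {0..T}"
  show "bounded_linear (mu S K t)"
  proof (rule bounded_linear_intro[where K=kk])
    show "mu S K t (x + y) = mu S K t x + mu S K t y" for x y
      unfolding mu_rep[OF t]
      apply (subst Bochner_Integration.integral_add[symmetric, OF mu_int mu_int])
      apply (rule Bochner_Integration.integral_cong)
       apply (auto simp: good_add[OF S_good clamp_in] Tpos less_imp_le scaleR_add_right)
      done
    show "mu S K t (r *\<^sub>R x) = r *\<^sub>R mu S K t x" for r x
      unfolding mu_rep[OF t]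
      apply (subst integral_scaleR_right[symmetric])
      apply (rule Bochner_Integration.integral_cong)
       apply (auto simp: good_scale[OF S_good clamp_in] Tpos less_imp_le)
      done
    show "norm (mu S K t x) \<le> norm x * kk" for x using mu_bound[OF t] by (simp add: mult.commute)
  qed
qed


lemma mu_pow_good_bound:
  "good T (mu_pow S K n) (kk^(Suc n) * T^n / fact n) \<and>
   (\<forall>t\<in>{0..T}. \<forall>x. norm (mu_pow S K n t x) \<le> kk^(Suc n) * t^n / fact n * norm x)"
proof (induction n)
  case 0
  show ?case using mu_good mu_bound by simp
next
  case (Suc n)
  define cn where "cn = kk^(Suc n) * T^n / fact n"
  have cn: "0 \<le> cn" using kk_nonneg Tpos by (simp add: cn_def)
  have gQ: "good T (mu_pow S K n) cn" using Suc.IH by (simp add: cn_def)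
  have bnd: "\<And>s x. s \<in> {0..T} \<Longrightarrow> norm (mu_pow S K n s x) \<le> (kk^(Suc n) / fact n * (s - 0)^n) * norm x"
    using Suc.IH by (simp add: mult.commute mult.left_commute)
  have T0: "0 \<le> T" using Tpos by simp
  have g1: "good T (mu_pow S K (Suc n)) (kk * cn * T)"
    using conv_good[OF mu_good gQ T0 kk_nonneg cn] by simp
  have sharp: "norm (mu_pow S K (Suc n) t x) \<le> kk^(Suc (Suc n)) * t^(Suc n) / fact (Suc n) * norm x"
    if t: "t \<in> {0..T}" for t x
  proof -
    have "norm (conv (mu S K) (mu_pow S K n) t x) \<le>
        kk * (\<integral>s. indicator {0..t} s * (kk^(Suc n) / fact n * (s - 0)^n) \<partial>lborel) * norm x"
      by (rule conv_bound_gen[OF mu_good gQ T0 kk_nonneg cn t bnd]) (auto intro!: continuous_intros)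
    also have "(\<integral>s. indicator {0..t} s * (kk^(Suc n) / fact n * (s - 0)^n) \<partial>lborel) =
        kk^(Suc n) / fact n * (t^(Suc n) / Suc n)"
    proof -
      have "(\<lambda>s. indicator {0..t} s * (kk^(Suc n) / fact n * (s - 0)^n)) = (\<lambda>s. kk^(Suc n) / fact n * (indicator {0..t} s * (s - 0)^n))"
        by (rule ext) (simp add: ac_simps)
      hence "(\<integral>s. indicator {0..t} s * (kk^(Suc n) / fact n * (s - 0)^n) \<partial>lborel) = kk^(Suc n) / fact n * (\<integral>s. indicator {0..t} s * (s - 0)^n \<partial>lborel)"
        by (simp only: integral_mult_right_zero)
      also have "\<dots> = kk^(Suc n) / fact n * (t^(Suc n) / Suc n)"
        using integral_shifted_power[of 0 t n] t by simp
      finally show ?thesis .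
    qed
    also have "kk * (kk^(Suc n) / fact n * (t^(Suc n) / Suc n)) * norm x = kk^(Suc (Suc n)) * t^(Suc n) / fact (Suc n) * norm x"
      by (simp add: field_simps del: of_nat_Suc)
    finally show ?thesis by simp
  qed
  have "good T (mu_pow S K (Suc n)) (kk^(Suc (Suc n)) * T^(Suc n) / fact (Suc n))"
  proof (rule good_mono_bound[OF g1])
    fix r x assume r: "r \<in> {0..T}"
    have "kk^(Suc (Suc n)) * r^(Suc n) / fact (Suc n) \<le> kk^(Suc (Suc n)) * T^(Suc n) / fact (Suc n)"
      using r kk_nonneg by (intro divide_right_mono mult_left_mono power_mono) auto
    thus "norm (mu_pow S K (Suc n) r x) \<le> kk^(Suc (Suc n)) * T^(Suc n) / fact (Suc n) * norm x"
      using sharp[OF r, of x] by (meson mult_right_mono norm_ge_zero order_trans)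
  qed
  thus ?case using sharp by blast
qed

lemma mu_pow_good: "good T (mu_pow S K n) (kk^(Suc n) * T^n / fact n)"
  using mu_pow_good_bound by blast

definition "bn n = kk^(Suc n) * T^n / fact n"
definition "Eb = suminf bn"

lemma bn_nonneg: "0 \<le> bn n" using kk_nonneg Tpos by (simp add: bn_def)

lemma bn_summable: "summable bn"
proof -
  have A: "summable (\<lambda>n. kk * ((kk * T)^n /\<^sub>R fact n))"
    by (intro summable_mult summable_exp_generic)
  have B: "(\<lambda>n. kk * ((kk * T)^n /\<^sub>R fact n)) = bn"
    by (rule ext) (simp add: bn_def field_simps power_mult_distrib)
  show ?thesis using A unfolding B .
qed

lemma Eb_nonneg: "0 \<le> Eb" unfolding Eb_def using bn_summable bn_nonneg by (simp add: suminf_nonneg)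

lemma mu_pow_bn: "t \<in> {0..T} \<Longrightarrow> norm (mu_pow S K n t x) \<le> bn n * norm x"
  using good_bound[OF mu_pow_good] by (simp add: bn_def)

lemma mu_pow_summable: "t \<in> {0..T} \<Longrightarrow> summable (\<lambda>n. mu_pow S K n t x)"
  by (rule summable_comparison_test'[where g="\<lambda>n. bn n * norm x" and N=0])
     (auto intro: summable_mult2 bn_summable mu_pow_bn)

lemma Rres_bound: assumes t: "t \<in> {0..T}" shows "norm (Rres S K t x) \<le> Eb * norm x"
proof -
  have "norm (Rres S K t x) = norm (\<Sum>n. mu_pow S K n t x)" by (simp add: Rres_def)
  also have "\<dots> \<le> (\<Sum>n. bn n * norm x)"
    by (rule norm_suminf_le) (auto intro: summable_mult2 bn_summable mu_pow_bn[OF t])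
  also have "\<dots> = Eb * norm x" unfolding Eb_def by (rule suminf_mult2[symmetric, OF bn_summable])
  finally show ?thesis .
qed

lemma Rres_cont: "continuous_on {0..T} (\<lambda>t. Rres S K t x)"
proof -
  have ul: "uniform_limit {0..T} (\<lambda>N t. \<Sum>n<N. mu_pow S K n t x) (\<lambda>t. \<Sum>n. mu_pow S K n t x) sequentially"
    by (rule Weierstrass_m_test[where M="\<lambda>n. bn n * norm x"]) (auto intro: summable_mult2 bn_summable mu_pow_bn)
  have "continuous_on {0..T} (\<lambda>t. \<Sum>n. mu_pow S K n t x)"
  proof (rule uniform_limit_theorem[OF _ ul])
    show "\<forall>\<^sub>F N in sequentially. continuous_on {0..T} (\<lambda>t. \<Sum>n<N. mu_pow S K n t x)"
      by (intro always_eventually allI continuous_on_sum good_cont[OF mu_pow_good])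
  qed simp
  thus ?thesis unfolding Rres_def by (intro continuous_on_minus)
qed

lemma Rres_good: "good T (Rres S K) Eb"
  unfolding good_def
proof (intro conjI ballI allI)
  fix t x assume t: "t \<in> {0..T}"
  show "norm (Rres S K t x) \<le> Eb * norm x" using Rres_bound[OF t] .
next
  fix x show "continuous_on {0..T} (\<lambda>t. Rres S K t x)" by (rule Rres_cont)
next
  fix t assume t: "t \<in> {0..T}"
  show "bounded_linear (Rres S K t)"
  proof (rule bounded_linear_intro[where K=Eb])
    show "Rres S K t (x + y) = Rres S K t x + Rres S K t y" for x y
    proof -
      have "(\<Sum>n. mu_pow S K n t (x + y)) = (\<Sum>n. mu_pow S K n t x + mu_pow S K n t y)"
        using good_add[OF mu_pow_good t] by simp
      also have "\<dots> = (\<Sum>n. mu_pow S K n t x) + (\<Sum>n. mu_pow S K n t y)"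
        by (rule suminf_add[symmetric]) (auto intro: mu_pow_summable[OF t])
      finally show ?thesis by (simp add: Rres_def)
    qed
    show "Rres S K t (r *\<^sub>R x) = r *\<^sub>R Rres S K t x" for r x
    proof -
      have "(\<Sum>n. mu_pow S K n t (r *\<^sub>R x)) = (\<Sum>n. r *\<^sub>R mu_pow S K n t x)"
        using good_scale[OF mu_pow_good t] by simp
      also have "\<dots> = r *\<^sub>R (\<Sum>n. mu_pow S K n t x)"
        by (rule suminf_scaleR_right[symmetric]) (auto intro: mu_pow_summable[OF t])
      finally show ?thesis by (simp add: Rres_def)
    qed
    show "norm (Rres S K t x) \<le> norm x * Eb" for x using Rres_bound[OF t] by (simp add: mult.commute)
  qed
qed


lemma mu_pow_good': "good T (mu_pow S K n) (bn n)"
  using mu_pow_good by (simp add: bn_def)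

lemma Rres_volterra:
  assumes t: "t \<in> {0..T}"
  shows "Rres S K t x - conv (mu S K) (Rres S K) t x = - mu S K t x"
proof -
  have T0: "0 \<le> T" using Tpos by simp
  define F where "F n s = indicator {0..t} s *\<^sub>R mu S K (clmp T (t - s)) (mu_pow S K n (clmp T s) x)" for n s
  have Fint: "integrable lborel (F n)" for n
    unfolding F_def[abs_def] by (rule conv_int[OF mu_good mu_pow_good' T0 kk_nonneg bn_nonneg])
  have Fb: "norm (F n s) \<le> indicator {0..t} s * (kk * (bn n * norm x))" for n s
  proof -
    have "norm (mu S K (clmp T (t - s)) (mu_pow S K n (clmp T s) x)) \<le> kk * norm (mu_pow S K n (clmp T s) x)"
      by (rule good_bound[OF mu_good clamp_in[OF T0]])
    also have "\<dots> \<le> kk * (bn n * norm x)"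
      by (rule mult_left_mono[OF mu_pow_bn[OF clamp_in[OF T0]] kk_nonneg])
    finally show ?thesis by (simp add: F_def indicator_def)
  qed
  have Fb': "norm (F n s) \<le> kk * norm x * bn n" for n s
  proof -
    have "indicator {0..t} s * (kk * (bn n * norm x)) \<le> 1 * (kk * (bn n * norm x))"
      using kk_nonneg bn_nonneg[of n] by (intro mult_right_mono) (auto simp: indicator_def)
    thus ?thesis using Fb[of n s] by (simp add: ac_simps)
  qed
  have sum_pt: "indicator {0..t} s *\<^sub>R mu S K (clmp T (t - s)) (Rres S K (clmp T s) x) = - (\<Sum>n. F n s)" for s
  proof -
    have bl: "bounded_linear (mu S K (clmp T (t - s)))" by (rule good_bl[OF mu_good clamp_in[OF T0]])
    have sm: "summable (\<lambda>n. mu_pow S K n (clmp T s) x)" by (rule mu_pow_summable[OF clamp_in[OF T0]])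
    have sm2: "summable (\<lambda>n. mu S K (clmp T (t - s)) (mu_pow S K n (clmp T s) x))"
      by (rule bounded_linear.summable[OF bl sm])
    have "mu S K (clmp T (t - s)) (Rres S K (clmp T s) x) = - mu S K (clmp T (t - s)) (\<Sum>n. mu_pow S K n (clmp T s) x)"
      unfolding Rres_def by (rule good_minus[OF mu_good clamp_in[OF T0]])
    also have "\<dots> = - (\<Sum>n. mu S K (clmp T (t - s)) (mu_pow S K n (clmp T s) x))"
      by (simp add: bounded_linear.suminf[OF bl sm])
    finally have "indicator {0..t} s *\<^sub>R mu S K (clmp T (t - s)) (Rres S K (clmp T s) x) =
       - (indicator {0..t} s *\<^sub>R (\<Sum>n. mu S K (clmp T (t - s)) (mu_pow S K n (clmp T s) x)))" by simp
    also have "\<dots> = - (\<Sum>n. F n s)"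
      unfolding F_def by (simp add: suminf_scaleR_right[OF sm2])
    finally show ?thesis .
  qed
  have "conv (mu S K) (Rres S K) t x = (\<integral>s. - (\<Sum>n. F n s) \<partial>lborel)"
    unfolding conv_rep[OF mu_good Rres_good T0 kk_nonneg Eb_nonneg t] sum_pt ..
  also have "\<dots> = - (\<integral>s. (\<Sum>n. F n s) \<partial>lborel)" by simp
  also have "(\<integral>s. (\<Sum>n. F n s) \<partial>lborel) = (\<Sum>n. integral\<^sup>L lborel (F n))"
  proof (rule integral_suminf[OF Fint])
    show "AE s in lborel. summable (\<lambda>n. norm (F n s))"
    proof (rule AE_I2)
      fix s show "summable (\<lambda>n. norm (F n s))"
        by (rule summable_comparison_test'[where g="\<lambda>n. kk * norm x * bn n" and N=0])
           (use Fb' in \<open>auto intro: summable_mult bn_summable\<close>)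
    qed
    show "summable (\<lambda>n. \<integral>s. norm (F n s) \<partial>lborel)"
    proof (rule summable_comparison_test'[where g="\<lambda>n. t * kk * norm x * bn n" and N=0])
      show "summable (\<lambda>n. t * kk * norm x * bn n)" by (intro summable_mult bn_summable)
      fix n
      have "(\<integral>s. norm (F n s) \<partial>lborel) \<le> (\<integral>s. indicator {0..t} s * (kk * (bn n * norm x)) \<partial>lborel)"
      proof (rule integral_mono)
        show "integrable lborel (\<lambda>s. norm (F n s))" using Fint by simp
        show "integrable lborel (\<lambda>s. indicator {0..t} s * (kk * (bn n * norm x)))"
          by (rule integrable_mult_left, rule integrable_real_indicator) (auto simp: emeasure_lborel_Icc_eq)
      qed (rule Fb)
      also have "\<dots> = t * kk * norm x * bn n" using t by (simp add: emeasure_lborel_Icc_eq ac_simps)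
      finally show "norm (\<integral>s. norm (F n s) \<partial>lborel) \<le> t * kk * norm x * bn n"
        by (simp add: integral_nonneg_AE)
    qed
  qed
  finally have cv0: "conv (mu S K) (Rres S K) t x = - (\<Sum>n. integral\<^sup>L lborel (F n))" .
  have intF: "integral\<^sup>L lborel (F n) = mu_pow S K (Suc n) t x" for n
    unfolding F_def mu_pow.simps conv_rep[OF mu_good mu_pow_good' T0 kk_nonneg bn_nonneg t] ..
  have cv: "conv (mu S K) (Rres S K) t x = - (\<Sum>n. mu_pow S K (Suc n) t x)" using cv0 intF by simp
  have "(\<Sum>n. mu_pow S K (Suc n) t x) = (\<Sum>n. mu_pow S K n t x) - mu_pow S K 0 t x"
    by (rule suminf_split_head[OF mu_pow_summable[OF t]])
  thus ?thesis using cv by (simp add: Rres_def)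
qed

lemma Rres_volterra_sol: "volterra_sol S K T (Rres S K)"
  unfolding volterra_sol_def
  using good_bl[OF Rres_good] Rres_cont Rres_volterra by auto


lemma volterra_unique:
  assumes V: "volterra_sol S K T R'" and t: "t \<in> {0..T}"
  shows "R' t = Rres S K t"
proof (rule ext)
  fix x
  have T0: "0 \<le> T" using Tpos by simp
  have blR: "\<And>s. s \<in> {0..T} \<Longrightarrow> bounded_linear (R' s)" and cR: "\<And>x. continuous_on {0..T} (\<lambda>s. R' s x)"
    and eqR: "\<And>s x. s \<in> {0<..T} \<Longrightarrow> R' s x - conv (mu S K) R' s x = - mu S K s x"
    using V unfolding volterra_sol_def by auto
  define D where "D s = R' s x - Rres S K s x" for s
  have Dc: "continuous_on {0..T} D" unfolding D_def by (intro continuous_intros cR Rres_cont)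
  have fc: "continuous_on {0..T} (\<lambda>s. norm (D s))" by (intro continuous_intros Dc)
  obtain xm where xm: "xm \<in> {0..T}" "\<And>y. y \<in> {0..T} \<Longrightarrow> norm (R' y x) \<le> norm (R' xm x)"
    using continuous_attains_sup[OF compact_Icc _ continuous_on_norm[OF cR[of x]]] T0 by auto
  define B where "B = norm (R' xm x)"
  have B: "\<And>y. y \<in> {0..T} \<Longrightarrow> norm (R' y x) \<le> B" using xm by (auto simp: B_def)
  have cRc: "continuous_on UNIV (\<lambda>s. R' (clmp T s) x)"
    by (rule continuous_on_compose2[OF cR[of x] continuous_clamp]) (use clamp_in[OF T0] in auto)
  have mRc[measurable]: "(\<lambda>s. R' (clmp T s) x) \<in> borel_measurable borel"
    by (rule borel_measurable_continuous_onI[OF cRc])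
  have ineq: "norm (D t') \<le> kk * (\<integral>s. indicator {0..t'} s * norm (D s) \<partial>lborel)" if t': "t' \<in> {0<..T}" for t'
  proof -
    have t'': "t' \<in> {0..T}" using t' by auto
    have rep: "conv (mu S K) R' t' x = (\<integral>s. indicator {0..t'} s *\<^sub>R mu S K (clmp T (t' - s)) (R' (clmp T s) x) \<partial>lborel)"
      unfolding conv_def set_lebesgue_integral_def
      by (rule Bochner_Integration.integral_cong) (use t' in \<open>auto simp: indicator_def\<close>)
    have m1: "(\<lambda>s. mu S K (clmp T (t' - s)) (R' (clmp T s) x)) \<in> borel_measurable lborel"
      using good_meas[OF mu_good T0, of "\<lambda>s. t' - s" lborel "\<lambda>s. R' (clmp T s) x"] by simp
    have i1: "integrable lborel (\<lambda>s. indicator {0..t'} s *\<^sub>R mu S K (clmp T (t' - s)) (R' (clmp T s) x))"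
    proof (rule Bochner_Integration.integrable_bound)
      show "integrable lborel (\<lambda>s. indicator {0..t'} s * (kk * B))"
        by (rule integrable_mult_left, rule integrable_real_indicator) (auto simp: emeasure_lborel_Icc_eq)
      show "(\<lambda>s. indicator {0..t'} s *\<^sub>R mu S K (clmp T (t' - s)) (R' (clmp T s) x)) \<in> borel_measurable lborel"
        using m1 by measurable
      show "AE s in lborel. norm (indicator {0..t'} s *\<^sub>R mu S K (clmp T (t' - s)) (R' (clmp T s) x)) \<le> norm (indicator {0..t'} s * (kk * B))"
      proof (rule AE_I2)
        fix s
        have "norm (mu S K (clmp T (t' - s)) (R' (clmp T s) x)) \<le> kk * norm (R' (clmp T s) x)"
          by (rule good_bound[OF mu_good clamp_in[OF T0]])
        also have "\<dots> \<le> kk * B" by (rule mult_left_mono[OF B[OF clamp_in[OF T0]] kk_nonneg])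
        finally show "norm (indicator {0..t'} s *\<^sub>R mu S K (clmp T (t' - s)) (R' (clmp T s) x)) \<le> norm (indicator {0..t'} s * (kk * B))"
          using kk_nonneg B[OF xm(1)] by (auto simp: indicator_def)
      qed
    qed
    have i2: "integrable lborel (\<lambda>s. indicator {0..t'} s *\<^sub>R mu S K (clmp T (t' - s)) (Rres S K (clmp T s) x))"
      by (rule conv_int[OF mu_good Rres_good T0 kk_nonneg Eb_nonneg])
    have "D t' = conv (mu S K) R' t' x - conv (mu S K) (Rres S K) t' x"
    proof -
      have e1: "R' t' x + mu S K t' x = conv (mu S K) R' t' x" using eqR[OF t', of x] by (simp add: algebra_simps)
      have e2: "Rres S K t' x + mu S K t' x = conv (mu S K) (Rres S K) t' x" using Rres_volterra[OF t'', of x] by (simp add: algebra_simps)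
      show ?thesis unfolding D_def e1[symmetric] e2[symmetric] by simp
    qed
    also have "\<dots> = (\<integral>s. indicator {0..t'} s *\<^sub>R mu S K (clmp T (t' - s)) (D (clmp T s)) \<partial>lborel)"
      unfolding rep conv_rep[OF mu_good Rres_good T0 kk_nonneg Eb_nonneg t'']
      apply (subst Bochner_Integration.integral_diff[symmetric, OF i1 i2])
      apply (rule Bochner_Integration.integral_cong)
       apply (auto simp: D_def good_diff[OF mu_good clamp_in[OF T0]] scaleR_diff_right)
      done
    finally have "norm (D t') = norm (\<integral>s. indicator {0..t'} s *\<^sub>R mu S K (clmp T (t' - s)) (D (clmp T s)) \<partial>lborel)" by simp
    also have "\<dots> \<le> (\<integral>s. kk * (indicator {0..t'} s * norm (D s)) \<partial>lborel)"
    proof (rule norm_integral_le_integral)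
      have "continuous_on {0..t'} (\<lambda>s. norm (D s))" using fc t' by (auto intro: continuous_on_subset)
      from borel_integrable_atLeastAtMost'[OF this]
      have "integrable lborel (\<lambda>s. indicator {0..t'} s * norm (D s))" by (simp add: set_integrable_def)
      thus "integrable lborel (\<lambda>s. kk * (indicator {0..t'} s * norm (D s)))" by (rule integrable_mult_right)
      show "AE s in lborel. norm (indicator {0..t'} s *\<^sub>R mu S K (clmp T (t' - s)) (D (clmp T s))) \<le> kk * (indicator {0..t'} s * norm (D s))"
      proof (rule AE_I2)
        fix s show "norm (indicator {0..t'} s *\<^sub>R mu S K (clmp T (t' - s)) (D (clmp T s))) \<le> kk * (indicator {0..t'} s * norm (D s))"
        proof (cases "s \<in> {0..t'}")
          case True
          hence s: "s \<in> {0..T}" using t' by auto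
          have "norm (mu S K (clmp T (t' - s)) (D (clmp T s))) \<le> kk * norm (D (clmp T s))"
            by (rule good_bound[OF mu_good clamp_in[OF T0]])
          thus ?thesis using True s by simp
        qed simp
      qed
    qed
    also have "\<dots> = kk * (\<integral>s. indicator {0..t'} s * norm (D s) \<partial>lborel)" by simp
    finally show ?thesis .
  qed
  have "norm (D t) = 0"
    by (rule gronwall0[OF Tpos fc _ kk_nonneg ineq t]) auto
  thus "R' t x = Rres S K t x" by (simp add: D_def)
qed

end

lemma fubini_gen:
  fixes h :: "real \<Rightarrow> real \<Rightarrow> 'a::{banach,second_countable_topology}"
  assumes meas: "(\<lambda>z. h (fst z) (snd z)) \<in> borel_measurable (lborel \<Otimes>\<^sub>M lborel)"
  and k: "integrable lborel k" and p: "integrable lborel p"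
  and bound: "\<And>x y. norm (h x y) \<le> k (x - y) * p y"
  shows "integrable (lborel \<Otimes>\<^sub>M lborel) (\<lambda>(x,y). h x y)"
    and "AE x in lborel. integrable lborel (h x)"
    and "(\<integral>x. \<integral>y. h x y \<partial>lborel \<partial>lborel) = (\<integral>y. \<integral>x. h x y \<partial>lborel \<partial>lborel)"
proof -
  have m': "(\<lambda>z. h (snd z) (fst z)) \<in> borel_measurable (lborel \<Otimes>\<^sub>M lborel)"
  proof -
    have "(\<lambda>z. (snd z, fst z)) \<in> measurable (lborel \<Otimes>\<^sub>M lborel) (lborel \<Otimes>\<^sub>M lborel)" by measurable
    from measurable_compose[OF this meas] show ?thesis by simp
  qed
  have "integrable (lborel \<Otimes>\<^sub>M lborel) (\<lambda>(y,x). h x y)"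
    using fubini_integrable[of "\<lambda>y x. h x y", OF m' k p] bound by simp
  from lborel_pair.integrable_product_swap[OF this]
  show I: "integrable (lborel \<Otimes>\<^sub>M lborel) (\<lambda>(x,y). h x y)" by (simp add: case_prod_beta')
  show "AE x in lborel. integrable lborel (h x)"
    using lborel_pair.AE_integrable_fst[OF I] .
  show "(\<integral>x. \<integral>y. h x y \<partial>lborel \<partial>lborel) = (\<integral>y. \<integral>x. h x y \<partial>lborel \<partial>lborel)"
    using lborel_pair.Fubini_integral[OF I] by simp
qed

lemma op_fubini:
  fixes P :: "real \<Rightarrow> 'a::{banach,second_countable_topology} \<Rightarrow> 'a" and \<Phi> :: "real \<Rightarrow> real \<Rightarrow> 'a"
  assumes gP: "good T P c1" and T0: "0 \<le> T" and c1: "0 \<le> c1"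
  and meas: "(\<lambda>z. \<Phi> (fst z) (snd z)) \<in> borel_measurable (lborel \<Otimes>\<^sub>M lborel)"
  and k: "integrable lborel k" and p: "integrable lborel p"
  and bound: "\<And>s \<sigma>. norm (\<Phi> s \<sigma>) \<le> k (s - \<sigma>) * p \<sigma>"
  shows "(\<integral>s. indicator {a..t} s *\<^sub>R P (clmp T (t - s)) (\<integral>\<sigma>. \<Phi> s \<sigma> \<partial>lborel) \<partial>lborel)
       = (\<integral>\<sigma>. \<integral>s. indicator {a..t} s *\<^sub>R P (clmp T (t - s)) (\<Phi> s \<sigma>) \<partial>lborel \<partial>lborel)"
proof -
  define h where "h s \<sigma> = indicator {a..t} s *\<^sub>R P (clmp T (t - s)) (\<Phi> s \<sigma>)" for s \<sigma>
  have mP: "(\<lambda>z. P (clmp T (t - fst z)) (\<Phi> (fst z) (snd z))) \<in> borel_measurable (lborel \<Otimes>\<^sub>M lborel)"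
    by (rule good_meas[OF gP T0]) (use meas in measurable)
  have mh: "(\<lambda>z. h (fst z) (snd z)) \<in> borel_measurable (lborel \<Otimes>\<^sub>M lborel)"
    unfolding h_def using mP by measurable
  have hb: "norm (h s \<sigma>) \<le> (c1 * \<bar>k (s - \<sigma>)\<bar>) * \<bar>p \<sigma>\<bar>" for s \<sigma>
  proof -
    have "norm (h s \<sigma>) \<le> norm (P (clmp T (t - s)) (\<Phi> s \<sigma>))" by (simp add: h_def indicator_def)
    also have "\<dots> \<le> c1 * norm (\<Phi> s \<sigma>)" by (rule good_bound[OF gP clamp_in[OF T0]])
    also have "\<dots> \<le> c1 * (\<bar>k (s - \<sigma>)\<bar> * \<bar>p \<sigma>\<bar>)"
      using bound[of s \<sigma>] c1 by (intro mult_left_mono) (auto simp: abs_mult[symmetric] intro: order_trans[OF _ abs_ge_self])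
    finally show ?thesis by (simp add: ac_simps)
  qed
  have F: "(\<integral>s. \<integral>\<sigma>. h s \<sigma> \<partial>lborel \<partial>lborel) = (\<integral>\<sigma>. \<integral>s. h s \<sigma> \<partial>lborel \<partial>lborel)"
    by (rule fubini_gen(3)[OF mh _ _ hb]) (use k p in auto)
  have AEi: "AE s in lborel. integrable lborel (\<Phi> s)"
    by (rule fubini_gen(2)[OF meas k p bound])
  have mI: "(\<lambda>s. \<integral>\<sigma>. \<Phi> s \<sigma> \<partial>lborel) \<in> borel_measurable lborel"
    using lborel.borel_measurable_lebesgue_integral[of \<Phi> lborel] meas by (simp add: case_prod_beta')
  have "(\<integral>s. indicator {a..t} s *\<^sub>R P (clmp T (t - s)) (\<integral>\<sigma>. \<Phi> s \<sigma> \<partial>lborel) \<partial>lborel) = (\<integral>s. \<integral>\<sigma>. h s \<sigma> \<partial>lborel \<partial>lborel)"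
  proof (rule integral_cong_AE)
    have "(\<lambda>s. P (clmp T (t - s)) (\<integral>\<sigma>. \<Phi> s \<sigma> \<partial>lborel)) \<in> borel_measurable lborel"
      by (rule good_meas[OF gP T0]) (use mI in measurable)
    thus "(\<lambda>s. indicator {a..t} s *\<^sub>R P (clmp T (t - s)) (\<integral>\<sigma>. \<Phi> s \<sigma> \<partial>lborel)) \<in> borel_measurable lborel"
      by measurable
    show "(\<lambda>s. \<integral>\<sigma>. h s \<sigma> \<partial>lborel) \<in> borel_measurable lborel"
      using lborel.borel_measurable_lebesgue_integral[of h lborel] mh by (simp add: case_prod_beta')
    show "AE s in lborel. indicator {a..t} s *\<^sub>R P (clmp T (t - s)) (\<integral>\<sigma>. \<Phi> s \<sigma> \<partial>lborel) = (\<integral>\<sigma>. h s \<sigma> \<partial>lborel)"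
      using AEi
    proof eventually_elim
      case (elim s)
      have "(\<integral>\<sigma>. h s \<sigma> \<partial>lborel) = indicator {a..t} s *\<^sub>R (\<integral>\<sigma>. P (clmp T (t - s)) (\<Phi> s \<sigma>) \<partial>lborel)"
        unfolding h_def by simp
      also have "(\<integral>\<sigma>. P (clmp T (t - s)) (\<Phi> s \<sigma>) \<partial>lborel) = P (clmp T (t - s)) (\<integral>\<sigma>. \<Phi> s \<sigma> \<partial>lborel)"
        by (rule integral_bounded_linear[OF good_bl[OF gP clamp_in[OF T0]] elim])
      finally show ?case by simp
    qed
  qed
  also have "\<dots> = (\<integral>\<sigma>. \<integral>s. h s \<sigma> \<partial>lborel \<partial>lborel)" by (rule F)
  finally show ?thesis unfolding h_def .
qed


definition oc :: "real \<Rightarrow> (real \<Rightarrow> 'a::{banach,second_countable_topology} \<Rightarrow> 'a) \<Rightarrow> real \<Rightarrow> real \<Rightarrow> (real \<Rightarrow> 'a) \<Rightarrow> 'a" where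
  "oc T P a t v = (\<integral>s. indicator {a..t} s *\<^sub>R P (clmp T (t - s)) (v s) \<partial>lborel)"

lemma indicator_Icc_pair_meas[measurable]:
  fixes a :: real
  shows "(\<lambda>z::real\<times>real. indicator {a..fst z} (snd z) :: real) \<in> borel_measurable (lborel \<Otimes>\<^sub>M lborel)"
proof -
  let ?A = "{z::real\<times>real. a \<le> snd z \<and> snd z \<le> fst z}"
  have "(\<lambda>z. indicator {a..fst z} (snd z) :: real) = indicator ?A"
    by (auto simp: indicator_def fun_eq_iff)
  moreover have "closed ?A"
    by (intro closed_Collect_conj closed_Collect_le continuous_intros)
  hence "?A \<in> sets borel" by (rule borel_closed)
  hence "?A \<in> sets (lborel \<Otimes>\<^sub>M lborel)" by (simp add: borel_prod[symmetric])
  ultimately show ?thesis by simp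
qed

context
  fixes P :: "real \<Rightarrow> 'a::{banach,second_countable_topology} \<Rightarrow> 'a" and T c1 :: real
  assumes gP: "good T P c1" and T0: "0 \<le> T" and c1: "0 \<le> c1"
begin

lemma oc_integrand_meas:
  assumes [measurable]: "v \<in> borel_measurable lborel"
  shows "(\<lambda>s. indicator {a..t} s *\<^sub>R P (clmp T (t - s)) (v s)) \<in> borel_measurable lborel"
proof -
  have [measurable]: "(\<lambda>s. P (clmp T (t - s)) (v s)) \<in> borel_measurable lborel"
    by (rule good_meas[OF gP T0]) measurable
  show ?thesis by measurable
qed

lemma oc_integrable:
  assumes v: "v \<in> borel_measurable lborel" and vb: "integrable lborel vb" and b: "\<And>s. norm (v s) \<le> vb s"
  shows "integrable lborel (\<lambda>s. indicator {a..t} s *\<^sub>R P (clmp T (t - s)) (v s))"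
proof (rule Bochner_Integration.integrable_bound[OF _ oc_integrand_meas[OF v]])
  show "integrable lborel (\<lambda>s. c1 * vb s)" using vb by simp
  show "AE s in lborel. norm (indicator {a..t} s *\<^sub>R P (clmp T (t - s)) (v s)) \<le> norm (c1 * vb s)"
  proof (rule AE_I2)
    fix s
    have "norm (indicator {a..t} s *\<^sub>R P (clmp T (t - s)) (v s)) \<le> norm (P (clmp T (t - s)) (v s))"
      by (simp add: indicator_def)
    also have "\<dots> \<le> c1 * norm (v s)" by (rule good_bound[OF gP clamp_in[OF T0]])
    also have "\<dots> \<le> c1 * vb s" by (rule mult_left_mono[OF b c1])
    also have "\<dots> \<le> norm (c1 * vb s)" by simp
    finally show "norm (indicator {a..t} s *\<^sub>R P (clmp T (t - s)) (v s)) \<le> norm (c1 * vb s)" .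
  qed
qed

lemma oc_bound:
  assumes vb: "integrable lborel vb" and b: "\<And>s. norm (v s) \<le> vb s"
  shows "norm (oc T P a t v) \<le> c1 * (\<integral>s. vb s \<partial>lborel)"
proof -
  have "norm (oc T P a t v) \<le> (\<integral>s. c1 * vb s \<partial>lborel)"
    unfolding oc_def
  proof (rule norm_integral_le_integral)
    show "integrable lborel (\<lambda>s. c1 * vb s)" using vb by simp
    show "AE s in lborel. norm (indicator {a..t} s *\<^sub>R P (clmp T (t - s)) (v s)) \<le> c1 * vb s"
    proof (rule AE_I2)
      fix s
      have "norm (indicator {a..t} s *\<^sub>R P (clmp T (t - s)) (v s)) \<le> norm (P (clmp T (t - s)) (v s))"
        by (simp add: indicator_def)
      also have "\<dots> \<le> c1 * norm (v s)" by (rule good_bound[OF gP clamp_in[OF T0]])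
      also have "\<dots> \<le> c1 * vb s" by (rule mult_left_mono[OF b c1])
      finally show "norm (indicator {a..t} s *\<^sub>R P (clmp T (t - s)) (v s)) \<le> c1 * vb s" .
    qed
  qed
  thus ?thesis by simp
qed

lemma oc_add:
  assumes v: "v \<in> borel_measurable lborel" "integrable lborel vb" "\<And>s. norm (v s) \<le> vb s"
  and w: "w \<in> borel_measurable lborel" "integrable lborel wb" "\<And>s. norm (w s) \<le> wb s"
  shows "oc T P a t (\<lambda>s. v s + w s) = oc T P a t v + oc T P a t w"
  unfolding oc_def
  apply (subst Bochner_Integration.integral_add[symmetric, OF oc_integrable[OF v] oc_integrable[OF w]])
  apply (rule Bochner_Integration.integral_cong)
   apply (auto simp: good_add[OF gP clamp_in[OF T0]] scaleR_add_right)
  done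

lemma oc_diff:
  assumes v: "v \<in> borel_measurable lborel" "integrable lborel vb" "\<And>s. norm (v s) \<le> vb s"
  and w: "w \<in> borel_measurable lborel" "integrable lborel wb" "\<And>s. norm (w s) \<le> wb s"
  shows "oc T P a t (\<lambda>s. v s - w s) = oc T P a t v - oc T P a t w"
  unfolding oc_def
  apply (subst Bochner_Integration.integral_diff[symmetric, OF oc_integrable[OF v] oc_integrable[OF w]])
  apply (rule Bochner_Integration.integral_cong)
   apply (auto simp: good_diff[OF gP clamp_in[OF T0]] scaleR_diff_right)
  done

lemma oc_meas:
  assumes [measurable]: "v \<in> borel_measurable lborel"
  shows "(\<lambda>t. oc T P a t v) \<in> borel_measurable lborel"
proof -
  have [measurable]: "(\<lambda>z. P (clmp T (fst z - snd z)) (v (snd z))) \<in> borel_measurable (lborel \<Otimes>\<^sub>M lborel)"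
    by (rule good_meas[OF gP T0]) measurable
  have "(\<lambda>z. indicator {a..fst z} (snd z) *\<^sub>R P (clmp T (fst z - snd z)) (v (snd z))) \<in> borel_measurable (lborel \<Otimes>\<^sub>M lborel)"
    by measurable
  hence "(\<lambda>t. \<integral>s. indicator {a..t} s *\<^sub>R P (clmp T (t - s)) (v s) \<partial>lborel) \<in> borel_measurable lborel"
    using lborel.borel_measurable_lebesgue_integral[of "\<lambda>t s. indicator {a..t} s *\<^sub>R P (clmp T (t - s)) (v s)" lborel]
    by (simp add: case_prod_beta')
  thus ?thesis unfolding oc_def .
qed

end


lemma L2_on_facts:
  fixes f :: "real \<Rightarrow> 'a::{banach,second_countable_topology}"
  assumes "L2_on {a..b} f"
  shows "(\<lambda>s. indicator {a..b} s *\<^sub>R f s) \<in> borel_measurable lborel"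
    and "integrable lborel (\<lambda>s. (norm (indicator {a..b} s *\<^sub>R f s))^2)"
    and "integrable lborel (\<lambda>s. norm (indicator {a..b} s *\<^sub>R f s))"
proof -
  show m: "(\<lambda>s. indicator {a..b} s *\<^sub>R f s) \<in> borel_measurable lborel"
    using assms by (simp add: L2_on_def set_borel_measurable_def)
  have "integrable lborel (\<lambda>s. indicator {a..b} s *\<^sub>R (norm (f s))^2)"
    using assms by (simp add: L2_on_def set_integrable_def)
  moreover have "(\<lambda>s. indicator {a..b} s *\<^sub>R (norm (f s))^2) = (\<lambda>s. (norm (indicator {a..b} s *\<^sub>R f s))^2)"
    by (auto simp: indicator_def fun_eq_iff)
  ultimately show sq: "integrable lborel (\<lambda>s. (norm (indicator {a..b} s *\<^sub>R f s))^2)" by simp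
  show "integrable lborel (\<lambda>s. norm (indicator {a..b} s *\<^sub>R f s))"
  proof (rule Bochner_Integration.integrable_bound)
    show "integrable lborel (\<lambda>s. indicator {a..b} s + (norm (indicator {a..b} s *\<^sub>R f s))^2)"
      by (rule Bochner_Integration.integrable_add[OF _ sq], rule integrable_real_indicator)
         (auto simp: emeasure_lborel_Icc_eq)
    show "(\<lambda>s. norm (indicator {a..b} s *\<^sub>R f s)) \<in> borel_measurable lborel" using m by measurable
    show "AE x in lborel. norm (norm (indicator {a..b} x *\<^sub>R f x)) \<le> norm (indicator {a..b} x + (norm (indicator {a..b} x *\<^sub>R f x))\<^sup>2)"
    proof (rule AE_I2)
      fix x
      let ?n = "norm (indicator {a..b} x *\<^sub>R f x)"
      have h: "0 \<le> (?n - 1)^2" by simp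
      have "(?n - 1)^2 = ?n^2 - 2 * ?n + 1" by (simp add: power2_diff)
      hence "?n \<le> 1 + ?n^2" using h by (smt (verit) norm_ge_zero zero_le_power2)
      moreover have "x \<notin> {a..b} \<Longrightarrow> ?n = 0" by simp
      ultimately have "?n \<le> indicator {a..b} x + ?n^2" by (cases "x \<in> {a..b}") auto
      thus "norm (norm (indicator {a..b} x *\<^sub>R f x)) \<le> norm (indicator {a..b} x + (norm (indicator {a..b} x *\<^sub>R f x))\<^sup>2)"
        by (simp add: indicator_def)
    qed
  qed
qed

lemma amgm: "\<bar>x\<bar> * \<bar>y\<bar> \<le> ((x::real)^2 + y^2) / 2"
proof -
  have "0 \<le> (\<bar>x\<bar> - \<bar>y\<bar>)^2" by simp
  also have "(\<bar>x\<bar> - \<bar>y\<bar>)^2 = x^2 + y^2 - 2 * (\<bar>x\<bar> * \<bar>y\<bar>)" by (simp add: power2_diff power2_abs)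
  finally show ?thesis by simp
qed

locale mildctx = sgK S K T C \<omega>
  for S :: "real \<Rightarrow> 'h::{banach,second_countable_topology} \<Rightarrow> 'h" and K T C \<omega> +
  fixes \<tau> :: real and \<xi> :: "real \<Rightarrow> 'h" and u :: "real \<Rightarrow> 'u::{banach,second_countable_topology}"
    and B :: "'u \<Rightarrow> 'h" and \<xi>0 :: 'h
  assumes tau: "\<tau> \<in> {0<..<T}" and xiL2: "L2_on {0..\<tau>} \<xi>" and uL2: "L2_on {\<tau>..T} u"
    and Bbl: "bounded_linear B"
begin

definition "\<xi>z s = indicator {0..\<tau>} s *\<^sub>R \<xi> s"
definition "uz s = indicator {\<tau>..T} s *\<^sub>R u s"
definition "Buz s = B (uz s)"
definition "nB = onorm B"
definition "fz s = (\<integral>\<sigma>. K0 (s - \<sigma>) *\<^sub>R \<xi>z \<sigma> \<partial>lborel)"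
definition "fzz s = indicator {\<tau>..T} s *\<^sub>R fz s"
definition "Fb = ((\<integral>s. (K0 s)^2 \<partial>lborel) + (\<integral>s. (norm (\<xi>z s))^2 \<partial>lborel)) / 2"

lemma T0: "0 \<le> T" using Tpos by simp
lemma tau0: "0 < \<tau>" "\<tau> < T" using tau by auto

lemma xiz_meas[measurable]: "\<xi>z \<in> borel_measurable lborel"
  using L2_on_facts(1)[OF xiL2] by (simp add: \<xi>z_def[abs_def])
lemma xiz_sq: "integrable lborel (\<lambda>s. (norm (\<xi>z s))^2)"
  using L2_on_facts(2)[OF xiL2] by (simp add: \<xi>z_def[abs_def])
lemma xiz_int: "integrable lborel (\<lambda>s. norm (\<xi>z s))"
  using L2_on_facts(3)[OF xiL2] by (simp add: \<xi>z_def[abs_def])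
lemma uz_meas[measurable]: "uz \<in> borel_measurable lborel"
  using L2_on_facts(1)[OF uL2] by (simp add: uz_def[abs_def])
lemma uz_int: "integrable lborel (\<lambda>s. norm (uz s))"
  using L2_on_facts(3)[OF uL2] by (simp add: uz_def[abs_def])

lemma nB_nonneg: "0 \<le> nB" unfolding nB_def by (rule onorm_pos_le[OF Bbl])
lemma B_bound: "norm (B x) \<le> nB * norm x" unfolding nB_def by (rule onorm[OF Bbl])

lemma Buz_meas[measurable]: "Buz \<in> borel_measurable lborel"
proof -
  have "B \<in> borel_measurable borel"
    by (rule borel_measurable_continuous_onI) (simp add: linear_continuous_on[OF Bbl])
  thus ?thesis unfolding Buz_def[abs_def] by measurable
qed
lemma Buz_bound: "norm (Buz s) \<le> nB * norm (uz s)" unfolding Buz_def by (rule B_bound)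
lemma Buz_int: "integrable lborel (\<lambda>s. nB * norm (uz s))" using uz_int by simp

lemma fz_integrand_meas[measurable]: "(\<lambda>z. K0 (fst z - snd z) *\<^sub>R \<xi>z (snd z)) \<in> borel_measurable (lborel \<Otimes>\<^sub>M lborel)"
  by measurable

lemma fz_meas[measurable]: "fz \<in> borel_measurable lborel"
  using lborel.borel_measurable_lebesgue_integral[of "\<lambda>s \<sigma>. K0 (s - \<sigma>) *\<^sub>R \<xi>z \<sigma>" lborel] fz_integrand_meas
  by (simp add: fz_def[abs_def] case_prod_beta')

lemma K0sq_shift: "integrable lborel (\<lambda>\<sigma>. (K0 (s - \<sigma>))^2)"
  using shift_integrable(2)[OF K0sq_int, of s] by simp

lemma fz_bound: "norm (fz s) \<le> Fb"
proof -
  have "norm (fz s) \<le> (\<integral>\<sigma>. ((K0 (s - \<sigma>))^2 + (norm (\<xi>z \<sigma>))^2) / 2 \<partial>lborel)"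
    unfolding fz_def
  proof (rule norm_integral_le_integral)
    show "integrable lborel (\<lambda>\<sigma>. ((K0 (s - \<sigma>))^2 + (norm (\<xi>z \<sigma>))^2) / 2)"
      using K0sq_shift xiz_sq by simp
    show "AE \<sigma> in lborel. norm (K0 (s - \<sigma>) *\<^sub>R \<xi>z \<sigma>) \<le> ((K0 (s - \<sigma>))^2 + (norm (\<xi>z \<sigma>))^2) / 2"
      using amgm[of "K0 (s - _)" "norm (\<xi>z _)"] by simp
  qed
  also have "\<dots> = ((\<integral>\<sigma>. (K0 (s - \<sigma>))^2 \<partial>lborel) + (\<integral>\<sigma>. (norm (\<xi>z \<sigma>))^2 \<partial>lborel)) / 2"
    using K0sq_shift xiz_sq by simp
  also have "(\<integral>\<sigma>. (K0 (s - \<sigma>))^2 \<partial>lborel) = (\<integral>s. (K0 s)^2 \<partial>lborel)"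
    using reflect_integral[of "\<lambda>r. (K0 r)^2" s] by simp
  finally show ?thesis by (simp add: Fb_def)
qed

lemma Fb_nonneg: "0 \<le> Fb" using fz_bound[of 0] norm_ge_zero order_trans by blast

lemma fz_eq: assumes s: "s \<in> {\<tau>..T}"
  shows "set_lebesgue_integral lborel {0..\<tau>} (\<lambda>\<sigma>. K (s - \<sigma>) *\<^sub>R \<xi> \<sigma>) = fz s"
  unfolding set_lebesgue_integral_def fz_def
  by (rule Bochner_Integration.integral_cong) (use s in \<open>auto simp: \<xi>z_def K0_def indicator_def\<close>)

end

lemma indicator_Icc_pair_meas2[measurable]:
  fixes b :: real
  shows "(\<lambda>z::real\<times>real. indicator {fst z..b} (snd z) :: real) \<in> borel_measurable (lborel \<Otimes>\<^sub>M lborel)"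
proof -
  let ?A = "{z::real\<times>real. fst z \<le> snd z \<and> snd z \<le> b}"
  have "(\<lambda>z. indicator {fst z..b} (snd z) :: real) = indicator ?A"
    by (auto simp: indicator_def fun_eq_iff)
  moreover have "closed ?A"
    by (intro closed_Collect_conj closed_Collect_le continuous_intros)
  hence "?A \<in> sets borel" by (rule borel_closed)
  hence "?A \<in> sets (lborel \<Otimes>\<^sub>M lborel)" by (simp add: borel_prod[symmetric])
  ultimately show ?thesis by simp
qed

lemma norm_set_integral_const_bound:
  fixes X :: "real \<Rightarrow> 'a::{banach,second_countable_topology}"
  assumes "a \<le> b" "\<And>r. r \<in> {a..b} \<Longrightarrow> norm (X r) \<le> M"
  shows "norm (\<integral>r. indicator {a..b} r *\<^sub>R X r \<partial>lborel) \<le> (b - a) * M"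
proof -
  have "norm (\<integral>r. indicator {a..b} r *\<^sub>R X r \<partial>lborel) \<le> (\<integral>r. indicator {a..b} r * M \<partial>lborel)"
  proof (rule norm_integral_le_integral)
    show "integrable lborel (\<lambda>r. indicator {a..b} r * M)"
      by (rule integrable_mult_left, rule integrable_real_indicator) (auto simp: emeasure_lborel_Icc_eq)
    show "AE r in lborel. norm (indicator {a..b} r *\<^sub>R X r) \<le> indicator {a..b} r * M"
      using assms(2) by (intro AE_I2) (auto simp: indicator_def)
  qed
  also have "\<dots> = (b - a) * M" using assms(1) by (simp add: emeasure_lborel_Icc_eq)
  finally show ?thesis .
qed

context mildctx begin

abbreviation "R \<equiv> Rres S K"

definition "hz s = fzz s + Buz s"
definition "hb s = indicator {\<tau>..T} s * Fb + nB * norm (uz s)"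
definition "gc t = S (clmp T (t - \<tau>)) \<xi>0 + oc T S \<tau> t hz"
definition "Gb = c0 * norm \<xi>0 + c0 * (\<integral>s. hb s \<partial>lborel)"
definition "gz t = indicator {\<tau>..T} t *\<^sub>R gc t"
definition "solc t = gc t - oc T R \<tau> t gz"

lemma fzz_meas[measurable]: "fzz \<in> borel_measurable lborel" unfolding fzz_def[abs_def] by measurable
lemma fzz_bound: "norm (fzz s) \<le> indicator {\<tau>..T} s * Fb"
  using fz_bound[of s] by (simp add: fzz_def indicator_def)
lemma fzzb_int: "integrable lborel (\<lambda>s. indicator {\<tau>..T} s * Fb)"
  by (rule integrable_mult_left, rule integrable_real_indicator) (auto simp: emeasure_lborel_Icc_eq)

lemma hz_meas[measurable]: "hz \<in> borel_measurable lborel" unfolding hz_def[abs_def] by measurable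
lemma hb_int: "integrable lborel hb"
  unfolding hb_def[abs_def] by (intro Bochner_Integration.integrable_add fzzb_int Buz_int)
lemma hz_bound: "norm (hz s) \<le> hb s"
  unfolding hz_def hb_def using fzz_bound[of s] Buz_bound[of s] norm_triangle_ineq[of "fzz s" "Buz s"] by linarith

lemma gc_meas[measurable]: "gc \<in> borel_measurable lborel"
proof -
  have "(\<lambda>t. S (clmp T (t - \<tau>)) \<xi>0) \<in> borel_measurable lborel" by measurable
  moreover have "(\<lambda>t. oc T S \<tau> t hz) \<in> borel_measurable lborel"
    by (rule oc_meas[OF S_good T0 c0_nonneg hz_meas])
  ultimately show ?thesis unfolding gc_def[abs_def] by measurable
qed

lemma gc_bound: "norm (gc t) \<le> Gb"
proof -
  have "norm (gc t) \<le> norm (S (clmp T (t - \<tau>)) \<xi>0) + norm (oc T S \<tau> t hz)"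
    unfolding gc_def by (rule norm_triangle_ineq)
  also have "norm (S (clmp T (t - \<tau>)) \<xi>0) \<le> c0 * norm \<xi>0" by (rule S_bound[OF clamp_in[OF T0]])
  also have "norm (oc T S \<tau> t hz) \<le> c0 * (\<integral>s. hb s \<partial>lborel)"
    by (rule oc_bound[OF S_good T0 c0_nonneg hb_int hz_bound])
  finally show ?thesis by (simp add: Gb_def)
qed

lemma Gb_nonneg: "0 \<le> Gb" using gc_bound[of 0] norm_ge_zero order_trans by blast

lemma gz_meas[measurable]: "gz \<in> borel_measurable lborel" unfolding gz_def[abs_def] by measurable
lemma gz_bound: "norm (gz t) \<le> indicator {\<tau>..T} t * Gb"
  using gc_bound[of t] by (simp add: gz_def indicator_def)
lemma gzb_int: "integrable lborel (\<lambda>t. indicator {\<tau>..T} t * Gb)"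
  by (rule integrable_mult_left, rule integrable_real_indicator) (auto simp: emeasure_lborel_Icc_eq)

lemma solc_meas[measurable]: "solc \<in> borel_measurable lborel"
proof -
  have "(\<lambda>t. oc T R \<tau> t gz) \<in> borel_measurable lborel"
    by (rule oc_meas[OF Rres_good T0 Eb_nonneg gz_meas])
  thus ?thesis unfolding solc_def[abs_def] by measurable
qed

definition "Sb = Gb + Eb * (\<integral>t. indicator {\<tau>..T} t * Gb \<partial>lborel)"

lemma solc_bound: "norm (solc t) \<le> Sb"
proof -
  have "norm (solc t) \<le> norm (gc t) + norm (oc T R \<tau> t gz)"
    unfolding solc_def by (rule norm_triangle_ineq4)
  also have "norm (oc T R \<tau> t gz) \<le> Eb * (\<integral>t. indicator {\<tau>..T} t * Gb \<partial>lborel)"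
    by (rule oc_bound[OF Rres_good T0 Eb_nonneg gzb_int gz_bound])
  finally show ?thesis using gc_bound[of t] by (simp add: Sb_def)
qed

lemma A1: assumes t: "t \<in> {\<tau>..T}"
  shows "Fop S R t \<tau> \<xi>0 = S (clmp T (t - \<tau>)) \<xi>0 - oc T R \<tau> t (\<lambda>r. indicator {\<tau>..T} r *\<^sub>R S (clmp T (r - \<tau>)) \<xi>0)"
proof -
  have "set_lebesgue_integral lborel {\<tau>..t} (\<lambda>s. R (t - s) (S (s - \<tau>) \<xi>0)) = oc T R \<tau> t (\<lambda>r. indicator {\<tau>..T} r *\<^sub>R S (clmp T (r - \<tau>)) \<xi>0)"
    unfolding set_lebesgue_integral_def oc_def
    by (rule Bochner_Integration.integral_cong) (use t tau in \<open>auto simp: indicator_def\<close>)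
  thus ?thesis unfolding Fop_def using t tau by auto
qed

end

context mildctx begin

lemma R_meas[measurable]:
  "a \<in> borel_measurable M \<Longrightarrow> b \<in> borel_measurable M \<Longrightarrow> (\<lambda>w. R (clmp T (a w)) (b w)) \<in> borel_measurable M"
  using good_meas[OF Rres_good T0] by auto

lemma mu_meas2[measurable]:
  "a \<in> borel_measurable M \<Longrightarrow> b \<in> borel_measurable M \<Longrightarrow> (\<lambda>w. mu S K (clmp T (a w)) (b w)) \<in> borel_measurable M"
  using good_meas[OF mu_good T0] by auto

lemma A3: assumes t: "t \<in> {\<tau>..T}"
  shows "set_lebesgue_integral lborel {\<tau>..t} (\<lambda>s. Fop S R t s (B (u s)))
       = oc T S \<tau> t Buz - oc T R \<tau> t (\<lambda>r. indicator {\<tau>..T} r *\<^sub>R oc T S \<tau> r Buz)"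
proof -
  define Inner where "Inner s = (\<integral>r. indicator {s..t} r *\<^sub>R R (clmp T (t - r)) (S (clmp T (r - s)) (Buz s)) \<partial>lborel)" for s
  have pt: "Fop S R t s (B (u s)) = S (clmp T (t - s)) (Buz s) - Inner s" if s: "s \<in> {\<tau>..t}" for s
  proof -
    have "set_lebesgue_integral lborel {s..t} (\<lambda>r. R (t - r) (S (r - s) (B (u s)))) = Inner s"
      unfolding set_lebesgue_integral_def Inner_def
      by (rule Bochner_Integration.integral_cong) (use s t tau in \<open>auto simp: indicator_def Buz_def uz_def\<close>)
    thus ?thesis unfolding Fop_def using s t tau by (auto simp: Buz_def uz_def)
  qed
  have step1: "set_lebesgue_integral lborel {\<tau>..t} (\<lambda>s. Fop S R t s (B (u s)))
      = (\<integral>s. indicator {\<tau>..t} s *\<^sub>R S (clmp T (t - s)) (Buz s) - indicator {\<tau>..t} s *\<^sub>R Inner s \<partial>lborel)"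
    unfolding set_lebesgue_integral_def
    by (rule Bochner_Integration.integral_cong) (auto simp: pt indicator_def scaleR_diff_right)
  have mIn2: "(\<lambda>z. indicator {fst z..t} (snd z) *\<^sub>R R (clmp T (t - snd z)) (S (clmp T (snd z - fst z)) (Buz (fst z)))) \<in> borel_measurable (lborel \<Otimes>\<^sub>M lborel)"
    by measurable
  have mIn: "Inner \<in> borel_measurable lborel"
    using lborel.borel_measurable_lebesgue_integral[of "\<lambda>s r. indicator {s..t} r *\<^sub>R R (clmp T (t - r)) (S (clmp T (r - s)) (Buz s))" lborel] mIn2
    by (simp add: Inner_def[abs_def] case_prod_beta')
  have Inb: "norm (indicator {\<tau>..t} s *\<^sub>R Inner s) \<le> T * Eb * c0 * (nB * norm (uz s))" for s
  proof (cases "s \<in> {\<tau>..t}")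
    case True
    have "norm (Inner s) \<le> (t - s) * (Eb * (c0 * (nB * norm (uz s))))"
      unfolding Inner_def
    proof (rule norm_set_integral_const_bound)
      show "s \<le> t" using True by auto
      fix r assume r: "r \<in> {s..t}"
      have "norm (R (clmp T (t - r)) (S (clmp T (r - s)) (Buz s))) \<le> Eb * norm (S (clmp T (r - s)) (Buz s))"
        by (rule good_bound[OF Rres_good clamp_in[OF T0]])
      also have "\<dots> \<le> Eb * (c0 * norm (Buz s))"
        by (rule mult_left_mono[OF S_bound[OF clamp_in[OF T0]] Eb_nonneg])
      also have "\<dots> \<le> Eb * (c0 * (nB * norm (uz s)))"
        by (intro mult_left_mono Buz_bound Eb_nonneg c0_nonneg)
      finally show "norm (R (clmp T (t - r)) (S (clmp T (r - s)) (Buz s))) \<le> Eb * (c0 * (nB * norm (uz s)))" .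
    qed
    also have "\<dots> \<le> T * (Eb * (c0 * (nB * norm (uz s))))"
      using True tau t by (intro mult_right_mono) (auto intro!: mult_nonneg_nonneg Eb_nonneg c0_nonneg nB_nonneg)
    finally show ?thesis using True by (simp add: ac_simps)
  next
    case False
    thus ?thesis using Tpos by (auto intro!: mult_nonneg_nonneg Eb_nonneg c0_nonneg nB_nonneg)
  qed
  have I2: "integrable lborel (\<lambda>s. indicator {\<tau>..t} s *\<^sub>R Inner s)"
  proof (rule Bochner_Integration.integrable_bound)
    show "integrable lborel (\<lambda>s. T * Eb * c0 * (nB * norm (uz s)))" using Buz_int by simp
    show "(\<lambda>s. indicator {\<tau>..t} s *\<^sub>R Inner s) \<in> borel_measurable lborel" using mIn by measurable
    show "AE s in lborel. norm (indicator {\<tau>..t} s *\<^sub>R Inner s) \<le> norm (T * Eb * c0 * (nB * norm (uz s)))"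
    proof (rule AE_I2)
      fix s show "norm (indicator {\<tau>..t} s *\<^sub>R Inner s) \<le> norm (T * Eb * c0 * (nB * norm (uz s)))"
        using Inb[of s] by (rule order_trans) simp
    qed
  qed
  have I1: "integrable lborel (\<lambda>s. indicator {\<tau>..t} s *\<^sub>R S (clmp T (t - s)) (Buz s))"
    by (rule oc_integrable[OF S_good T0 c0_nonneg Buz_meas Buz_int Buz_bound])
  have step2: "set_lebesgue_integral lborel {\<tau>..t} (\<lambda>s. Fop S R t s (B (u s)))
      = oc T S \<tau> t Buz - (\<integral>s. indicator {\<tau>..t} s *\<^sub>R Inner s \<partial>lborel)"
    unfolding step1 Bochner_Integration.integral_diff[OF I1 I2] oc_def ..
  define \<Phi> where "\<Phi> r s = (indicator {\<tau>..T} r * indicator {\<tau>..r} s) *\<^sub>R S (clmp T (r - s)) (Buz s)" for r s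
  have m\<Phi>: "(\<lambda>z. \<Phi> (fst z) (snd z)) \<in> borel_measurable (lborel \<Otimes>\<^sub>M lborel)"
    unfolding \<Phi>_def by measurable
  have k: "integrable lborel (\<lambda>q. indicator {0..T} q * c0)"
    by (rule integrable_mult_left, rule integrable_real_indicator) (auto simp: emeasure_lborel_Icc_eq)
  have \<Phi>b: "norm (\<Phi> r s) \<le> (indicator {0..T} (r - s) * c0) * (nB * norm (uz s))" for r s
  proof (cases "r \<in> {\<tau>..T} \<and> s \<in> {\<tau>..r}")
    case True
    hence "r - s \<in> {0..T}" using tau by auto
    moreover have "norm (S (clmp T (r - s)) (Buz s)) \<le> c0 * (nB * norm (uz s))"
      by (rule order_trans[OF S_bound[OF clamp_in[OF T0]] mult_left_mono[OF Buz_bound c0_nonneg]])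
    ultimately show ?thesis using True by (simp add: \<Phi>_def indicator_def)
  next
    case False
    thus ?thesis by (auto simp: \<Phi>_def indicator_def intro!: mult_nonneg_nonneg c0_nonneg nB_nonneg)
  qed
  have eq1: "oc T R \<tau> t (\<lambda>r. indicator {\<tau>..T} r *\<^sub>R oc T S \<tau> r Buz)
      = (\<integral>r. indicator {\<tau>..t} r *\<^sub>R R (clmp T (t - r)) (\<integral>s. \<Phi> r s \<partial>lborel) \<partial>lborel)"
    unfolding oc_def \<Phi>_def by (simp add: scaleR_scaleR[symmetric] del: scaleR_scaleR)
  also have "\<dots> = (\<integral>s. \<integral>r. indicator {\<tau>..t} r *\<^sub>R R (clmp T (t - r)) (\<Phi> r s) \<partial>lborel \<partial>lborel)"
    by (rule op_fubini[OF Rres_good T0 Eb_nonneg m\<Phi> k Buz_int \<Phi>b])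
  also have "\<dots> = (\<integral>s. indicator {\<tau>..t} s *\<^sub>R Inner s \<partial>lborel)"
  proof (rule Bochner_Integration.integral_cong[OF refl])
    fix s
    have "indicator {\<tau>..t} s *\<^sub>R Inner s = (\<integral>r. indicator {\<tau>..t} s *\<^sub>R (indicator {s..t} r *\<^sub>R R (clmp T (t - r)) (S (clmp T (r - s)) (Buz s))) \<partial>lborel)"
      unfolding Inner_def by (rule integral_scaleR_right[symmetric])
    also have "\<dots> = (\<integral>r. indicator {\<tau>..t} r *\<^sub>R R (clmp T (t - r)) (\<Phi> r s) \<partial>lborel)"
      by (rule Bochner_Integration.integral_cong[OF refl])
         (use t in \<open>auto simp: \<Phi>_def indicator_def good_scale[OF Rres_good clamp_in[OF T0]]\<close>)
    finally show "(\<integral>r. indicator {\<tau>..t} r *\<^sub>R R (clmp T (t - r)) (\<Phi> r s) \<partial>lborel) = indicator {\<tau>..t} s *\<^sub>R Inner s" ..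
  qed
  finally show ?thesis using step2 by simp
qed

end

context mildctx begin

definition "Gc s \<sigma> y = mu S K (clmp T (s - \<sigma>)) y - S (clmp T (s - \<tau>)) (mu S K (clmp T (\<tau> - \<sigma>)) y)"
definition "CG = kk + c0 * kk"

lemma CG_nonneg: "0 \<le> CG" unfolding CG_def using kk_nonneg c0_nonneg by simp

lemma Gc_bound: "norm (Gc s \<sigma> y) \<le> CG * norm y"
proof -
  have "norm (Gc s \<sigma> y) \<le> norm (mu S K (clmp T (s - \<sigma>)) y) + norm (S (clmp T (s - \<tau>)) (mu S K (clmp T (\<tau> - \<sigma>)) y))"
    unfolding Gc_def by (rule norm_triangle_ineq4)
  also have "norm (mu S K (clmp T (s - \<sigma>)) y) \<le> kk * norm y" by (rule mu_bound[OF clamp_in[OF T0]])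
  also have "norm (S (clmp T (s - \<tau>)) (mu S K (clmp T (\<tau> - \<sigma>)) y)) \<le> c0 * (kk * norm y)"
    by (rule order_trans[OF S_bound[OF clamp_in[OF T0]] mult_left_mono[OF mu_bound[OF clamp_in[OF T0]] c0_nonneg]])
  finally show ?thesis by (simp add: CG_def algebra_simps)
qed

lemma Gc_meas[measurable]:
  assumes [measurable]: "a \<in> borel_measurable M" "b \<in> borel_measurable M" "c \<in> borel_measurable M"
  shows "(\<lambda>w. Gc (a w) (b w) (c w)) \<in> borel_measurable M"
proof -
  have m1: "(\<lambda>x. mu S K (clmp T (\<tau> - b x)) (c x)) \<in> borel_measurable M" by measurable
  have m2: "(\<lambda>x. S (clmp T (a x - \<tau>)) (mu S K (clmp T (\<tau> - b x)) (c x))) \<in> borel_measurable M"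
    by (rule S_meas[OF _ m1]) measurable
  have m3: "(\<lambda>x. mu S K (clmp T (a x - b x)) (c x)) \<in> borel_measurable M" by measurable
  show ?thesis unfolding Gc_def using m2 m3 by measurable
qed

lemma K0S_int: "integrable lborel (\<lambda>r. (indicator {c..d} r * K0 (r - \<sigma>)) *\<^sub>R S (clmp T (a - r)) y)"
proof (rule Bochner_Integration.integrable_bound)
  show "integrable lborel (\<lambda>r. \<bar>K0 (r - \<sigma>)\<bar> * (c0 * norm y))"
    using shift_integrable(1)[OF absK0_int, of \<sigma>] by simp
  show "(\<lambda>r. (indicator {c..d} r * K0 (r - \<sigma>)) *\<^sub>R S (clmp T (a - r)) y) \<in> borel_measurable lborel" by measurable
  show "AE r in lborel. norm ((indicator {c..d} r * K0 (r - \<sigma>)) *\<^sub>R S (clmp T (a - r)) y) \<le> norm (\<bar>K0 (r - \<sigma>)\<bar> * (c0 * norm y))"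
  proof (rule AE_I2)
    fix r
    have "indicator {c..d} r * \<bar>K0 (r - \<sigma>)\<bar> * norm (S (clmp T (a - r)) y) \<le> 1 * \<bar>K0 (r - \<sigma>)\<bar> * (c0 * norm y)"
      by (intro mult_mono S_bound[OF clamp_in[OF T0]]) (auto simp: indicator_def)
    thus "norm ((indicator {c..d} r * K0 (r - \<sigma>)) *\<^sub>R S (clmp T (a - r)) y) \<le> norm (\<bar>K0 (r - \<sigma>)\<bar> * (c0 * norm y))"
      using c0_nonneg by (simp add: abs_mult)
  qed
qed

lemma mu_shift:
  assumes "\<sigma> \<le> t" "t - \<sigma> \<le> T"
  shows "mu S K (t - \<sigma>) y = (\<integral>r. (indicator {\<sigma>..t} r * K0 (r - \<sigma>)) *\<^sub>R S (clmp T (t - r)) y \<partial>lborel)"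
proof -
  have "mu S K (t - \<sigma>) y = (\<integral>q. (indicator {0..t - \<sigma>} q * K0 q) *\<^sub>R S (clmp T (t - \<sigma> - q)) y \<partial>lborel)"
    using mu_rep[of "t - \<sigma>" y] assms by simp
  also have "\<dots> = (\<integral>r. (indicator {0..t - \<sigma>} (r - \<sigma>) * K0 (r - \<sigma>)) *\<^sub>R S (clmp T (t - \<sigma> - (r - \<sigma>))) y \<partial>lborel)"
    by (rule shift_integral)
  also have "\<dots> = (\<integral>r. (indicator {\<sigma>..t} r * K0 (r - \<sigma>)) *\<^sub>R S (clmp T (t - r)) y \<partial>lborel)"
    by (rule Bochner_Integration.integral_cong) (auto simp: indicator_def)
  finally show ?thesis .
qed

lemma G_ident:
  assumes \<sigma>: "\<sigma> \<in> {0..\<tau>}" and s: "s \<in> {\<tau>..T}"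
  shows "(\<integral>r. (indicator {\<tau>..s} r * K0 (r - \<sigma>)) *\<^sub>R S (clmp T (s - r)) y \<partial>lborel) = Gc s \<sigma> y"
proof -
  define Af where "Af r = (indicator {\<sigma>..s} r * K0 (r - \<sigma>)) *\<^sub>R S (clmp T (s - r)) y" for r
  define Bf where "Bf r = (indicator {\<sigma>..\<tau>} r * K0 (r - \<sigma>)) *\<^sub>R S (clmp T (s - r)) y" for r
  define Cf where "Cf r = (indicator {\<tau>..s} r * K0 (r - \<sigma>)) *\<^sub>R S (clmp T (s - r)) y" for r
  define Df where "Df r = (indicator {\<sigma>..\<tau>} r * K0 (r - \<sigma>)) *\<^sub>R S (clmp T (\<tau> - r)) y" for r
  have c1: "clmp T (s - \<sigma>) = s - \<sigma>" "clmp T (s - \<tau>) = s - \<tau>" "clmp T (\<tau> - \<sigma>) = \<tau> - \<sigma>"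
    using \<sigma> s tau by auto
  have muA: "mu S K (s - \<sigma>) y = integral\<^sup>L lborel Af"
    unfolding Af_def[abs_def] by (rule mu_shift) (use \<sigma> s tau in auto)
  have muD: "mu S K (\<tau> - \<sigma>) y = integral\<^sup>L lborel Df"
    unfolding Df_def[abs_def] by (rule mu_shift) (use \<sigma> s tau in auto)
  have SD: "S (s - \<tau>) (integral\<^sup>L lborel Df) = integral\<^sup>L lborel Bf"
  proof -
    have "S (s - \<tau>) (integral\<^sup>L lborel Df) = (\<integral>r. S (s - \<tau>) (Df r) \<partial>lborel)"
      by (rule integral_bounded_linear[symmetric, OF S_bl]) (use s in \<open>auto simp: Df_def[abs_def] intro: K0S_int\<close>)
    also have "\<dots> = integral\<^sup>L lborel Bf"
    proof (rule Bochner_Integration.integral_cong[OF refl])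
      fix r
      show "S (s - \<tau>) (Df r) = Bf r"
      proof (cases "r \<in> {\<sigma>..\<tau>}")
        case True
        have "S (s - \<tau>) (S (\<tau> - r) y) = S (s - r) y" using S_add[of "s - \<tau>" "\<tau> - r" y] True s by auto
        moreover have "clmp T (\<tau> - r) = \<tau> - r" "clmp T (s - r) = s - r" using True \<sigma> s tau by auto
        moreover have "s - \<tau> \<in> {0..T}" using s tau by auto
        ultimately show ?thesis using True s
          by (simp add: Df_def Bf_def good_scale[OF S_good \<open>s - \<tau> \<in> {0..T}\<close>] indicator_def)
      next
        case False
        moreover have "s - \<tau> \<in> {0..T}" using s tau by auto
        moreover have "indicator {\<sigma>..\<tau>} r = (0::real)" using False by simp
        ultimately show ?thesis by (simp add: Df_def Bf_def good_zero[OF S_good \<open>s - \<tau> \<in> {0..T}\<close>])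
      qed
    qed
    finally show ?thesis .
  qed
  have ABC: "integral\<^sup>L lborel Af = integral\<^sup>L lborel Bf + integral\<^sup>L lborel Cf"
  proof -
    have "integral\<^sup>L lborel Af = (\<integral>r. Bf r + Cf r \<partial>lborel)"
    proof (rule integral_cong_AE)
      show "Af \<in> borel_measurable lborel" unfolding Af_def[abs_def] by measurable
      show "(\<lambda>r. Bf r + Cf r) \<in> borel_measurable lborel" unfolding Bf_def[abs_def] Cf_def[abs_def] by measurable
      show "AE r in lborel. Af r = Bf r + Cf r"
        using AE_lborel_singleton[of \<tau>]
      proof eventually_elim
        case (elim r)
        have "indicator {\<sigma>..s} r = (indicator {\<sigma>..\<tau>} r + indicator {\<tau>..s} r :: real)"
          using elim \<sigma> s by (auto simp: indicator_def)
        thus ?case by (simp add: Af_def Bf_def Cf_def algebra_simps scaleR_add_left)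
      qed
    qed
    also have "\<dots> = integral\<^sup>L lborel Bf + integral\<^sup>L lborel Cf"
      by (rule Bochner_Integration.integral_add) (auto simp: Bf_def[abs_def] Cf_def[abs_def] intro: K0S_int)
    finally show ?thesis .
  qed
  have "Gc s \<sigma> y = integral\<^sup>L lborel Af - integral\<^sup>L lborel Bf"
    unfolding Gc_def c1 muA muD SD ..
  also have "\<dots> = integral\<^sup>L lborel Cf" using ABC by simp
  finally show ?thesis by (simp add: Cf_def[abs_def])
qed

end

context mildctx begin

lemma Gid: assumes s: "s \<in> {\<tau>..T}"
  shows "(\<integral>\<sigma>. indicator {0..\<tau>} \<sigma> *\<^sub>R Gc s \<sigma> (\<xi>z \<sigma>) \<partial>lborel) = oc T S \<tau> s fzz"
proof -
  define \<Psi> where "\<Psi> r \<sigma> = indicator {\<tau>..T} r *\<^sub>R (K0 (r - \<sigma>) *\<^sub>R \<xi>z \<sigma>)" for r \<sigma>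
  have m\<Psi>: "(\<lambda>z. \<Psi> (fst z) (snd z)) \<in> borel_measurable (lborel \<Otimes>\<^sub>M lborel)"
    unfolding \<Psi>_def by measurable
  have \<Psi>b: "norm (\<Psi> r \<sigma>) \<le> \<bar>K0 (r - \<sigma>)\<bar> * norm (\<xi>z \<sigma>)" for r \<sigma>
    by (simp add: \<Psi>_def indicator_def)
  have "oc T S \<tau> s fzz = (\<integral>r. indicator {\<tau>..s} r *\<^sub>R S (clmp T (s - r)) (\<integral>\<sigma>. \<Psi> r \<sigma> \<partial>lborel) \<partial>lborel)"
    unfolding oc_def fzz_def fz_def \<Psi>_def by (simp add: scaleR_scaleR[symmetric] del: scaleR_scaleR)
  also have "\<dots> = (\<integral>\<sigma>. \<integral>r. indicator {\<tau>..s} r *\<^sub>R S (clmp T (s - r)) (\<Psi> r \<sigma>) \<partial>lborel \<partial>lborel)"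
    by (rule op_fubini[OF S_good T0 c0_nonneg m\<Psi> absK0_int xiz_int \<Psi>b])
  also have "\<dots> = (\<integral>\<sigma>. indicator {0..\<tau>} \<sigma> *\<^sub>R Gc s \<sigma> (\<xi>z \<sigma>) \<partial>lborel)"
  proof (rule Bochner_Integration.integral_cong[OF refl])
    fix \<sigma>
    show "(\<integral>r. indicator {\<tau>..s} r *\<^sub>R S (clmp T (s - r)) (\<Psi> r \<sigma>) \<partial>lborel) = indicator {0..\<tau>} \<sigma> *\<^sub>R Gc s \<sigma> (\<xi>z \<sigma>)"
    proof (cases "\<sigma> \<in> {0..\<tau>}")
      case True
      have "(\<integral>r. indicator {\<tau>..s} r *\<^sub>R S (clmp T (s - r)) (\<Psi> r \<sigma>) \<partial>lborel)
          = (\<integral>r. (indicator {\<tau>..s} r * K0 (r - \<sigma>)) *\<^sub>R S (clmp T (s - r)) (\<xi>z \<sigma>) \<partial>lborel)"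
        by (rule Bochner_Integration.integral_cong[OF refl])
           (use s in \<open>auto simp: \<Psi>_def indicator_def good_scale[OF S_good clamp_in[OF T0]]\<close>)
      also have "\<dots> = Gc s \<sigma> (\<xi>z \<sigma>)" by (rule G_ident[OF True s])
      finally show ?thesis using True by simp
    next
      case False
      hence "\<xi>z \<sigma> = 0" by (simp add: \<xi>z_def)
      thus ?thesis using False by (simp add: \<Psi>_def good_zero[OF S_good clamp_in[OF T0]])
    qed
  qed
  finally show ?thesis ..
qed

lemma Gop_Gc: assumes "\<sigma> \<in> {0..\<tau>}" "s \<in> {\<tau>..T}" shows "Gop S K s \<sigma> \<tau> x = Gc s \<sigma> x"
proof -
  have "clmp T (s - \<sigma>) = s - \<sigma>" "clmp T (s - \<tau>) = s - \<tau>" "clmp T (\<tau> - \<sigma>) = \<tau> - \<sigma>"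
    using assms tau by auto
  thus ?thesis by (simp add: Gop_def Gc_def)
qed

lemma A2: assumes t: "t \<in> {\<tau>..T}"
  shows "set_lebesgue_integral lborel {0..\<tau>} (\<lambda>\<sigma>. Mop S K R t \<sigma> \<tau> (\<xi> \<sigma>))
       = oc T S \<tau> t fzz - oc T R \<tau> t (\<lambda>r. indicator {\<tau>..T} r *\<^sub>R oc T S \<tau> r fzz)"
proof -
  define J where "J \<sigma> = (\<integral>s. indicator {\<tau>..t} s *\<^sub>R R (clmp T (t - s)) (Gc s \<sigma> (\<xi>z \<sigma>)) \<partial>lborel)" for \<sigma>
  have pt: "Mop S K R t \<sigma> \<tau> (\<xi> \<sigma>) = Gc t \<sigma> (\<xi>z \<sigma>) - J \<sigma>" if \<sigma>: "\<sigma> \<in> {0..\<tau>}" for \<sigma>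
  proof -
    have xe: "\<xi>z \<sigma> = \<xi> \<sigma>" using \<sigma> by (simp add: \<xi>z_def)
    have "set_lebesgue_integral lborel {\<tau>..t} (\<lambda>s. R (t - s) (Gop S K s \<sigma> \<tau> (\<xi> \<sigma>))) = J \<sigma>"
      unfolding set_lebesgue_integral_def J_def
      by (rule Bochner_Integration.integral_cong[OF refl]) (use t \<sigma> tau in \<open>auto simp: indicator_def xe Gop_Gc\<close>)
    thus ?thesis unfolding Mop_def using Gop_Gc[OF \<sigma> t] xe by simp
  qed
  have step1: "set_lebesgue_integral lborel {0..\<tau>} (\<lambda>\<sigma>. Mop S K R t \<sigma> \<tau> (\<xi> \<sigma>))
      = (\<integral>\<sigma>. indicator {0..\<tau>} \<sigma> *\<^sub>R Gc t \<sigma> (\<xi>z \<sigma>) - indicator {0..\<tau>} \<sigma> *\<^sub>R J \<sigma> \<partial>lborel)"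
    unfolding set_lebesgue_integral_def
    by (rule Bochner_Integration.integral_cong) (auto simp: pt indicator_def)
  have I1: "integrable lborel (\<lambda>\<sigma>. indicator {0..\<tau>} \<sigma> *\<^sub>R Gc t \<sigma> (\<xi>z \<sigma>))"
  proof (rule Bochner_Integration.integrable_bound)
    show "integrable lborel (\<lambda>\<sigma>. CG * norm (\<xi>z \<sigma>))" using xiz_int by simp
    show "(\<lambda>\<sigma>. indicator {0..\<tau>} \<sigma> *\<^sub>R Gc t \<sigma> (\<xi>z \<sigma>)) \<in> borel_measurable lborel" by measurable
    show "AE \<sigma> in lborel. norm (indicator {0..\<tau>} \<sigma> *\<^sub>R Gc t \<sigma> (\<xi>z \<sigma>)) \<le> norm (CG * norm (\<xi>z \<sigma>))"
    proof (rule AE_I2)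
      fix \<sigma>
      have "norm (indicator {0..\<tau>} \<sigma> *\<^sub>R Gc t \<sigma> (\<xi>z \<sigma>)) \<le> norm (Gc t \<sigma> (\<xi>z \<sigma>))" by (simp add: indicator_def)
      also have "\<dots> \<le> CG * norm (\<xi>z \<sigma>)" by (rule Gc_bound)
      finally show "norm (indicator {0..\<tau>} \<sigma> *\<^sub>R Gc t \<sigma> (\<xi>z \<sigma>)) \<le> norm (CG * norm (\<xi>z \<sigma>))" by simp
    qed
  qed
  have mJ2: "(\<lambda>z. indicator {\<tau>..t} (snd z) *\<^sub>R R (clmp T (t - snd z)) (Gc (snd z) (fst z) (\<xi>z (fst z)))) \<in> borel_measurable (lborel \<Otimes>\<^sub>M lborel)"
  proof -
    have "(\<lambda>z. Gc (snd z) (fst z) (\<xi>z (fst z))) \<in> borel_measurable (lborel \<Otimes>\<^sub>M lborel)" by measurable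
    hence "(\<lambda>z. R (clmp T (t - snd z)) (Gc (snd z) (fst z) (\<xi>z (fst z)))) \<in> borel_measurable (lborel \<Otimes>\<^sub>M lborel)"
      by (rule R_meas[rotated]) measurable
    thus ?thesis by measurable
  qed
  have mJ: "J \<in> borel_measurable lborel"
    using lborel.borel_measurable_lebesgue_integral[of "\<lambda>\<sigma> s. indicator {\<tau>..t} s *\<^sub>R R (clmp T (t - s)) (Gc s \<sigma> (\<xi>z \<sigma>))" lborel] mJ2
    by (simp add: J_def[abs_def] case_prod_beta')
  have Jb: "norm (J \<sigma>) \<le> T * Eb * CG * norm (\<xi>z \<sigma>)" for \<sigma>
  proof -
    have "norm (J \<sigma>) \<le> (t - \<tau>) * (Eb * (CG * norm (\<xi>z \<sigma>)))"
      unfolding J_def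
    proof (rule norm_set_integral_const_bound)
      show "\<tau> \<le> t" using t by auto
      fix s
      show "norm (R (clmp T (t - s)) (Gc s \<sigma> (\<xi>z \<sigma>))) \<le> Eb * (CG * norm (\<xi>z \<sigma>))"
        by (rule order_trans[OF good_bound[OF Rres_good clamp_in[OF T0]] mult_left_mono[OF Gc_bound Eb_nonneg]])
    qed
    also have "\<dots> \<le> T * (Eb * (CG * norm (\<xi>z \<sigma>)))"
      using t tau by (intro mult_right_mono) (auto intro!: mult_nonneg_nonneg Eb_nonneg CG_nonneg)
    finally show ?thesis by (simp add: ac_simps)
  qed
  have I2: "integrable lborel (\<lambda>\<sigma>. indicator {0..\<tau>} \<sigma> *\<^sub>R J \<sigma>)"
  proof (rule Bochner_Integration.integrable_bound)
    show "integrable lborel (\<lambda>\<sigma>. T * Eb * CG * norm (\<xi>z \<sigma>))" using xiz_int by simp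
    show "(\<lambda>\<sigma>. indicator {0..\<tau>} \<sigma> *\<^sub>R J \<sigma>) \<in> borel_measurable lborel" using mJ by measurable
    show "AE \<sigma> in lborel. norm (indicator {0..\<tau>} \<sigma> *\<^sub>R J \<sigma>) \<le> norm (T * Eb * CG * norm (\<xi>z \<sigma>))"
    proof (rule AE_I2)
      fix \<sigma>
      have "norm (indicator {0..\<tau>} \<sigma> *\<^sub>R J \<sigma>) \<le> norm (J \<sigma>)" by (simp add: indicator_def)
      also have "\<dots> \<le> T * Eb * CG * norm (\<xi>z \<sigma>)" by (rule Jb)
      finally show "norm (indicator {0..\<tau>} \<sigma> *\<^sub>R J \<sigma>) \<le> norm (T * Eb * CG * norm (\<xi>z \<sigma>))" by simp
    qed
  qed
  have step2: "set_lebesgue_integral lborel {0..\<tau>} (\<lambda>\<sigma>. Mop S K R t \<sigma> \<tau> (\<xi> \<sigma>))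
      = oc T S \<tau> t fzz - (\<integral>\<sigma>. indicator {0..\<tau>} \<sigma> *\<^sub>R J \<sigma> \<partial>lborel)"
    unfolding step1 Bochner_Integration.integral_diff[OF I1 I2] Gid[OF t] ..
  define \<Phi> where "\<Phi> s \<sigma> = (indicator {\<tau>..T} s * indicator {0..\<tau>} \<sigma>) *\<^sub>R Gc s \<sigma> (\<xi>z \<sigma>)" for s \<sigma>
  have m\<Phi>: "(\<lambda>z. \<Phi> (fst z) (snd z)) \<in> borel_measurable (lborel \<Otimes>\<^sub>M lborel)"
    unfolding \<Phi>_def by measurable
  have k: "integrable lborel (\<lambda>q. indicator {0..T} q * CG)"
    by (rule integrable_mult_left, rule integrable_real_indicator) (auto simp: emeasure_lborel_Icc_eq)
  have \<Phi>b: "norm (\<Phi> s \<sigma>) \<le> (indicator {0..T} (s - \<sigma>) * CG) * norm (\<xi>z \<sigma>)" for s \<sigma>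
  proof (cases "s \<in> {\<tau>..T} \<and> \<sigma> \<in> {0..\<tau>}")
    case True
    hence "s - \<sigma> \<in> {0..T}" using tau by auto
    thus ?thesis using True Gc_bound[of s \<sigma> "\<xi>z \<sigma>"] by (simp add: \<Phi>_def indicator_def)
  next
    case False
    thus ?thesis by (auto simp: \<Phi>_def indicator_def intro!: mult_nonneg_nonneg CG_nonneg)
  qed
  have inner: "(\<integral>\<sigma>. \<Phi> s \<sigma> \<partial>lborel) = indicator {\<tau>..T} s *\<^sub>R oc T S \<tau> s fzz" for s
  proof (cases "s \<in> {\<tau>..T}")
    case True
    have "(\<integral>\<sigma>. \<Phi> s \<sigma> \<partial>lborel) = indicator {\<tau>..T} s *\<^sub>R (\<integral>\<sigma>. indicator {0..\<tau>} \<sigma> *\<^sub>R Gc s \<sigma> (\<xi>z \<sigma>) \<partial>lborel)"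
      unfolding \<Phi>_def by (simp add: scaleR_scaleR[symmetric] del: scaleR_scaleR)
    thus ?thesis using Gid[OF True] by simp
  next
    case False thus ?thesis by (simp add: \<Phi>_def)
  qed
  have "oc T R \<tau> t (\<lambda>r. indicator {\<tau>..T} r *\<^sub>R oc T S \<tau> r fzz)
      = (\<integral>s. indicator {\<tau>..t} s *\<^sub>R R (clmp T (t - s)) (\<integral>\<sigma>. \<Phi> s \<sigma> \<partial>lborel) \<partial>lborel)"
    unfolding oc_def inner ..
  also have "\<dots> = (\<integral>\<sigma>. \<integral>s. indicator {\<tau>..t} s *\<^sub>R R (clmp T (t - s)) (\<Phi> s \<sigma>) \<partial>lborel \<partial>lborel)"
    by (rule op_fubini[OF Rres_good T0 Eb_nonneg m\<Phi> k xiz_int \<Phi>b])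
  also have "\<dots> = (\<integral>\<sigma>. indicator {0..\<tau>} \<sigma> *\<^sub>R J \<sigma> \<partial>lborel)"
  proof (rule Bochner_Integration.integral_cong[OF refl])
    fix \<sigma>
    have "indicator {0..\<tau>} \<sigma> *\<^sub>R J \<sigma> = (\<integral>s. indicator {0..\<tau>} \<sigma> *\<^sub>R (indicator {\<tau>..t} s *\<^sub>R R (clmp T (t - s)) (Gc s \<sigma> (\<xi>z \<sigma>))) \<partial>lborel)"
      unfolding J_def by (rule integral_scaleR_right[symmetric])
    also have "\<dots> = (\<integral>s. indicator {\<tau>..t} s *\<^sub>R R (clmp T (t - s)) (\<Phi> s \<sigma>) \<partial>lborel)"
      by (rule Bochner_Integration.integral_cong[OF refl])
         (use t in \<open>auto simp: \<Phi>_def indicator_def good_scale[OF Rres_good clamp_in[OF T0]]\<close>)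
    finally show "(\<integral>s. indicator {\<tau>..t} s *\<^sub>R R (clmp T (t - s)) (\<Phi> s \<sigma>) \<partial>lborel) = indicator {0..\<tau>} \<sigma> *\<^sub>R J \<sigma>" ..
  qed
  finally show ?thesis using step2 by simp
qed

end

context mildctx begin

lemma indb_int: "integrable lborel (\<lambda>r. indicator {\<tau>..T} r * (c::real))"
  by (rule integrable_mult_left, rule integrable_real_indicator) (auto simp: emeasure_lborel_Icc_eq)

lemma ocS_fzz_split: "oc T S \<tau> t hz = oc T S \<tau> t fzz + oc T S \<tau> t Buz"
  unfolding hz_def[abs_def]
  by (rule oc_add[OF S_good T0 c0_nonneg fzz_meas fzzb_int fzz_bound Buz_meas Buz_int Buz_bound])

lemma claimA: assumes t: "t \<in> {\<tau>..T}"
  shows "sol_formula S K R B \<tau> \<xi>0 \<xi> u t = solc t"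
proof -
  define g1 where "g1 r = indicator {\<tau>..T} r *\<^sub>R S (clmp T (r - \<tau>)) \<xi>0" for r
  define g2 where "g2 r = indicator {\<tau>..T} r *\<^sub>R oc T S \<tau> r fzz" for r
  define g3 where "g3 r = indicator {\<tau>..T} r *\<^sub>R oc T S \<tau> r Buz" for r
  have m1: "g1 \<in> borel_measurable lborel" unfolding g1_def[abs_def] by measurable
  have m2: "g2 \<in> borel_measurable lborel"
    using oc_meas[OF S_good T0 c0_nonneg fzz_meas] unfolding g2_def[abs_def] by measurable
  have m3: "g3 \<in> borel_measurable lborel"
    using oc_meas[OF S_good T0 c0_nonneg Buz_meas] unfolding g3_def[abs_def] by measurable
  have b1: "norm (g1 r) \<le> indicator {\<tau>..T} r * (c0 * norm \<xi>0)" for r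
    using S_bound[OF clamp_in[OF T0]] by (simp add: g1_def indicator_def)
  have b2: "norm (g2 r) \<le> indicator {\<tau>..T} r * (c0 * (\<integral>s. indicator {\<tau>..T} s * Fb \<partial>lborel))" for r
    using oc_bound[OF S_good T0 c0_nonneg fzzb_int fzz_bound] by (simp add: g2_def indicator_def)
  have b3: "norm (g3 r) \<le> indicator {\<tau>..T} r * (c0 * (\<integral>s. nB * norm (uz s) \<partial>lborel))" for r
    using oc_bound[OF S_good T0 c0_nonneg Buz_int Buz_bound] by (simp add: g3_def indicator_def)
  have b12: "norm (g1 r + g2 r) \<le> indicator {\<tau>..T} r * (c0 * norm \<xi>0) + indicator {\<tau>..T} r * (c0 * (\<integral>s. indicator {\<tau>..T} s * Fb \<partial>lborel))" for r
    using norm_triangle_ineq[of "g1 r" "g2 r"] b1[of r] b2[of r] by linarith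
  have gz_eq: "gz = (\<lambda>r. (g1 r + g2 r) + g3 r)"
    by (rule ext) (simp add: gz_def gc_def g1_def g2_def g3_def ocS_fzz_split scaleR_add_right)
  have "oc T R \<tau> t gz = oc T R \<tau> t (\<lambda>r. g1 r + g2 r) + oc T R \<tau> t g3"
    unfolding gz_eq
    by (rule oc_add[OF Rres_good T0 Eb_nonneg _ _ b12 m3 indb_int b3])
       (use m1 m2 in \<open>auto intro!: Bochner_Integration.integrable_add indb_int\<close>)
  also have "oc T R \<tau> t (\<lambda>r. g1 r + g2 r) = oc T R \<tau> t g1 + oc T R \<tau> t g2"
    by (rule oc_add[OF Rres_good T0 Eb_nonneg m1 indb_int b1 m2 indb_int b2])
  finally have ocgz: "oc T R \<tau> t gz = oc T R \<tau> t g1 + oc T R \<tau> t g2 + oc T R \<tau> t g3" .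
  have "sol_formula S K R B \<tau> \<xi>0 \<xi> u t =
      (S (clmp T (t - \<tau>)) \<xi>0 - oc T R \<tau> t g1) + (oc T S \<tau> t fzz - oc T R \<tau> t g2) + (oc T S \<tau> t Buz - oc T R \<tau> t g3)"
    unfolding sol_formula_def A1[OF t] A2[OF t] A3[OF t] g1_def[abs_def] g2_def[abs_def] g3_def[abs_def] ..
  also have "\<dots> = solc t"
    unfolding solc_def gc_def ocgz ocS_fzz_split by (simp add: algebra_simps)
  finally show ?thesis .
qed

end

context mildctx begin

lemma F1:
  assumes w0m: "w0 \<in> borel_measurable lborel" and wb: "integrable lborel wb" and w0b: "\<And>s. norm (w0 s) \<le> wb s"
    and weq: "\<And>\<sigma>. \<sigma> \<in> {\<tau>..T} \<Longrightarrow> w \<sigma> = w0 \<sigma>" and t: "t \<in> {\<tau>..T}"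
  shows "set_lebesgue_integral lborel {\<tau>..t} (\<lambda>s. S (t - s) (set_lebesgue_integral lborel {\<tau>..s} (\<lambda>\<sigma>. K (s - \<sigma>) *\<^sub>R w \<sigma>)))
       = oc T (mu S K) \<tau> t w0"
proof -
  define \<Phi> where "\<Phi> s \<sigma> = (indicator {\<tau>..T} s * indicator {\<tau>..s} \<sigma> * K0 (s - \<sigma>)) *\<^sub>R w0 \<sigma>" for s \<sigma>
  have m\<Phi>: "(\<lambda>z. \<Phi> (fst z) (snd z)) \<in> borel_measurable (lborel \<Otimes>\<^sub>M lborel)"
    unfolding \<Phi>_def using w0m by measurable
  have \<Phi>b: "norm (\<Phi> s \<sigma>) \<le> \<bar>K0 (s - \<sigma>)\<bar> * wb \<sigma>" for s \<sigma>
  proof -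
    have "norm (\<Phi> s \<sigma>) \<le> 1 * \<bar>K0 (s - \<sigma>)\<bar> * norm (w0 \<sigma>)"
      unfolding \<Phi>_def by (simp add: abs_mult indicator_def)
    also have "\<dots> \<le> \<bar>K0 (s - \<sigma>)\<bar> * wb \<sigma>" using w0b[of \<sigma>] by (simp add: mult_left_mono)
    finally show ?thesis .
  qed
  have "set_lebesgue_integral lborel {\<tau>..t} (\<lambda>s. S (t - s) (set_lebesgue_integral lborel {\<tau>..s} (\<lambda>\<sigma>. K (s - \<sigma>) *\<^sub>R w \<sigma>)))
      = (\<integral>s. indicator {\<tau>..t} s *\<^sub>R S (clmp T (t - s)) (\<integral>\<sigma>. \<Phi> s \<sigma> \<partial>lborel) \<partial>lborel)"
    unfolding set_lebesgue_integral_def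
  proof (rule Bochner_Integration.integral_cong[OF refl])
    fix s
    show "indicator {\<tau>..t} s *\<^sub>R S (t - s) (\<integral>\<sigma>. indicator {\<tau>..s} \<sigma> *\<^sub>R (K (s - \<sigma>) *\<^sub>R w \<sigma>) \<partial>lborel) =
          indicator {\<tau>..t} s *\<^sub>R S (clmp T (t - s)) (\<integral>\<sigma>. \<Phi> s \<sigma> \<partial>lborel)"
    proof (cases "s \<in> {\<tau>..t}")
      case True
      have "(\<integral>\<sigma>. indicator {\<tau>..s} \<sigma> *\<^sub>R (K (s - \<sigma>) *\<^sub>R w \<sigma>) \<partial>lborel) = (\<integral>\<sigma>. \<Phi> s \<sigma> \<partial>lborel)"
        by (rule Bochner_Integration.integral_cong[OF refl])
           (use True t tau in \<open>auto simp: \<Phi>_def indicator_def K0_def weq\<close>)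
      moreover have "clmp T (t - s) = t - s" by (intro clamp_id) (use True t tau in auto)
      ultimately show ?thesis by simp
    qed simp
  qed
  also have "\<dots> = (\<integral>\<sigma>. \<integral>s. indicator {\<tau>..t} s *\<^sub>R S (clmp T (t - s)) (\<Phi> s \<sigma>) \<partial>lborel \<partial>lborel)"
    by (rule op_fubini[OF S_good T0 c0_nonneg m\<Phi> absK0_int wb \<Phi>b])
  also have "\<dots> = oc T (mu S K) \<tau> t w0"
    unfolding oc_def
  proof (rule Bochner_Integration.integral_cong[OF refl])
    fix \<sigma>
    show "(\<integral>s. indicator {\<tau>..t} s *\<^sub>R S (clmp T (t - s)) (\<Phi> s \<sigma>) \<partial>lborel) = indicator {\<tau>..t} \<sigma> *\<^sub>R mu S K (clmp T (t - \<sigma>)) (w0 \<sigma>)"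
    proof (cases "\<sigma> \<in> {\<tau>..t}")
      case True
      have "(\<integral>s. indicator {\<tau>..t} s *\<^sub>R S (clmp T (t - s)) (\<Phi> s \<sigma>) \<partial>lborel)
          = (\<integral>s. (indicator {\<sigma>..t} s * K0 (s - \<sigma>)) *\<^sub>R S (clmp T (t - s)) (w0 \<sigma>) \<partial>lborel)"
        by (rule Bochner_Integration.integral_cong[OF refl])
           (use True t in \<open>auto simp: \<Phi>_def indicator_def good_scale[OF S_good clamp_in[OF T0]]\<close>)
      also have "\<dots> = mu S K (t - \<sigma>) (w0 \<sigma>)" by (rule mu_shift[symmetric]) (use True t tau in auto)
      finally show ?thesis using True t tau by auto
    next
      case False
      have "(\<integral>s. indicator {\<tau>..t} s *\<^sub>R S (clmp T (t - s)) (\<Phi> s \<sigma>) \<partial>lborel) = (\<integral>s. (0::'h) \<partial>(lborel::real measure))"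
        by (rule Bochner_Integration.integral_cong[OF refl])
           (use False in \<open>auto simp: \<Phi>_def indicator_def good_zero[OF S_good clamp_in[OF T0]]\<close>)
      thus ?thesis using False by simp
    qed
  qed
  finally show ?thesis .
qed

lemma conv_shift:
  assumes "r \<le> t" "t - r \<le> T"
  shows "conv (mu S K) R (t - r) y = (\<integral>\<sigma>. indicator {r..t} \<sigma> *\<^sub>R mu S K (clmp T (t - \<sigma>)) (R (clmp T (\<sigma> - r)) y) \<partial>lborel)"
proof -
  have "conv (mu S K) R (t - r) y = (\<integral>q. indicator {0..t - r} q *\<^sub>R mu S K (clmp T (t - r - q)) (R (clmp T q) y) \<partial>lborel)"
    by (rule conv_rep[OF mu_good Rres_good T0 kk_nonneg Eb_nonneg]) (use assms in auto)
  also have "\<dots> = (\<integral>\<sigma>. indicator {0..t - r} (\<sigma> - r) *\<^sub>R mu S K (clmp T (t - r - (\<sigma> - r))) (R (clmp T (\<sigma> - r)) y) \<partial>lborel)"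
    by (rule shift_integral)
  also have "\<dots> = (\<integral>\<sigma>. indicator {r..t} \<sigma> *\<^sub>R mu S K (clmp T (t - \<sigma>)) (R (clmp T (\<sigma> - r)) y) \<partial>lborel)"
    by (rule Bochner_Integration.integral_cong) (auto simp: indicator_def)
  finally show ?thesis .
qed

lemma F4: assumes t: "t \<in> {\<tau>..T}"
  shows "oc T (mu S K) \<tau> t (\<lambda>\<sigma>. indicator {\<tau>..T} \<sigma> *\<^sub>R oc T R \<tau> \<sigma> gz)
       = (\<integral>r. indicator {\<tau>..t} r *\<^sub>R conv (mu S K) R (t - r) (gz r) \<partial>lborel)"
proof -
  define \<Phi> where "\<Phi> \<sigma> r = (indicator {\<tau>..T} \<sigma> * indicator {\<tau>..\<sigma>} r) *\<^sub>R R (clmp T (\<sigma> - r)) (gz r)" for \<sigma> r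
  have m\<Phi>: "(\<lambda>z. \<Phi> (fst z) (snd z)) \<in> borel_measurable (lborel \<Otimes>\<^sub>M lborel)"
    unfolding \<Phi>_def by measurable
  have k: "integrable lborel (\<lambda>q. indicator {0..T} q * Eb)"
    by (rule integrable_mult_left, rule integrable_real_indicator) (auto simp: emeasure_lborel_Icc_eq)
  have \<Phi>b: "norm (\<Phi> \<sigma> r) \<le> (indicator {0..T} (\<sigma> - r) * Eb) * (indicator {\<tau>..T} r * Gb)" for \<sigma> r
  proof (cases "\<sigma> \<in> {\<tau>..T} \<and> r \<in> {\<tau>..\<sigma>}")
    case True
    hence "\<sigma> - r \<in> {0..T}" using tau by auto
    moreover have "norm (R (clmp T (\<sigma> - r)) (gz r)) \<le> Eb * (indicator {\<tau>..T} r * Gb)"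
      by (rule order_trans[OF good_bound[OF Rres_good clamp_in[OF T0]] mult_left_mono[OF gz_bound Eb_nonneg]])
    ultimately show ?thesis using True by (simp add: \<Phi>_def indicator_def)
  next
    case False
    thus ?thesis by (auto simp: \<Phi>_def indicator_def intro!: mult_nonneg_nonneg Eb_nonneg Gb_nonneg)
  qed
  have "oc T (mu S K) \<tau> t (\<lambda>\<sigma>. indicator {\<tau>..T} \<sigma> *\<^sub>R oc T R \<tau> \<sigma> gz)
      = (\<integral>\<sigma>. indicator {\<tau>..t} \<sigma> *\<^sub>R mu S K (clmp T (t - \<sigma>)) (\<integral>r. \<Phi> \<sigma> r \<partial>lborel) \<partial>lborel)"
    unfolding oc_def \<Phi>_def by (simp add: scaleR_scaleR[symmetric] del: scaleR_scaleR)
  also have "\<dots> = (\<integral>r. \<integral>\<sigma>. indicator {\<tau>..t} \<sigma> *\<^sub>R mu S K (clmp T (t - \<sigma>)) (\<Phi> \<sigma> r) \<partial>lborel \<partial>lborel)"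
    by (rule op_fubini[OF mu_good T0 kk_nonneg m\<Phi> k gzb_int \<Phi>b])
  also have "\<dots> = (\<integral>r. indicator {\<tau>..t} r *\<^sub>R conv (mu S K) R (t - r) (gz r) \<partial>lborel)"
  proof (rule Bochner_Integration.integral_cong[OF refl])
    fix r
    show "(\<integral>\<sigma>. indicator {\<tau>..t} \<sigma> *\<^sub>R mu S K (clmp T (t - \<sigma>)) (\<Phi> \<sigma> r) \<partial>lborel) = indicator {\<tau>..t} r *\<^sub>R conv (mu S K) R (t - r) (gz r)"
    proof (cases "r \<in> {\<tau>..t}")
      case True
      have "(\<integral>\<sigma>. indicator {\<tau>..t} \<sigma> *\<^sub>R mu S K (clmp T (t - \<sigma>)) (\<Phi> \<sigma> r) \<partial>lborel)
          = (\<integral>\<sigma>. indicator {r..t} \<sigma> *\<^sub>R mu S K (clmp T (t - \<sigma>)) (R (clmp T (\<sigma> - r)) (gz r)) \<partial>lborel)"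
        by (rule Bochner_Integration.integral_cong[OF refl])
           (use True t in \<open>auto simp: \<Phi>_def indicator_def good_scale[OF mu_good clamp_in[OF T0]]\<close>)
      also have "\<dots> = conv (mu S K) R (t - r) (gz r)" by (rule conv_shift[symmetric]) (use True t tau in auto)
      finally show ?thesis using True by simp
    next
      case False
      have "(\<integral>\<sigma>. indicator {\<tau>..t} \<sigma> *\<^sub>R mu S K (clmp T (t - \<sigma>)) (\<Phi> \<sigma> r) \<partial>lborel) = (\<integral>\<sigma>. (0::'h) \<partial>(lborel::real measure))"
        by (rule Bochner_Integration.integral_cong[OF refl])
           (use False in \<open>auto simp: \<Phi>_def indicator_def good_zero[OF mu_good clamp_in[OF T0]]\<close>)
      thus ?thesis using False by simp
    qed
  qed
  finally show ?thesis .
qed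

end

context mildctx begin

abbreviation "sol \<equiv> sol_formula S K R B \<tau> \<xi>0 \<xi> u"

definition "sz \<sigma> = indicator {\<tau>..T} \<sigma> *\<^sub>R solc \<sigma>"

lemma sz_meas[measurable]: "sz \<in> borel_measurable lborel" unfolding sz_def[abs_def] by measurable
lemma sz_bound: "norm (sz \<sigma>) \<le> indicator {\<tau>..T} \<sigma> * Sb"
  using solc_bound[of \<sigma>] by (simp add: sz_def indicator_def)

lemma V_sol: assumes t: "t \<in> {\<tau>..T}"
  shows "set_lebesgue_integral lborel {\<tau>..t} (\<lambda>s. S (t - s) (set_lebesgue_integral lborel {\<tau>..s} (\<lambda>\<sigma>. K (s - \<sigma>) *\<^sub>R sol \<sigma>)))
       = - oc T R \<tau> t gz"
proof -
  have m2: "(\<lambda>\<sigma>. indicator {\<tau>..T} \<sigma> *\<^sub>R oc T R \<tau> \<sigma> gz) \<in> borel_measurable lborel"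
    using oc_meas[OF Rres_good T0 Eb_nonneg gz_meas] by measurable
  have b2: "norm (indicator {\<tau>..T} \<sigma> *\<^sub>R oc T R \<tau> \<sigma> gz) \<le> indicator {\<tau>..T} \<sigma> * (Eb * (\<integral>t. indicator {\<tau>..T} t * Gb \<partial>lborel))" for \<sigma>
    using oc_bound[OF Rres_good T0 Eb_nonneg gzb_int gz_bound] by (simp add: indicator_def)
  have "set_lebesgue_integral lborel {\<tau>..t} (\<lambda>s. S (t - s) (set_lebesgue_integral lborel {\<tau>..s} (\<lambda>\<sigma>. K (s - \<sigma>) *\<^sub>R sol \<sigma>)))
      = oc T (mu S K) \<tau> t sz"
    by (rule F1[OF sz_meas indb_int sz_bound _ t]) (simp add: sz_def claimA)
  also have "sz = (\<lambda>\<sigma>. gz \<sigma> - indicator {\<tau>..T} \<sigma> *\<^sub>R oc T R \<tau> \<sigma> gz)"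
    by (rule ext) (simp add: sz_def solc_def gz_def scaleR_diff_right)
  also have "oc T (mu S K) \<tau> t (\<lambda>\<sigma>. gz \<sigma> - indicator {\<tau>..T} \<sigma> *\<^sub>R oc T R \<tau> \<sigma> gz)
      = oc T (mu S K) \<tau> t gz - oc T (mu S K) \<tau> t (\<lambda>\<sigma>. indicator {\<tau>..T} \<sigma> *\<^sub>R oc T R \<tau> \<sigma> gz)"
    by (rule oc_diff[OF mu_good T0 kk_nonneg gz_meas gzb_int gz_bound m2 indb_int b2])
  also have "oc T (mu S K) \<tau> t (\<lambda>\<sigma>. indicator {\<tau>..T} \<sigma> *\<^sub>R oc T R \<tau> \<sigma> gz)
      = (\<integral>r. indicator {\<tau>..t} r *\<^sub>R conv (mu S K) R (t - r) (gz r) \<partial>lborel)"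
    by (rule F4[OF t])
  also have "\<dots> = (\<integral>r. indicator {\<tau>..t} r *\<^sub>R R (clmp T (t - r)) (gz r) + indicator {\<tau>..t} r *\<^sub>R mu S K (clmp T (t - r)) (gz r) \<partial>lborel)"
  proof (rule Bochner_Integration.integral_cong[OF refl])
    fix r
    show "indicator {\<tau>..t} r *\<^sub>R conv (mu S K) R (t - r) (gz r) =
      indicator {\<tau>..t} r *\<^sub>R R (clmp T (t - r)) (gz r) + indicator {\<tau>..t} r *\<^sub>R mu S K (clmp T (t - r)) (gz r)"
    proof (cases "r \<in> {\<tau>..t}")
      case True
      hence tr: "t - r \<in> {0..T}" using t tau by auto
      have "conv (mu S K) R (t - r) (gz r) = R (t - r) (gz r) + mu S K (t - r) (gz r)"
        using Rres_volterra[OF tr, of "gz r"] by (simp add: algebra_simps)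
      thus ?thesis using True tr by (simp add: scaleR_add_right)
    qed simp
  qed
  also have "\<dots> = oc T R \<tau> t gz + oc T (mu S K) \<tau> t gz"
    unfolding oc_def
    by (rule Bochner_Integration.integral_add)
       (rule oc_integrable[OF Rres_good T0 Eb_nonneg gz_meas gzb_int gz_bound],
        rule oc_integrable[OF mu_good T0 kk_nonneg gz_meas gzb_int gz_bound])
  finally show ?thesis by simp
qed

lemma claimB: assumes t: "t \<in> {\<tau>..T}"
  shows "sol t = S (t - \<tau>) \<xi>0
          + set_lebesgue_integral lborel {\<tau>..t}
              (\<lambda>s. S (t - s) (set_lebesgue_integral lborel {\<tau>..s} (\<lambda>\<sigma>. K (s - \<sigma>) *\<^sub>R sol \<sigma>)))
          + set_lebesgue_integral lborel {\<tau>..t}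
              (\<lambda>s. S (t - s) (set_lebesgue_integral lborel {0..\<tau>} (\<lambda>\<sigma>. K (s - \<sigma>) *\<^sub>R \<xi> \<sigma>)))
          + set_lebesgue_integral lborel {\<tau>..t} (\<lambda>s. S (t - s) (B (u s)))"
proof -
  have e1: "oc T S \<tau> t fzz = set_lebesgue_integral lborel {\<tau>..t} (\<lambda>s. S (t - s) (fz s))"
    unfolding oc_def set_lebesgue_integral_def
    by (rule Bochner_Integration.integral_cong[OF refl]) (use t tau in \<open>auto simp: fzz_def indicator_def\<close>)
  also have "\<dots> = set_lebesgue_integral lborel {\<tau>..t}
              (\<lambda>s. S (t - s) (set_lebesgue_integral lborel {0..\<tau>} (\<lambda>\<sigma>. K (s - \<sigma>) *\<^sub>R \<xi> \<sigma>)))"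
    by (rule set_lebesgue_integral_cong) (use t in \<open>auto simp: fz_eq\<close>)
  finally have e1: "oc T S \<tau> t fzz = \<dots>" .
  have e2: "oc T S \<tau> t Buz = set_lebesgue_integral lborel {\<tau>..t} (\<lambda>s. S (t - s) (B (u s)))"
    unfolding oc_def set_lebesgue_integral_def
    by (rule Bochner_Integration.integral_cong[OF refl]) (use t tau in \<open>auto simp: Buz_def uz_def indicator_def\<close>)
  have e0: "clmp T (t - \<tau>) = t - \<tau>" using t tau by auto
  have "sol t = solc t" by (rule claimA[OF t])
  also have "\<dots> = gc t - oc T R \<tau> t gz" by (simp add: solc_def)
  also have "\<dots> = S (t - \<tau>) \<xi>0 + oc T S \<tau> t fzz + oc T S \<tau> t Buz - oc T R \<tau> t gz"
    by (simp add: gc_def ocS_fzz_split e0)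
  finally show ?thesis unfolding V_sol[OF t] e1 e2 by (simp add: algebra_simps)
qed

lemma sol_L2: "L2_on {\<tau>..T} sol"
  unfolding L2_on_def set_borel_measurable_def set_integrable_def
proof
  have eq: "(\<lambda>x. indicator {\<tau>..T} x *\<^sub>R sol x) = sz"
    by (rule ext) (auto simp: sz_def indicator_def claimA)
  show "(\<lambda>x. indicator {\<tau>..T} x *\<^sub>R sol x) \<in> borel_measurable lborel" unfolding eq by (rule sz_meas)
  have eq2: "(\<lambda>x. indicator {\<tau>..T} x *\<^sub>R (norm (sol x))^2) = (\<lambda>x. (norm (sz x))^2)"
    by (rule ext) (auto simp: sz_def indicator_def claimA)
  show "integrable lborel (\<lambda>x. indicator {\<tau>..T} x *\<^sub>R (norm (sol x))^2)"
    unfolding eq2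
  proof (rule Bochner_Integration.integrable_bound)
    show "integrable lborel (\<lambda>x. indicator {\<tau>..T} x * Sb^2)" by (rule indb_int)
    show "(\<lambda>x. (norm (sz x))^2) \<in> borel_measurable lborel" by measurable
    show "AE x in lborel. norm ((norm (sz x))^2) \<le> norm (indicator {\<tau>..T} x * Sb^2)"
    proof (rule AE_I2)
      fix x
      have "(norm (sz x))^2 \<le> (indicator {\<tau>..T} x * Sb)^2"
        by (rule power_mono[OF sz_bound]) simp
      thus "norm ((norm (sz x))^2) \<le> norm (indicator {\<tau>..T} x * Sb^2)"
        by (cases "x \<in> {\<tau>..T}") (auto simp: sz_def)
    qed
  qed
qed

lemma sol_mild: "mild_solution S K B \<tau> T \<xi>0 \<xi> u sol"
  unfolding mild_solution_def using sol_L2 claimB by (auto intro!: AE_I2)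

end

context sgK begin

lemma absK0_shift_int: "integrable lborel (\<lambda>\<sigma>. \<bar>K0 (s - \<sigma>)\<bar>)"
  using shift_integrable(2)[OF absK0_int, of s] by simp

lemma ind_absK0_int: "integrable lborel (\<lambda>\<sigma>. indicator {a..s} \<sigma> * \<bar>K0 (s - \<sigma>)\<bar>)"
proof -
  have "integrable lborel (\<lambda>\<sigma>. indicator {a..s} \<sigma> *\<^sub>R \<bar>K0 (s - \<sigma>)\<bar>)"
    by (rule integrable_mult_indicator) (auto intro: absK0_shift_int)
  thus ?thesis by simp
qed

lemma kernel_mass: "(\<integral>\<sigma>. indicator {a..s} \<sigma> * \<bar>K0 (s - \<sigma>)\<bar> \<partial>lborel) \<le> kn"
proof -
  have "(\<integral>\<sigma>. indicator {a..s} \<sigma> * \<bar>K0 (s - \<sigma>)\<bar> \<partial>lborel) \<le> (\<integral>\<sigma>. \<bar>K0 (s - \<sigma>)\<bar> \<partial>lborel)"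
  proof (rule integral_mono[OF _ absK0_shift_int])
    show "integrable lborel (\<lambda>\<sigma>. indicator {a..s} \<sigma> * \<bar>K0 (s - \<sigma>)\<bar>)"
      by (rule ind_absK0_int)
  qed (auto simp: indicator_def)
  also have "\<dots> = kn" unfolding kn_def using reflect_integral[of "\<lambda>r. \<bar>K0 r\<bar>" s] by simp
  finally show ?thesis .
qed

lemma gronwall_AE:
  fixes \<phi> :: "real \<Rightarrow> real"
  assumes a: "0 \<le> a" and \<phi>m[measurable]: "\<phi> \<in> borel_measurable lborel" and \<phi>0: "\<And>t. 0 \<le> \<phi> t"
    and \<phi>sq: "integrable lborel (\<lambda>t. (\<phi> t)^2)"
    and ineq: "AE t in lborel. t \<in> {a..T} \<longrightarrow>
      \<phi> t \<le> c0 * (\<integral>s. indicator {a..t} s * (\<integral>\<sigma>. indicator {a..s} \<sigma> * \<bar>K0 (s - \<sigma>)\<bar> * \<phi> \<sigma> \<partial>lborel) \<partial>lborel)"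
  shows "AE t in lborel. t \<in> {a..T} \<longrightarrow> \<phi> t = 0"
proof -
  define \<psi> where "\<psi> s = (\<integral>\<sigma>. indicator {a..s} \<sigma> * \<bar>K0 (s - \<sigma>)\<bar> * \<phi> \<sigma> \<partial>lborel)" for s
  define L0 where "L0 = ((\<integral>s. (K0 s)^2 \<partial>lborel) + (\<integral>s. (\<phi> s)^2 \<partial>lborel)) / 2"
  have \<psi>int: "integrable lborel (\<lambda>\<sigma>. indicator {a..s} \<sigma> * \<bar>K0 (s - \<sigma>)\<bar> * \<phi> \<sigma>)" for s
  proof (rule Bochner_Integration.integrable_bound)
    show "integrable lborel (\<lambda>\<sigma>. ((K0 (s - \<sigma>))^2 + (\<phi> \<sigma>)^2) / 2)"
      using shift_integrable(2)[OF K0sq_int, of s] \<phi>sq by simp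
    show "(\<lambda>\<sigma>. indicator {a..s} \<sigma> * \<bar>K0 (s - \<sigma>)\<bar> * \<phi> \<sigma>) \<in> borel_measurable lborel" by measurable
    show "AE \<sigma> in lborel. norm (indicator {a..s} \<sigma> * \<bar>K0 (s - \<sigma>)\<bar> * \<phi> \<sigma>) \<le> norm (((K0 (s - \<sigma>))^2 + (\<phi> \<sigma>)^2) / 2)"
    proof (rule AE_I2)
      fix \<sigma>
      have "indicator {a..s} \<sigma> * \<bar>K0 (s - \<sigma>)\<bar> * \<phi> \<sigma> \<le> 1 * \<bar>K0 (s - \<sigma>)\<bar> * \<bar>\<phi> \<sigma>\<bar>"
        using \<phi>0[of \<sigma>] by (intro mult_mono) (auto simp: indicator_def)
      also have "\<dots> \<le> ((K0 (s - \<sigma>))^2 + (\<phi> \<sigma>)^2) / 2" using amgm by simp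
      finally show "norm (indicator {a..s} \<sigma> * \<bar>K0 (s - \<sigma>)\<bar> * \<phi> \<sigma>) \<le> norm (((K0 (s - \<sigma>))^2 + (\<phi> \<sigma>)^2) / 2)"
        using \<phi>0[of \<sigma>] by (simp add: abs_mult)
    qed
  qed
  have \<psi>0: "0 \<le> \<psi> s" for s unfolding \<psi>_def by (rule integral_nonneg_AE) (use \<phi>0 in auto)
  have \<psi>L0: "\<psi> s \<le> L0" for s
  proof -
    have "\<psi> s \<le> (\<integral>\<sigma>. ((K0 (s - \<sigma>))^2 + (\<phi> \<sigma>)^2) / 2 \<partial>lborel)"
      unfolding \<psi>_def
    proof (rule integral_mono[OF \<psi>int])
      show "integrable lborel (\<lambda>\<sigma>. ((K0 (s - \<sigma>))^2 + (\<phi> \<sigma>)^2) / 2)"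
        using shift_integrable(2)[OF K0sq_int, of s] \<phi>sq by simp
      fix \<sigma>
      have "indicator {a..s} \<sigma> * \<bar>K0 (s - \<sigma>)\<bar> * \<phi> \<sigma> \<le> 1 * \<bar>K0 (s - \<sigma>)\<bar> * \<bar>\<phi> \<sigma>\<bar>"
        using \<phi>0[of \<sigma>] by (intro mult_mono) (auto simp: indicator_def)
      also have "\<dots> \<le> ((K0 (s - \<sigma>))^2 + (\<phi> \<sigma>)^2) / 2" using amgm by simp
      finally show "indicator {a..s} \<sigma> * \<bar>K0 (s - \<sigma>)\<bar> * \<phi> \<sigma> \<le> ((K0 (s - \<sigma>))^2 + (\<phi> \<sigma>)^2) / 2" .
    qed
    also have "\<dots> = ((\<integral>\<sigma>. (K0 (s - \<sigma>))^2 \<partial>lborel) + (\<integral>\<sigma>. (\<phi> \<sigma>)^2 \<partial>lborel)) / 2"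
      using shift_integrable(2)[OF K0sq_int, of s] \<phi>sq by simp
    also have "(\<integral>\<sigma>. (K0 (s - \<sigma>))^2 \<partial>lborel) = (\<integral>s. (K0 s)^2 \<partial>lborel)"
      using reflect_integral[of "\<lambda>r. (K0 r)^2" s] by simp
    finally show ?thesis by (simp add: L0_def)
  qed
  have \<psi>m: "\<psi> \<in> borel_measurable lborel"
  proof -
    have "(\<lambda>z. indicator {a..fst z} (snd z) * \<bar>K0 (fst z - snd z)\<bar> * \<phi> (snd z)) \<in> borel_measurable (lborel \<Otimes>\<^sub>M lborel)"
      by measurable
    thus ?thesis
      using lborel.borel_measurable_lebesgue_integral[of "\<lambda>s \<sigma>. indicator {a..s} \<sigma> * \<bar>K0 (s - \<sigma>)\<bar> * \<phi> \<sigma>" lborel]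
      by (simp add: \<psi>_def[abs_def] case_prod_beta')
  qed
  have ind\<psi>_int: "integrable lborel (\<lambda>s. indicator {a..t} s * \<psi> s)" for t
  proof (rule Bochner_Integration.integrable_bound)
    show "integrable lborel (\<lambda>s. indicator {a..t} s * L0)"
      by (rule integrable_mult_left, rule integrable_real_indicator) (auto simp: emeasure_lborel_Icc_eq)
    show "(\<lambda>s. indicator {a..t} s * \<psi> s) \<in> borel_measurable lborel" using \<psi>m by measurable
    show "AE s in lborel. norm (indicator {a..t} s * \<psi> s) \<le> norm (indicator {a..t} s * L0)"
      using \<psi>0 \<psi>L0 by (intro AE_I2) (auto simp: indicator_def intro: order_trans[OF _ abs_ge_self])
  qed
  define L where "L = c0 * T * L0"
  define b where "b n t = L * (c0 * kn)^n * (t - a)^n / fact n" for n t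
  have L0nn: "0 \<le> L0" using \<psi>0[of 0] \<psi>L0[of 0] by linarith
  have Lnn: "0 \<le> L" unfolding L_def using c0_nonneg Tpos L0nn by simp
  have bmono: "b n s \<le> b n t" if "a \<le> s" "s \<le> t" for n s t
    unfolding b_def using that Lnn c0_nonneg kn_nonneg
    by (intro divide_right_mono mult_left_mono power_mono) auto
  have bnn: "a \<le> t \<Longrightarrow> 0 \<le> b n t" for n t
    unfolding b_def using Lnn c0_nonneg kn_nonneg by simp
  have claim: "AE t in lborel. t \<in> {a..T} \<longrightarrow> \<phi> t \<le> b n t" for n
  proof (induction n)
    case 0
    show ?case using ineq
    proof eventually_elim
      case (elim t)
      show ?case
      proof
        assume t: "t \<in> {a..T}"
        have "\<phi> t \<le> c0 * (\<integral>s. indicator {a..t} s * \<psi> s \<partial>lborel)" using elim t by (simp add: \<psi>_def)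
        also have "(\<integral>s. indicator {a..t} s * \<psi> s \<partial>lborel) \<le> (\<integral>s. indicator {a..t} s * L0 \<partial>lborel)"
        proof (rule integral_mono[OF ind\<psi>_int])
          show "integrable lborel (\<lambda>s. indicator {a..t} s * L0)"
            by (rule integrable_mult_left, rule integrable_real_indicator) (auto simp: emeasure_lborel_Icc_eq)
        qed (use \<psi>L0 in \<open>auto simp: indicator_def\<close>)
        also have "\<dots> = (t - a) * L0" using t by (simp add: emeasure_lborel_Icc_eq)
        also have "\<dots> \<le> T * L0" using t a L0nn by (intro mult_right_mono) auto
        finally show "\<phi> t \<le> b 0 t" using c0_nonneg by (simp add: b_def L_def mult_left_mono mult.assoc)
      qed
    qed
  next
    case (Suc n)
    have \<psi>b: "\<psi> s \<le> b n s * kn" if s: "s \<in> {a..T}" for s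
    proof -
      have "\<psi> s \<le> (\<integral>\<sigma>. indicator {a..s} \<sigma> * \<bar>K0 (s - \<sigma>)\<bar> * b n s \<partial>lborel)"
        unfolding \<psi>_def
      proof (rule integral_mono_AE[OF \<psi>int])
        show "integrable lborel (\<lambda>\<sigma>. indicator {a..s} \<sigma> * \<bar>K0 (s - \<sigma>)\<bar> * b n s)"
          by (intro integrable_mult_left ind_absK0_int)
        show "AE \<sigma> in lborel. indicator {a..s} \<sigma> * \<bar>K0 (s - \<sigma>)\<bar> * \<phi> \<sigma> \<le> indicator {a..s} \<sigma> * \<bar>K0 (s - \<sigma>)\<bar> * b n s"
          using Suc.IH
        proof eventually_elim
          case (elim \<sigma>)
          show ?case
          proof (cases "\<sigma> \<in> {a..s}")
            case True
            hence "\<phi> \<sigma> \<le> b n s" using elim s bmono[of \<sigma> s n] by auto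
            thus ?thesis using True by (simp add: mult_left_mono)
          qed simp
        qed
      qed
      also have "\<dots> = b n s * (\<integral>\<sigma>. indicator {a..s} \<sigma> * \<bar>K0 (s - \<sigma>)\<bar> \<partial>lborel)"
        by (simp add: mult.commute mult.left_commute)
      also have "\<dots> \<le> b n s * kn" using s bnn[of s n] by (intro mult_left_mono kernel_mass) auto
      finally show ?thesis .
    qed
    show ?case using ineq
    proof eventually_elim
      case (elim t)
      show ?case
      proof
        assume t: "t \<in> {a..T}"
        have "\<phi> t \<le> c0 * (\<integral>s. indicator {a..t} s * \<psi> s \<partial>lborel)" using elim t by (simp add: \<psi>_def)
        also have "(\<integral>s. indicator {a..t} s * \<psi> s \<partial>lborel) \<le> (\<integral>s. indicator {a..t} s * (L * (c0 * kn)^n / fact n * kn * (s - a)^n) \<partial>lborel)"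
        proof (rule integral_mono[OF ind\<psi>_int])
          have "continuous_on {a..t} (\<lambda>s. L * (c0 * kn)^n / fact n * kn * (s - a)^n)" by (intro continuous_intros)
          from borel_integrable_atLeastAtMost'[OF this]
          show "integrable lborel (\<lambda>s. indicator {a..t} s * (L * (c0 * kn)^n / fact n * kn * (s - a)^n))"
            by (simp add: set_integrable_def)
          fix s
          show "indicator {a..t} s * \<psi> s \<le> indicator {a..t} s * (L * (c0 * kn)^n / fact n * kn * (s - a)^n)"
          proof (cases "s \<in> {a..t}")
            case True
            hence "\<psi> s \<le> b n s * kn" using t by (intro \<psi>b) auto
            thus ?thesis using True by (simp add: b_def ac_simps)
          qed simp
        qed
        also have "(\<integral>s. indicator {a..t} s * (L * (c0 * kn)^n / fact n * kn * (s - a)^n) \<partial>lborel)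
            = L * (c0 * kn)^n / fact n * kn * ((t - a)^Suc n / Suc n)"
        proof -
          have "(\<lambda>s. indicator {a..t} s * (L * (c0 * kn)^n / fact n * kn * (s - a)^n)) = (\<lambda>s. L * (c0 * kn)^n / fact n * kn * (indicator {a..t} s * (s - a)^n))"
            by (rule ext) (simp add: ac_simps)
          hence "(\<integral>s. indicator {a..t} s * (L * (c0 * kn)^n / fact n * kn * (s - a)^n) \<partial>lborel) = L * (c0 * kn)^n / fact n * kn * (\<integral>s. indicator {a..t} s * (s - a)^n \<partial>lborel)"
            by (simp only: integral_mult_right_zero)
          also have "\<dots> = L * (c0 * kn)^n / fact n * kn * ((t - a)^Suc n / Suc n)"
            using integral_shifted_power[of a t n] t by simp
          finally show ?thesis .
        qed
        finally have "\<phi> t \<le> c0 * (L * (c0 * kn)^n / fact n * kn * ((t - a)^Suc n / Suc n))"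
          using c0_nonneg by (simp add: mult_left_mono)
        also have "\<dots> = b (Suc n) t" by (simp add: b_def field_simps del: of_nat_Suc)
        finally show "\<phi> t \<le> b (Suc n) t" .
      qed
    qed
  qed
  have "AE t in lborel. \<forall>n. t \<in> {a..T} \<longrightarrow> \<phi> t \<le> b n t"
    unfolding AE_all_countable using claim by blast
  thus ?thesis
  proof eventually_elim
    case (elim t)
    show ?case
    proof
      assume t: "t \<in> {a..T}"
      have "(\<lambda>n. (c0 * kn * (t - a))^n /\<^sub>R fact n) \<longlonglongrightarrow> 0" by (rule summable_LIMSEQ_zero[OF summable_exp_generic])
      hence "(\<lambda>n. L * ((c0 * kn * (t - a))^n /\<^sub>R fact n)) \<longlonglongrightarrow> L * 0" by (intro tendsto_mult tendsto_const)
      moreover have "(\<lambda>n. L * ((c0 * kn * (t - a))^n /\<^sub>R fact n)) = (\<lambda>n. b n t)"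
      proof (rule ext)
        fix n
        have "(c0 * kn * (t - a))^n = (c0 * kn)^n * (t - a)^n" by (simp add: power_mult_distrib)
        thus "L * ((c0 * kn * (t - a))^n /\<^sub>R fact n) = b n t" by (simp add: b_def divide_inverse ac_simps)
      qed
      ultimately have lim: "(\<lambda>n. b n t) \<longlonglongrightarrow> 0" by simp
      have "\<phi> t \<le> 0" by (rule LIMSEQ_le_const[OF lim]) (use elim t in auto)
      thus "\<phi> t = 0" using \<phi>0[of t] by linarith
    qed
  qed
qed

end

context mildctx begin

definition "Vin z s = (\<integral>\<sigma>. (indicator {\<tau>..s} \<sigma> * K0 (s - \<sigma>)) *\<^sub>R z \<sigma> \<partial>lborel)"
definition "Vinz z s = indicator {\<tau>..T} s *\<^sub>R Vin z s"
definition "Lz z = ((\<integral>s. (K0 s)^2 \<partial>lborel) + (\<integral>s. (norm (z s))^2 \<partial>lborel)) / 2"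

context
  fixes z :: "real \<Rightarrow> 'h"
  assumes zm[measurable]: "z \<in> borel_measurable lborel" and zsq: "integrable lborel (\<lambda>s. (norm (z s))^2)"
begin

lemma amgm_int: "integrable lborel (\<lambda>\<sigma>. ((K0 (s - \<sigma>))^2 + (norm (z \<sigma>))^2) / 2)"
  using shift_integrable(2)[OF K0sq_int, of s] zsq by simp

lemma amgm_pt: "indicator {\<tau>..s} \<sigma> * \<bar>K0 (s - \<sigma>)\<bar> * norm (z \<sigma>) \<le> ((K0 (s - \<sigma>))^2 + (norm (z \<sigma>))^2) / 2"
proof -
  have "indicator {\<tau>..s} \<sigma> * \<bar>K0 (s - \<sigma>)\<bar> * norm (z \<sigma>) \<le> 1 * \<bar>K0 (s - \<sigma>)\<bar> * \<bar>norm (z \<sigma>)\<bar>"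
    by (intro mult_mono) (auto simp: indicator_def)
  also have "\<dots> \<le> ((K0 (s - \<sigma>))^2 + (norm (z \<sigma>))^2) / 2" using amgm[of "K0 (s - \<sigma>)" "norm (z \<sigma>)"] by simp
  finally show ?thesis .
qed

lemma Vin_integrand_int: "integrable lborel (\<lambda>\<sigma>. (indicator {\<tau>..s} \<sigma> * K0 (s - \<sigma>)) *\<^sub>R z \<sigma>)"
proof (rule Bochner_Integration.integrable_bound[OF amgm_int])
  show "(\<lambda>\<sigma>. (indicator {\<tau>..s} \<sigma> * K0 (s - \<sigma>)) *\<^sub>R z \<sigma>) \<in> borel_measurable lborel" by measurable
  show "AE \<sigma> in lborel. norm ((indicator {\<tau>..s} \<sigma> * K0 (s - \<sigma>)) *\<^sub>R z \<sigma>) \<le> norm (((K0 (s - \<sigma>))^2 + (norm (z \<sigma>))^2) / 2)"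
    using amgm_pt by (intro AE_I2) (simp add: abs_mult)
qed

lemma psi_integrand_int: "integrable lborel (\<lambda>\<sigma>. indicator {\<tau>..s} \<sigma> * \<bar>K0 (s - \<sigma>)\<bar> * norm (z \<sigma>))"
proof (rule Bochner_Integration.integrable_bound[OF amgm_int])
  show "(\<lambda>\<sigma>. indicator {\<tau>..s} \<sigma> * \<bar>K0 (s - \<sigma>)\<bar> * norm (z \<sigma>)) \<in> borel_measurable lborel" by measurable
  show "AE \<sigma> in lborel. norm (indicator {\<tau>..s} \<sigma> * \<bar>K0 (s - \<sigma>)\<bar> * norm (z \<sigma>)) \<le> norm (((K0 (s - \<sigma>))^2 + (norm (z \<sigma>))^2) / 2)"
    using amgm_pt by (intro AE_I2) (simp add: abs_mult)
qed

lemma Vin_norm: "norm (Vin z s) \<le> (\<integral>\<sigma>. indicator {\<tau>..s} \<sigma> * \<bar>K0 (s - \<sigma>)\<bar> * norm (z \<sigma>) \<partial>lborel)"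
  unfolding Vin_def
  by (rule norm_integral_le_integral[OF psi_integrand_int]) (intro AE_I2, simp add: abs_mult)

lemma psi_le_Lz: "(\<integral>\<sigma>. indicator {\<tau>..s} \<sigma> * \<bar>K0 (s - \<sigma>)\<bar> * norm (z \<sigma>) \<partial>lborel) \<le> Lz z"
proof -
  have "(\<integral>\<sigma>. indicator {\<tau>..s} \<sigma> * \<bar>K0 (s - \<sigma>)\<bar> * norm (z \<sigma>) \<partial>lborel) \<le> (\<integral>\<sigma>. ((K0 (s - \<sigma>))^2 + (norm (z \<sigma>))^2) / 2 \<partial>lborel)"
    by (rule integral_mono[OF psi_integrand_int amgm_int amgm_pt])
  also have "\<dots> = ((\<integral>\<sigma>. (K0 (s - \<sigma>))^2 \<partial>lborel) + (\<integral>\<sigma>. (norm (z \<sigma>))^2 \<partial>lborel)) / 2"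
    using shift_integrable(2)[OF K0sq_int, of s] zsq by simp
  also have "(\<integral>\<sigma>. (K0 (s - \<sigma>))^2 \<partial>lborel) = (\<integral>s. (K0 s)^2 \<partial>lborel)"
    using reflect_integral[of "\<lambda>r. (K0 r)^2" s] by simp
  finally show ?thesis by (simp add: Lz_def)
qed

lemma Vin_bound: "norm (Vin z s) \<le> Lz z"
  using Vin_norm psi_le_Lz order_trans by blast

lemma Vin_meas[measurable]: "Vin z \<in> borel_measurable lborel"
proof -
  have "(\<lambda>w. (indicator {\<tau>..fst w} (snd w) * K0 (fst w - snd w)) *\<^sub>R z (snd w)) \<in> borel_measurable (lborel \<Otimes>\<^sub>M lborel)"
    by measurable
  thus ?thesis
    using lborel.borel_measurable_lebesgue_integral[of "\<lambda>s \<sigma>. (indicator {\<tau>..s} \<sigma> * K0 (s - \<sigma>)) *\<^sub>R z \<sigma>" lborel]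
    by (simp add: Vin_def[abs_def] case_prod_beta')
qed

lemma psi_meas: "(\<lambda>s. \<integral>\<sigma>. indicator {\<tau>..s} \<sigma> * \<bar>K0 (s - \<sigma>)\<bar> * norm (z \<sigma>) \<partial>lborel) \<in> borel_measurable lborel"
proof -
  have "(\<lambda>w. indicator {\<tau>..fst w} (snd w) * \<bar>K0 (fst w - snd w)\<bar> * norm (z (snd w))) \<in> borel_measurable (lborel \<Otimes>\<^sub>M lborel)"
    by measurable
  thus ?thesis
    using lborel.borel_measurable_lebesgue_integral[of "\<lambda>s \<sigma>. indicator {\<tau>..s} \<sigma> * \<bar>K0 (s - \<sigma>)\<bar> * norm (z \<sigma>)" lborel]
    by (simp add: case_prod_beta')
qed

lemma Vinz_meas[measurable]: "Vinz z \<in> borel_measurable lborel"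
  unfolding Vinz_def[abs_def] by measurable
lemma Vinz_bound: "norm (Vinz z s) \<le> indicator {\<tau>..T} s * Lz z"
  using Vin_bound[of s] by (simp add: Vinz_def indicator_def)

lemma Vrep:
  assumes weq: "\<And>\<sigma>. \<sigma> \<in> {\<tau>..T} \<Longrightarrow> w \<sigma> = z \<sigma>" and t: "t \<in> {\<tau>..T}"
  shows "set_lebesgue_integral lborel {\<tau>..t} (\<lambda>s. S (t - s) (set_lebesgue_integral lborel {\<tau>..s} (\<lambda>\<sigma>. K (s - \<sigma>) *\<^sub>R w \<sigma>)))
       = oc T S \<tau> t (Vinz z)"
  unfolding oc_def set_lebesgue_integral_def[of _ "{\<tau>..t}"]
proof (rule Bochner_Integration.integral_cong[OF refl])
  fix s
  show "indicator {\<tau>..t} s *\<^sub>R S (t - s) (set_lebesgue_integral lborel {\<tau>..s} (\<lambda>\<sigma>. K (s - \<sigma>) *\<^sub>R w \<sigma>)) =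
        indicator {\<tau>..t} s *\<^sub>R S (clmp T (t - s)) (Vinz z s)"
  proof (cases "s \<in> {\<tau>..t}")
    case True
    have "set_lebesgue_integral lborel {\<tau>..s} (\<lambda>\<sigma>. K (s - \<sigma>) *\<^sub>R w \<sigma>) = Vin z s"
      unfolding set_lebesgue_integral_def Vin_def
      by (rule Bochner_Integration.integral_cong[OF refl]) (use True t tau in \<open>auto simp: indicator_def K0_def weq\<close>)
    moreover have "clmp T (t - s) = t - s" by (intro clamp_id) (use True t tau in auto)
    moreover have "Vinz z s = Vin z s" using True t by (simp add: Vinz_def)
    ultimately show ?thesis by simp
  qed simp
qed

end

lemma Vin_diff:
  fixes z1 z2 :: "real \<Rightarrow> 'h"
  assumes "z1 \<in> borel_measurable lborel" "integrable lborel (\<lambda>s. (norm (z1 s))^2)"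
    "z2 \<in> borel_measurable lborel" "integrable lborel (\<lambda>s. (norm (z2 s))^2)"
  shows "Vin z1 s - Vin z2 s = Vin (\<lambda>\<sigma>. z1 \<sigma> - z2 \<sigma>) s"
  unfolding Vin_def
  by (subst Bochner_Integration.integral_diff[symmetric, OF Vin_integrand_int[OF assms(1,2)] Vin_integrand_int[OF assms(3,4)]])
     (simp add: scaleR_diff_right)

end

context mildctx begin

lemma sz_sq: "integrable lborel (\<lambda>s. (norm (sz s))^2)"
proof (rule Bochner_Integration.integrable_bound)
  show "integrable lborel (\<lambda>x. indicator {\<tau>..T} x * Sb^2)" by (rule indb_int)
  show "(\<lambda>x. (norm (sz x))^2) \<in> borel_measurable lborel" by measurable
  show "AE x in lborel. norm ((norm (sz x))^2) \<le> norm (indicator {\<tau>..T} x * Sb^2)"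
  proof (rule AE_I2)
    fix x
    have "(norm (sz x))^2 \<le> (indicator {\<tau>..T} x * Sb)^2" by (rule power_mono[OF sz_bound]) simp
    thus "norm ((norm (sz x))^2) \<le> norm (indicator {\<tau>..T} x * Sb^2)"
      by (cases "x \<in> {\<tau>..T}") (auto simp: sz_def)
  qed
qed

lemma mild_unique:
  assumes W: "mild_solution S K B \<tau> T \<xi>0 \<xi> u w"
  shows "AE t in lborel. t \<in> {\<tau>..T} \<longrightarrow> w t = sol t"
proof -
  have wL2: "L2_on {\<tau>..T} w" and weq: "AE t in lborel. t \<in> {\<tau>..T} \<longrightarrow>
        w t = S (t - \<tau>) \<xi>0
          + set_lebesgue_integral lborel {\<tau>..t}
              (\<lambda>s. S (t - s) (set_lebesgue_integral lborel {\<tau>..s} (\<lambda>\<sigma>. K (s - \<sigma>) *\<^sub>R w \<sigma>)))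
          + set_lebesgue_integral lborel {\<tau>..t}
              (\<lambda>s. S (t - s) (set_lebesgue_integral lborel {0..\<tau>} (\<lambda>\<sigma>. K (s - \<sigma>) *\<^sub>R \<xi> \<sigma>)))
          + set_lebesgue_integral lborel {\<tau>..t} (\<lambda>s. S (t - s) (B (u s)))"
    using W unfolding mild_solution_def by auto
  define wz where "wz s = indicator {\<tau>..T} s *\<^sub>R w s" for s
  have wzm[measurable]: "wz \<in> borel_measurable lborel" using L2_on_facts(1)[OF wL2] by (simp add: wz_def[abs_def])
  have wzsq: "integrable lborel (\<lambda>s. (norm (wz s))^2)" using L2_on_facts(2)[OF wL2] by (simp add: wz_def[abs_def])
  define vz where "vz s = wz s - sz s" for s
  have vzm[measurable]: "vz \<in> borel_measurable lborel" unfolding vz_def[abs_def] by measurable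
  have vzsq: "integrable lborel (\<lambda>s. (norm (vz s))^2)"
  proof (rule Bochner_Integration.integrable_bound)
    show "integrable lborel (\<lambda>s. 2 * (norm (wz s))^2 + 2 * (norm (sz s))^2)"
      using wzsq sz_sq by simp
    show "(\<lambda>s. (norm (vz s))^2) \<in> borel_measurable lborel" by measurable
    show "AE s in lborel. norm ((norm (vz s))^2) \<le> norm (2 * (norm (wz s))^2 + 2 * (norm (sz s))^2)"
    proof (rule AE_I2)
      fix s
      have "norm (vz s) \<le> norm (wz s) + norm (sz s)" unfolding vz_def by (rule norm_triangle_ineq4)
      hence "(norm (vz s))^2 \<le> (norm (wz s) + norm (sz s))^2" by (rule power_mono) simp
      also have "\<dots> \<le> 2 * (norm (wz s))^2 + 2 * (norm (sz s))^2"
        using amgm[of "norm (wz s)" "norm (sz s)"] by (simp add: power2_sum)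
      finally show "norm ((norm (vz s))^2) \<le> norm (2 * (norm (wz s))^2 + 2 * (norm (sz s))^2)" by simp
    qed
  qed
  have vzeq: "t \<in> {\<tau>..T} \<Longrightarrow> vz t = w t - sol t" for t
    by (simp add: vz_def wz_def sz_def claimA)
  have Vw: "t \<in> {\<tau>..T} \<Longrightarrow> set_lebesgue_integral lborel {\<tau>..t}
              (\<lambda>s. S (t - s) (set_lebesgue_integral lborel {\<tau>..s} (\<lambda>\<sigma>. K (s - \<sigma>) *\<^sub>R w \<sigma>))) = oc T S \<tau> t (Vinz wz)" for t
    by (rule Vrep[OF wzm wzsq]) (simp_all add: wz_def)
  have Vs: "t \<in> {\<tau>..T} \<Longrightarrow> set_lebesgue_integral lborel {\<tau>..t}
              (\<lambda>s. S (t - s) (set_lebesgue_integral lborel {\<tau>..s} (\<lambda>\<sigma>. K (s - \<sigma>) *\<^sub>R sol \<sigma>))) = oc T S \<tau> t (Vinz sz)" for t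
    by (rule Vrep[OF sz_meas sz_sq]) (simp_all add: sz_def claimA)
  have Vd: "oc T S \<tau> t (Vinz wz) - oc T S \<tau> t (Vinz sz) = oc T S \<tau> t (Vinz vz)" for t
  proof -
    have "oc T S \<tau> t (Vinz wz) - oc T S \<tau> t (Vinz sz) = oc T S \<tau> t (\<lambda>s. Vinz wz s - Vinz sz s)"
      by (rule oc_diff[symmetric, OF S_good T0 c0_nonneg Vinz_meas[OF wzm wzsq] indb_int Vinz_bound[OF wzm wzsq]
            Vinz_meas[OF sz_meas sz_sq] indb_int Vinz_bound[OF sz_meas sz_sq]])
    also have "(\<lambda>s. Vinz wz s - Vinz sz s) = Vinz vz"
      by (rule ext) (simp add: Vinz_def Vin_diff[OF wzm wzsq sz_meas sz_sq] vz_def[abs_def] scaleR_diff_right[symmetric])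
    finally show ?thesis .
  qed
  define \<phi> where "\<phi> t = norm (vz t)" for t
  have \<phi>m[measurable]: "\<phi> \<in> borel_measurable lborel" unfolding \<phi>_def[abs_def] by measurable
  have \<phi>sq: "integrable lborel (\<lambda>t. (\<phi> t)^2)" using vzsq by (simp add: \<phi>_def)
  have ineq: "AE t in lborel. t \<in> {\<tau>..T} \<longrightarrow>
      \<phi> t \<le> c0 * (\<integral>s. indicator {\<tau>..t} s * (\<integral>\<sigma>. indicator {\<tau>..s} \<sigma> * \<bar>K0 (s - \<sigma>)\<bar> * \<phi> \<sigma> \<partial>lborel) \<partial>lborel)"
    using weq
  proof eventually_elim
    case (elim t)
    show ?case
    proof
      assume t: "t \<in> {\<tau>..T}"
      have "vz t = oc T S \<tau> t (Vinz vz)"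
        using elim t claimB[OF t] vzeq[OF t] Vw[OF t] Vs[OF t] Vd[of t] by simp
      hence "\<phi> t = norm (oc T S \<tau> t (Vinz vz))" by (simp add: \<phi>_def)
      also have "\<dots> \<le> (\<integral>s. c0 * (indicator {\<tau>..t} s * (\<integral>\<sigma>. indicator {\<tau>..s} \<sigma> * \<bar>K0 (s - \<sigma>)\<bar> * norm (vz \<sigma>) \<partial>lborel)) \<partial>lborel)"
        unfolding oc_def
      proof (rule norm_integral_le_integral)
        show "integrable lborel (\<lambda>s. c0 * (indicator {\<tau>..t} s * (\<integral>\<sigma>. indicator {\<tau>..s} \<sigma> * \<bar>K0 (s - \<sigma>)\<bar> * norm (vz \<sigma>) \<partial>lborel)))"
        proof (rule integrable_mult_right, rule Bochner_Integration.integrable_bound)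
          show "integrable lborel (\<lambda>s. indicator {\<tau>..T} s * Lz vz)" by (rule indb_int)
          show "(\<lambda>s. indicator {\<tau>..t} s * (\<integral>\<sigma>. indicator {\<tau>..s} \<sigma> * \<bar>K0 (s - \<sigma>)\<bar> * norm (vz \<sigma>) \<partial>lborel)) \<in> borel_measurable lborel"
            using psi_meas[OF vzm vzsq] by measurable
          show "AE s in lborel. norm (indicator {\<tau>..t} s * (\<integral>\<sigma>. indicator {\<tau>..s} \<sigma> * \<bar>K0 (s - \<sigma>)\<bar> * norm (vz \<sigma>) \<partial>lborel)) \<le> norm (indicator {\<tau>..T} s * Lz vz)"
          proof (rule AE_I2)
            fix s
            have n0: "0 \<le> (\<integral>\<sigma>. indicator {\<tau>..s} \<sigma> * \<bar>K0 (s - \<sigma>)\<bar> * norm (vz \<sigma>) \<partial>lborel)"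
              by (rule integral_nonneg_AE) auto
            have "(\<integral>\<sigma>. indicator {\<tau>..s} \<sigma> * \<bar>K0 (s - \<sigma>)\<bar> * norm (vz \<sigma>) \<partial>lborel) \<le> Lz vz"
              by (rule psi_le_Lz[OF vzm vzsq])
            thus "norm (indicator {\<tau>..t} s * (\<integral>\<sigma>. indicator {\<tau>..s} \<sigma> * \<bar>K0 (s - \<sigma>)\<bar> * norm (vz \<sigma>) \<partial>lborel)) \<le> norm (indicator {\<tau>..T} s * Lz vz)"
              using n0 t by (auto simp: indicator_def)
          qed
        qed
        show "AE s in lborel. norm (indicator {\<tau>..t} s *\<^sub>R S (clmp T (t - s)) (Vinz vz s)) \<le>
            c0 * (indicator {\<tau>..t} s * (\<integral>\<sigma>. indicator {\<tau>..s} \<sigma> * \<bar>K0 (s - \<sigma>)\<bar> * norm (vz \<sigma>) \<partial>lborel))"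
        proof (rule AE_I2)
          fix s
          have "norm (S (clmp T (t - s)) (Vinz vz s)) \<le> c0 * norm (Vinz vz s)" by (rule S_bound[OF clamp_in[OF T0]])
          also have "norm (Vinz vz s) \<le> norm (Vin vz s)" by (simp add: Vinz_def indicator_def)
          also have "\<dots> \<le> (\<integral>\<sigma>. indicator {\<tau>..s} \<sigma> * \<bar>K0 (s - \<sigma>)\<bar> * norm (vz \<sigma>) \<partial>lborel)"
            by (rule Vin_norm[OF vzm vzsq])
          finally have "norm (S (clmp T (t - s)) (Vinz vz s)) \<le> c0 * (\<integral>\<sigma>. indicator {\<tau>..s} \<sigma> * \<bar>K0 (s - \<sigma>)\<bar> * norm (vz \<sigma>) \<partial>lborel)"
            using c0_nonneg by (simp add: mult_left_mono)
          thus "norm (indicator {\<tau>..t} s *\<^sub>R S (clmp T (t - s)) (Vinz vz s)) \<le>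
            c0 * (indicator {\<tau>..t} s * (\<integral>\<sigma>. indicator {\<tau>..s} \<sigma> * \<bar>K0 (s - \<sigma>)\<bar> * norm (vz \<sigma>) \<partial>lborel))"
            by (simp add: indicator_def)
        qed
      qed
      also have "\<dots> = c0 * (\<integral>s. indicator {\<tau>..t} s * (\<integral>\<sigma>. indicator {\<tau>..s} \<sigma> * \<bar>K0 (s - \<sigma>)\<bar> * \<phi> \<sigma> \<partial>lborel) \<partial>lborel)"
        by (simp add: \<phi>_def)
      finally show "\<phi> t \<le> c0 * (\<integral>s. indicator {\<tau>..t} s * (\<integral>\<sigma>. indicator {\<tau>..s} \<sigma> * \<bar>K0 (s - \<sigma>)\<bar> * \<phi> \<sigma> \<partial>lborel) \<partial>lborel)" .
    qed
  qed
  have "AE t in lborel. t \<in> {\<tau>..T} \<longrightarrow> \<phi> t = 0"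
    by (rule gronwall_AE[OF _ \<phi>m _ \<phi>sq ineq]) (use tau in \<open>auto simp: \<phi>_def\<close>)
  thus ?thesis
  proof eventually_elim
    case (elim t)
    show ?case
    proof
      assume t: "t \<in> {\<tau>..T}"
      hence "vz t = 0" using elim by (simp add: \<phi>_def)
      thus "w t = sol t" using vzeq[OF t] by simp
    qed
  qed
qed

end


theorem proposition2p3:
  fixes S :: "real \<Rightarrow> 'h::{real_inner,banach,second_countable_topology} \<Rightarrow> 'h"
    and A :: "'h \<Rightarrow> 'h" and D :: "'h set"
    and C \<omega> T \<tau> :: real
    and K :: "real \<Rightarrow> real"
    and B :: "'u::{real_inner,banach,second_countable_topology} \<Rightarrow> 'h"
    and \<xi>0 :: 'h and \<xi> :: "real \<Rightarrow> 'h" and u :: "real \<Rightarrow> 'u"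
  assumes "T > 0"
    and "C0_semigroup S"
    and "is_generator S D A"
    and "\<forall>t\<ge>0. \<forall>x. norm (S t x) \<le> C * exp (\<omega> * t) * norm x"
    and "L2_on {0..T} K"
    and "bounded_linear B"
    and "\<tau> \<in> {0<..<T}"
    and "L2_on {0..\<tau>} \<xi>"
    and "L2_on {\<tau>..T} u"
  shows "(\<forall>t\<in>{0..T}. \<forall>x. summable (\<lambda>n. mu_pow S K n t x))
       \<and> volterra_sol S K T (Rres S K)
       \<and> (\<forall>R'. volterra_sol S K T R' \<longrightarrow> (\<forall>t\<in>{0..T}. R' t = Rres S K t))
       \<and> mild_solution S K B \<tau> T \<xi>0 \<xi> u (sol_formula S K (Rres S K) B \<tau> \<xi>0 \<xi> u)
       \<and> (\<forall>w. mild_solution S K B \<tau> T \<xi>0 \<xi> u w \<longrightarrow>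
            (AE t in lborel. t \<in> {\<tau>..T} \<longrightarrow> w t = sol_formula S K (Rres S K) B \<tau> \<xi>0 \<xi> u t))"
  proof -
  interpret mildctx S K T C \<omega> \<tau> \<xi> u B \<xi>0
    by (intro mildctx.intro sgK.intro mildctx_axioms.intro) (use assms in auto)
  show ?thesis
  proof (intro conjI)
    show "\<forall>t\<in>{0..T}. \<forall>x. summable (\<lambda>n. mu_pow S K n t x)"
      using mu_pow_summable by blast
    show "volterra_sol S K T (Rres S K)" by (rule Rres_volterra_sol)
    show "\<forall>R'. volterra_sol S K T R' \<longrightarrow> (\<forall>t\<in>{0..T}. R' t = Rres S K t)"
      using volterra_unique by blast
    show "mild_solution S K B \<tau> T \<xi>0 \<xi> u (sol_formula S K (Rres S K) B \<tau> \<xi>0 \<xi> u)"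
      by (rule sol_mild)
    show "\<forall>w. mild_solution S K B \<tau> T \<xi>0 \<xi> u w \<longrightarrow>
            (AE t in lborel. t \<in> {\<tau>..T} \<longrightarrow> w t = sol_formula S K (Rres S K) B \<tau> \<xi>0 \<xi> u t)"
      using mild_unique by blast
  qed
qed

end
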